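(* The operators $L=A^*A$, $R=B^*B$, $C=(AB)^3$ are invertible, symmetric and grading-preserving, and satisfy $ACA=BCB=C^{-1}$, $LCL^{-1}=RCR^{-1}=C$, $ALA=L^{-1}$, $BRB=R^{-1}$, $ARA=L^{-1}RC^{-1}$, $BLB=R^{-1}LC$.
   Context: Let $\mathcal C$ be a strict monoidal category with tensor product $\boxtimes$ and unit object $\mathbb I$ which is an Ab-category (all Hom-sets are abelian groups, composition and $\boxtimes$ are biadditive) whose ground ring $\mathsf k=\operatorname{End}(\mathbb I)$ is a field; each $\operatorname{Hom}(V,W)$ is a $\mathsf k$-vector space via $kf=k\boxtimes f$, and $\boxtimes$ is $\mathsf k$-bilinear on morphisms. An object $V$ is simple if $\operatorname{End}(V)=\mathsf k\,\mathrm{Id}_V$; for such $V$ and $f\in\operatorname{End}(V)$, $\langle f\rangle\in\mathsf k$ denotes the scalar with $f=\langle f\rangle\mathrm{Id}_V$. For objects $V_i$ write $H^{ij}_k=\operatorname{Hom}(V_k,V_i\boxtimes V_j)$ and $H^k_{ij}=\operatorname{Hom}(V_i\boxtimes V_j,V_k)$. A $\Psi$-system in $\mathcal C$ consists of (1) a family of simple objects $\{V_i\}_{i\in I}$ with $\operatorname{Hom}(V_i,V_j)=0$ for $i\neq j$; (2) an involution $i\mapsto i^*$ of $I$; (3) morphisms $b_i:\mathbb I\to V_i\boxtimes V_{i^*}$, $d_i:V_i\boxtimes V_{i^*}\to\mathbb I$ ($i\in I$) with $(\mathrm{Id}_{V_i}\boxtimes d_{i^*})(b_i\boxtimes\mathrm{Id}_{V_i})=\mathrm{Id}_{V_i}$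 and $(d_i\boxtimes\mathrm{Id}_{V_i})(\mathrm{Id}_{V_i}\boxtimes b_{i^*})=\mathrm{Id}_{V_i}$; (4) for all $i,j\in I$ such that $H^{ij}_k\neq0$ for some $k\in I$, the morphism $\mathrm{Id}_{V_i\boxtimes V_j}$ lies in the image of the linear map $\bigoplus_{k\in I}H^{ij}_k\otimes_{\mathsf k}H^k_{ij}\to\operatorname{End}(V_i\boxtimes V_j)$, $x\otimes y\mapsto x\circ y$. Fix a $\Psi$-system in $\mathcal C$. Let $\hat H=\bigoplus_{i,j,k\in I}H^k_{ij}$, $\check H=\bigoplus_{i,j,k\in I}H^{ij}_k$, $H=\hat H\oplus\check H$, and let $\pi^k_{ij}:H\to H^k_{ij}$, $\pi^{ij}_k:H\to H^{ij}_k$ be the projections. Define $A,B\in\operatorname{End}_{\mathsf k}(H)$ by $Ax=\sum_{i,j,k\in I}\big((\mathrm{Id}_{V_{i^*}}\boxtimes\pi^k_{ij}x)(b_{i^*}\boxtimes\mathrm{Id}_{V_j})+(d_{i^*}\boxtimes\mathrm{Id}_{V_j})(\mathrm{Id}_{V_{i^*}}\boxtimes\pi^{ij}_kx)\big)$, $Bx=\sum_{i,j,k\in I}\big((\pi^k_{ij}x\boxtimes\mathrm{Id}_{V_{j^*}})(\mathrm{Id}_{V_i}\boxtimes b_j)+(\mathrm{Id}_{V_i}\boxtimes d_j)(\pi^{ij}_kx\boxtimes\mathrm{Id}_{V_{j^*}})\big)$. Define the symmetric bilinear form on $H$: $\langle x,y\rangle=\sum_{i,j,k\in I}\big(\langle\pi^k_{ij}x\circ\pi^{ij}_ky\rangle+\langle\pi^k_{ij}y\circ\pi^{ij}_kx\rangle\big)$.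 A transpose of $f\in\operatorname{End}(H)$ is the (unique) $f^*\in\operatorname{End}(H)$ with $\langle fx,y\rangle=\langle x,f^*y\rangle$ for all $x,y\in H$; $A^*$, $B^*$ denote the transposes of $A$, $B$ (which exist). An operator $f$ is symmetric if $f^*=f$, and grading-preserving if $f(H^{ij}_k)\subset H^{ij}_k$ and $f(H^k_{ij})\subset H^k_{ij}$ for all $i,j,k\in I$. *)

theory Defs
  imports Main
begin

text \<open>A category is given by a type of objects 'o and a type of morphisms 'm, each morphism
having a domain and codomain.  mcomp g f is the composite g \<circ> f.\<close>

record ('o,'m) mcat =
  mdom :: "'m \<Rightarrow> 'o"
  mcod :: "'m \<Rightarrow> 'o"
  mid :: "'o \<Rightarrow> 'm"
  mcomp :: "'m \<Rightarrow> 'm \<Rightarrow> 'm"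
  otens :: "'o \<Rightarrow> 'o \<Rightarrow> 'o"
  mtens :: "'m \<Rightarrow> 'm \<Rightarrow> 'm"
  unito :: 'o
  mzero :: "'o \<Rightarrow> 'o \<Rightarrow> 'm"
  madd :: "'m \<Rightarrow> 'm \<Rightarrow> 'm"
  mneg :: "'m \<Rightarrow> 'm"

definition hom :: "('o,'m) mcat \<Rightarrow> 'o \<Rightarrow> 'o \<Rightarrow> 'm set" where
  "hom C V W = {f. mdom C f = V \<and> mcod C f = W}"

definition strict_monoidal_ab_cat :: "('o,'m) mcat \<Rightarrow> bool" where
  "strict_monoidal_ab_cat C \<longleftrightarrow>
   \<comment> \<open>category\<close>
   (\<forall>V. mid C V \<in> hom C V V) \<and>
   (\<forall>U V W f g. f \<in> hom C U V \<longrightarrow> g \<in> hom C V W \<longrightarrow> mcomp C g f \<in> hom C U W) \<and>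
   (\<forall>U V f. f \<in> hom C U V \<longrightarrow> mcomp C (mid C V) f = f \<and> mcomp C f (mid C U) = f) \<and>
   (\<forall>U V W X f g h. f \<in> hom C U V \<longrightarrow> g \<in> hom C V W \<longrightarrow> h \<in> hom C W X \<longrightarrow>
        mcomp C h (mcomp C g f) = mcomp C (mcomp C h g) f) \<and>
   \<comment> \<open>strict monoidal structure\<close>
   (\<forall>U V W. otens C (otens C U V) W = otens C U (otens C V W)) \<and>
   (\<forall>V. otens C (unito C) V = V \<and> otens C V (unito C) = V) \<and>
   (\<forall>U V U' V' f g. f \<in> hom C U V \<longrightarrow> g \<in> hom C U' V' \<longrightarrow>
        mtens C f g \<in> hom C (otens C U U') (otens C V V')) \<and>
   (\<forall>f g h. mtens C (mtens C f g) h = mtens C f (mtens C g h)) \<and>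
   (\<forall>f. mtens C (mid C (unito C)) f = f \<and> mtens C f (mid C (unito C)) = f) \<and>
   (\<forall>U V. mtens C (mid C U) (mid C V) = mid C (otens C U V)) \<and>
   (\<forall>U V W U' V' W' f g f' g'. f \<in> hom C U V \<longrightarrow> g \<in> hom C V W \<longrightarrow>
        f' \<in> hom C U' V' \<longrightarrow> g' \<in> hom C V' W' \<longrightarrow>
        mtens C (mcomp C g f) (mcomp C g' f') = mcomp C (mtens C g g') (mtens C f f')) \<and>
   \<comment> \<open>Ab-category: Hom-sets are abelian groups\<close>
   (\<forall>V W. mzero C V W \<in> hom C V W) \<and>
   (\<forall>V W f g. f \<in> hom C V W \<longrightarrow> g \<in> hom C V W \<longrightarrow> madd C f g \<in> hom C V W) \<and>
   (\<forall>V W f. f \<in> hom C V W \<longrightarrow> mneg C f \<in> hom C V W) \<and>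
   (\<forall>V W f g h. f \<in> hom C V W \<longrightarrow> g \<in> hom C V W \<longrightarrow> h \<in> hom C V W \<longrightarrow>
        madd C (madd C f g) h = madd C f (madd C g h)) \<and>
   (\<forall>V W f g. f \<in> hom C V W \<longrightarrow> g \<in> hom C V W \<longrightarrow> madd C f g = madd C g f) \<and>
   (\<forall>V W f. f \<in> hom C V W \<longrightarrow> madd C (mzero C V W) f = f) \<and>
   (\<forall>V W f. f \<in> hom C V W \<longrightarrow> madd C (mneg C f) f = mzero C V W) \<and>
   \<comment> \<open>composition is biadditive\<close>
   (\<forall>U V W f g g'. f \<in> hom C U V \<longrightarrow> g \<in> hom C V W \<longrightarrow> g' \<in> hom C V W \<longrightarrow>
        mcomp C (madd C g g') f = madd C (mcomp C g f) (mcomp C g' f)) \<and>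
   (\<forall>U V W f f' g. f \<in> hom C U V \<longrightarrow> f' \<in> hom C U V \<longrightarrow> g \<in> hom C V W \<longrightarrow>
        mcomp C g (madd C f f') = madd C (mcomp C g f) (mcomp C g f')) \<and>
   \<comment> \<open>tensor product is biadditive\<close>
   (\<forall>U V U' V' f f' g. f \<in> hom C U V \<longrightarrow> f' \<in> hom C U V \<longrightarrow> g \<in> hom C U' V' \<longrightarrow>
        mtens C (madd C f f') g = madd C (mtens C f g) (mtens C f' g)) \<and>
   (\<forall>U V U' V' f g g'. f \<in> hom C U V \<longrightarrow> g \<in> hom C U' V' \<longrightarrow> g' \<in> hom C U' V' \<longrightarrow>
        mtens C f (madd C g g') = madd C (mtens C f g) (mtens C f g')) \<and>
   \<comment> \<open>the ground ring k = End(I) is a field\<close>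
   (\<forall>k\<in>hom C (unito C) (unito C). \<forall>k'\<in>hom C (unito C) (unito C). mcomp C k k' = mcomp C k' k) \<and>
   mid C (unito C) \<noteq> mzero C (unito C) (unito C) \<and>
   (\<forall>k\<in>hom C (unito C) (unito C). k \<noteq> mzero C (unito C) (unito C) \<longrightarrow>
        (\<exists>k'\<in>hom C (unito C) (unito C). mcomp C k' k = mid C (unito C))) \<and>
   \<comment> \<open>the tensor product is k-bilinear (k f = k \<boxtimes> f)\<close>
   (\<forall>k f g. k \<in> hom C (unito C) (unito C) \<longrightarrow> mtens C f (mtens C k g) = mtens C k (mtens C f g))"

definition msum :: "('o,'m) mcat \<Rightarrow> 'o \<Rightarrow> 'o \<Rightarrow> ('a \<Rightarrow> 'm) \<Rightarrow> 'a set \<Rightarrow> 'm" where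
  "msum C V W g S = Finite_Set.fold (\<lambda>a acc. madd C (g a) acc) (mzero C V W) S"

definition simple_obj :: "('o,'m) mcat \<Rightarrow> 'o \<Rightarrow> bool" where
  "simple_obj C V \<longleftrightarrow> mid C V \<noteq> mzero C V V \<and>
     (\<forall>f\<in>hom C V V. \<exists>c\<in>hom C (unito C) (unito C). f = mtens C c (mid C V))"

definition scal :: "('o,'m) mcat \<Rightarrow> 'o \<Rightarrow> 'm \<Rightarrow> 'm" where
  "scal C V f = (THE c. c \<in> hom C (unito C) (unito C) \<and> f = mtens C c (mid C V))"

definition psi_system :: "('o,'m) mcat \<Rightarrow> 'i set \<Rightarrow> ('i \<Rightarrow> 'o) \<Rightarrow> ('i \<Rightarrow> 'i)
     \<Rightarrow> ('i \<Rightarrow> 'm) \<Rightarrow> ('i \<Rightarrow> 'm) \<Rightarrow> bool" where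
  "psi_system C I V st b d \<longleftrightarrow>
   strict_monoidal_ab_cat C \<and>
   (\<forall>i\<in>I. simple_obj C (V i)) \<and>
   (\<forall>i\<in>I. \<forall>j\<in>I. i \<noteq> j \<longrightarrow> (\<forall>f\<in>hom C (V i) (V j). f = mzero C (V i) (V j))) \<and>
   (\<forall>i\<in>I. st i \<in> I \<and> st (st i) = i) \<and>
   (\<forall>i\<in>I. b i \<in> hom C (unito C) (otens C (V i) (V (st i))) \<and>
           d i \<in> hom C (otens C (V i) (V (st i))) (unito C)) \<and>
   (\<forall>i\<in>I. mcomp C (mtens C (mid C (V i)) (d (st i))) (mtens C (b i) (mid C (V i))) = mid C (V i) \<and>
           mcomp C (mtens C (d i) (mid C (V i))) (mtens C (mid C (V i)) (b (st i))) = mid C (V i)) \<and>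
   (\<forall>i\<in>I. \<forall>j\<in>I.
      (\<exists>k\<in>I. \<exists>f\<in>hom C (V k) (otens C (V i) (V j)). f \<noteq> mzero C (V k) (otens C (V i) (V j))) \<longrightarrow>
      (\<exists>ts. (\<forall>(k,x,y)\<in>set ts. k \<in> I \<and> x \<in> hom C (V k) (otens C (V i) (V j))
                                 \<and> y \<in> hom C (otens C (V i) (V j)) (V k)) \<and>
            foldr (\<lambda>(k,x,y) acc. madd C (mcomp C x y) acc) ts
                  (mzero C (otens C (V i) (V j)) (otens C (V i) (V j)))
              = mid C (otens C (V i) (V j))))"

text \<open>An element x of H = \<hat>H \<oplus> \<check>H is a pair: fst x i j k is the component in
H^k_{ij} = Hom(V_i \<boxtimes> V_j, V_k), snd x i j k the component in H^{ij}_k = Hom(V_k, V_i \<boxtimes> V_j);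
only finitely many components are nonzero (direct sum), components outside I are undefined.\<close>

type_synonym ('i,'m) hel = "('i \<Rightarrow> 'i \<Rightarrow> 'i \<Rightarrow> 'm) \<times> ('i \<Rightarrow> 'i \<Rightarrow> 'i \<Rightarrow> 'm)"

definition hz :: "('o,'m) mcat \<Rightarrow> ('i \<Rightarrow> 'o) \<Rightarrow> 'i \<Rightarrow> 'i \<Rightarrow> 'i \<Rightarrow> 'm" where
  "hz C V i j k = mzero C (otens C (V i) (V j)) (V k)"

definition cz :: "('o,'m) mcat \<Rightarrow> ('i \<Rightarrow> 'o) \<Rightarrow> 'i \<Rightarrow> 'i \<Rightarrow> 'i \<Rightarrow> 'm" where
  "cz C V i j k = mzero C (V k) (otens C (V i) (V j))"

definition hsupp :: "('o,'m) mcat \<Rightarrow> 'i set \<Rightarrow> ('i \<Rightarrow> 'o) \<Rightarrow> ('i,'m) hel \<Rightarrow> ('i \<times> 'i \<times> 'i) set" where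
  "hsupp C I V x = {(i,j,k). i \<in> I \<and> j \<in> I \<and> k \<in> I \<and>
       (fst x i j k \<noteq> hz C V i j k \<or> snd x i j k \<noteq> cz C V i j k)}"

definition Hsp :: "('o,'m) mcat \<Rightarrow> 'i set \<Rightarrow> ('i \<Rightarrow> 'o) \<Rightarrow> ('i,'m) hel set" where
  "Hsp C I V = {x.
     (\<forall>i j k. if i \<in> I \<and> j \<in> I \<and> k \<in> I
        then fst x i j k \<in> hom C (otens C (V i) (V j)) (V k) \<and> snd x i j k \<in> hom C (V k) (otens C (V i) (V j))
        else fst x i j k = undefined \<and> snd x i j k = undefined) \<and>
     finite (hsupp C I V x)}"

text \<open>The operator A, computed componentwise: the summand coming from \<pi>^k_{ij} x lies in
H^{i* k}_j, the one coming from \<pi>^{ij}_k x lies in H^j_{i* k}.\<close>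
definition opA :: "('o,'m) mcat \<Rightarrow> 'i set \<Rightarrow> ('i \<Rightarrow> 'o) \<Rightarrow> ('i \<Rightarrow> 'i) \<Rightarrow> ('i \<Rightarrow> 'm) \<Rightarrow> ('i \<Rightarrow> 'm)
     \<Rightarrow> ('i,'m) hel \<Rightarrow> ('i,'m) hel" where
  "opA C I V st b d x =
    ((\<lambda>a e c. if a \<in> I \<and> e \<in> I \<and> c \<in> I then
        mcomp C (mtens C (d a) (mid C (V c))) (mtens C (mid C (V a)) (snd x (st a) c e))
      else undefined),
     (\<lambda>a e c. if a \<in> I \<and> e \<in> I \<and> c \<in> I then
        mcomp C (mtens C (mid C (V a)) (fst x (st a) c e)) (mtens C (b a) (mid C (V c)))
      else undefined))"

text \<open>The operator B, computed componentwise: the summand coming from \<pi>^k_{ij} x lies in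
H^{k j*}_i, the one coming from \<pi>^{ij}_k x lies in H^i_{k j*}.\<close>
definition opB :: "('o,'m) mcat \<Rightarrow> 'i set \<Rightarrow> ('i \<Rightarrow> 'o) \<Rightarrow> ('i \<Rightarrow> 'i) \<Rightarrow> ('i \<Rightarrow> 'm) \<Rightarrow> ('i \<Rightarrow> 'm)
     \<Rightarrow> ('i,'m) hel \<Rightarrow> ('i,'m) hel" where
  "opB C I V st b d x =
    ((\<lambda>a e c. if a \<in> I \<and> e \<in> I \<and> c \<in> I then
        mcomp C (mtens C (mid C (V c)) (d (st e))) (mtens C (snd x c (st e) a) (mid C (V e)))
      else undefined),
     (\<lambda>a e c. if a \<in> I \<and> e \<in> I \<and> c \<in> I then
        mcomp C (mtens C (fst x c (st e) a) (mid C (V e))) (mtens C (mid C (V c)) (b (st e)))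
      else undefined))"

definition hform :: "('o,'m) mcat \<Rightarrow> 'i set \<Rightarrow> ('i \<Rightarrow> 'o) \<Rightarrow> ('i,'m) hel \<Rightarrow> ('i,'m) hel \<Rightarrow> 'm" where
  "hform C I V x y = msum C (unito C) (unito C)
     (\<lambda>(i,j,k). madd C (scal C (V k) (mcomp C (fst x i j k) (snd y i j k)))
                       (scal C (V k) (mcomp C (fst y i j k) (snd x i j k))))
     (hsupp C I V x \<union> hsupp C I V y)"

definition op_transpose :: "'h set \<Rightarrow> ('h \<Rightarrow> 'h \<Rightarrow> 'k) \<Rightarrow> ('h \<Rightarrow> 'h) \<Rightarrow> ('h \<Rightarrow> 'h)" where
  "op_transpose H fm f = (SOME g. (\<forall>y\<in>H. g y \<in> H) \<and> (\<forall>x\<in>H. \<forall>y\<in>H. fm (f x) y = fm x (g y)))"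

definition symmetric_op :: "'h set \<Rightarrow> ('h \<Rightarrow> 'h \<Rightarrow> 'k) \<Rightarrow> ('h \<Rightarrow> 'h) \<Rightarrow> bool" where
  "symmetric_op H fm f \<longleftrightarrow> (\<forall>x\<in>H. op_transpose H fm f x = f x)"

definition hat_part :: "('o,'m) mcat \<Rightarrow> 'i set \<Rightarrow> ('i \<Rightarrow> 'o) \<Rightarrow> 'i \<Rightarrow> 'i \<Rightarrow> 'i \<Rightarrow> ('i,'m) hel set" where
  "hat_part C I V i j k = {x \<in> Hsp C I V. \<forall>a\<in>I. \<forall>e\<in>I. \<forall>c\<in>I.
      snd x a e c = cz C V a e c \<and> ((a,e,c) \<noteq> (i,j,k) \<longrightarrow> fst x a e c = hz C V a e c)}"

definition check_part :: "('o,'m) mcat \<Rightarrow> 'i set \<Rightarrow> ('i \<Rightarrow> 'o) \<Rightarrow> 'i \<Rightarrow> 'i \<Rightarrow> 'i \<Rightarrow> ('i,'m) hel set" where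
  "check_part C I V i j k = {x \<in> Hsp C I V. \<forall>a\<in>I. \<forall>e\<in>I. \<forall>c\<in>I.
      fst x a e c = hz C V a e c \<and> ((a,e,c) \<noteq> (i,j,k) \<longrightarrow> snd x a e c = cz C V a e c)}"

definition grading_preserving :: "('o,'m) mcat \<Rightarrow> 'i set \<Rightarrow> ('i \<Rightarrow> 'o)
     \<Rightarrow> (('i,'m) hel \<Rightarrow> ('i,'m) hel) \<Rightarrow> bool" where
  "grading_preserving C I V f \<longleftrightarrow> (\<forall>i\<in>I. \<forall>j\<in>I. \<forall>k\<in>I.
      f ` check_part C I V i j k \<subseteq> check_part C I V i j k \<and>
      f ` hat_part C I V i j k \<subseteq> hat_part C I V i j k)"

end

theory Submission
  imports Defs
begin

locale smcat =
  fixes C :: "('o,'m) mcat"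
  assumes smc: "strict_monoidal_ab_cat C"
begin

abbreviation dm where "dm \<equiv> mdom C"
abbreviation cd where "cd \<equiv> mcod C"
abbreviation idm where "idm \<equiv> mid C"
abbreviation cp where "cp \<equiv> mcomp C"
abbreviation tn where "tn \<equiv> mtens C"
abbreviation ot where "ot \<equiv> otens C"
abbreviation un where "un \<equiv> unito C"
abbreviation zr where "zr \<equiv> mzero C"
abbreviation ad where "ad \<equiv> madd C"
abbreviation ng where "ng \<equiv> mneg C"

lemma hom_iff: "f \<in> hom C V W \<longleftrightarrow> dm f = V \<and> cd f = W"
  by (simp add: hom_def)

lemma in_hom_self: "f \<in> hom C (dm f) (cd f)" by (simp add: hom_def)

lemmas ax = smc[unfolded strict_monoidal_ab_cat_def]

lemma ax0: "(\<forall>V. mid C V \<in> hom C V V)"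
  using ax by (elim conjE) assumption

lemma ax1: "(\<forall>U V W f g. f \<in> hom C U V \<longrightarrow> g \<in> hom C V W \<longrightarrow> mcomp C g f \<in> hom C U W)"
  using ax by (elim conjE) assumption

lemma ax2: "(\<forall>U V f. f \<in> hom C U V \<longrightarrow> mcomp C (mid C V) f = f \<and> mcomp C f (mid C U) = f)"
  using ax by (elim conjE) assumption

lemma ax3: "(\<forall>U V W X f g h. f \<in> hom C U V \<longrightarrow> g \<in> hom C V W \<longrightarrow> h \<in> hom C W X \<longrightarrow>
        mcomp C h (mcomp C g f) = mcomp C (mcomp C h g) f)"
  using ax by (elim conjE) assumption

lemma ax4: "(\<forall>U V W. otens C (otens C U V) W = otens C U (otens C V W))"
  using ax by (elim conjE) assumption

lemma ax5: "(\<forall>V. otens C (unito C) V = V \<and> otens C V (unito C) = V)"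
  using ax by (elim conjE) assumption

lemma ax6: "(\<forall>U V U' V' f g. f \<in> hom C U V \<longrightarrow> g \<in> hom C U' V' \<longrightarrow>
        mtens C f g \<in> hom C (otens C U U') (otens C V V'))"
  using ax by (elim conjE) assumption

lemma ax7: "(\<forall>f g h. mtens C (mtens C f g) h = mtens C f (mtens C g h))"
  using ax by (elim conjE) assumption

lemma ax8: "(\<forall>f. mtens C (mid C (unito C)) f = f \<and> mtens C f (mid C (unito C)) = f)"
  using ax by (elim conjE) assumption

lemma ax9: "(\<forall>U V. mtens C (mid C U) (mid C V) = mid C (otens C U V))"
  using ax by (elim conjE) assumption

lemma ax10: "(\<forall>U V W U' V' W' f g f' g'. f \<in> hom C U V \<longrightarrow> g \<in> hom C V W \<longrightarrow>
        f' \<in> hom C U' V' \<longrightarrow> g' \<in> hom C V' W' \<longrightarrow>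
        mtens C (mcomp C g f) (mcomp C g' f') = mcomp C (mtens C g g') (mtens C f f'))"
  using ax by (elim conjE) assumption

lemma ax11: "(\<forall>V W. mzero C V W \<in> hom C V W)"
  using ax by (elim conjE) assumption

lemma ax12: "(\<forall>V W f g. f \<in> hom C V W \<longrightarrow> g \<in> hom C V W \<longrightarrow> madd C f g \<in> hom C V W)"
  using ax by (elim conjE) assumption

lemma ax13: "(\<forall>V W f. f \<in> hom C V W \<longrightarrow> mneg C f \<in> hom C V W)"
  using ax by (elim conjE) assumption

lemma ax14: "(\<forall>V W f g h. f \<in> hom C V W \<longrightarrow> g \<in> hom C V W \<longrightarrow> h \<in> hom C V W \<longrightarrow>
        madd C (madd C f g) h = madd C f (madd C g h))"
  using ax by (elim conjE) assumption

lemma ax15: "(\<forall>V W f g. f \<in> hom C V W \<longrightarrow> g \<in> hom C V W \<longrightarrow> madd C f g = madd C g f)"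
  using ax by (elim conjE) assumption

lemma ax16: "(\<forall>V W f. f \<in> hom C V W \<longrightarrow> madd C (mzero C V W) f = f)"
  using ax by (elim conjE) assumption

lemma ax17: "(\<forall>V W f. f \<in> hom C V W \<longrightarrow> madd C (mneg C f) f = mzero C V W)"
  using ax by (elim conjE) assumption

lemma ax18: "(\<forall>U V W f g g'. f \<in> hom C U V \<longrightarrow> g \<in> hom C V W \<longrightarrow> g' \<in> hom C V W \<longrightarrow>
        mcomp C (madd C g g') f = madd C (mcomp C g f) (mcomp C g' f))"
  using ax by (elim conjE) assumption

lemma ax19: "(\<forall>U V W f f' g. f \<in> hom C U V \<longrightarrow> f' \<in> hom C U V \<longrightarrow> g \<in> hom C V W \<longrightarrow>
        mcomp C g (madd C f f') = madd C (mcomp C g f) (mcomp C g f'))"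
  using ax by (elim conjE) assumption

lemma ax20: "(\<forall>U V U' V' f f' g. f \<in> hom C U V \<longrightarrow> f' \<in> hom C U V \<longrightarrow> g \<in> hom C U' V' \<longrightarrow>
        mtens C (madd C f f') g = madd C (mtens C f g) (mtens C f' g))"
  using ax by (elim conjE) assumption

lemma ax21: "(\<forall>U V U' V' f g g'. f \<in> hom C U V \<longrightarrow> g \<in> hom C U' V' \<longrightarrow> g' \<in> hom C U' V' \<longrightarrow>
        mtens C f (madd C g g') = madd C (mtens C f g) (mtens C f g'))"
  using ax by (elim conjE) assumption

lemma ax22: "(\<forall>k\<in>hom C (unito C) (unito C). \<forall>k'\<in>hom C (unito C) (unito C). mcomp C k k' = mcomp C k' k)"
  using ax by (elim conjE) assumption

lemma ax23: "mid C (unito C) \<noteq> mzero C (unito C) (unito C)"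
  using ax by (elim conjE) assumption

lemma ax24: "(\<forall>k\<in>hom C (unito C) (unito C). k \<noteq> mzero C (unito C) (unito C) \<longrightarrow>
        (\<exists>k'\<in>hom C (unito C) (unito C). mcomp C k' k = mid C (unito C)))"
  using ax by (elim conjE) assumption

lemma ax25: "(\<forall>k f g. k \<in> hom C (unito C) (unito C) \<longrightarrow> mtens C f (mtens C k g) = mtens C k (mtens C f g))"
  using ax by (elim conjE) assumption

lemma id_dm[simp]: "dm (idm V) = V" and id_cd[simp]: "cd (idm V) = V"
  using ax0 by (auto simp: hom_def)

lemma cp_dm[simp]: "cd f = dm g \<Longrightarrow> dm (cp g f) = dm f"
  and cp_cd[simp]: "cd f = dm g \<Longrightarrow> cd (cp g f) = cd g"
proof -
  assume "cd f = dm g"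
  then have "cp g f \<in> hom C (dm f) (cd g)" using ax1
    by (auto simp: hom_def)
  then show "dm (cp g f) = dm f" "cd (cp g f) = cd g" by (auto simp: hom_def)
qed

lemma cp_id_l[simp]: "cd f = V \<Longrightarrow> cp (idm V) f = f"
  using ax2 by (auto simp: hom_def)
lemma cp_id_r[simp]: "dm f = V \<Longrightarrow> cp f (idm V) = f"
  using ax2 by (auto simp: hom_def)

lemma cp_assoc: "cd f = dm g \<Longrightarrow> cd g = dm h \<Longrightarrow> cp h (cp g f) = cp (cp h g) f"
  using ax3 by (auto simp: hom_def)

lemma ot_assoc[simp]: "ot (ot U V) W = ot U (ot V W)"
  using ax4 by auto
lemma ot_un[simp]: "ot un V = V" "ot V un = V"
  using ax5 by auto

lemma tn_dm[simp]: "dm (tn f g) = ot (dm f) (dm g)"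
  and tn_cd[simp]: "cd (tn f g) = ot (cd f) (cd g)"
proof -
  have A: "\<forall>U V U' V' f g. f \<in> hom C U V \<longrightarrow> g \<in> hom C U' V' \<longrightarrow>
        mtens C f g \<in> hom C (otens C U U') (otens C V V')" using ax by (elim conjE) assumption
  have "tn f g \<in> hom C (ot (dm f) (dm g)) (ot (cd f) (cd g))"
    using A in_hom_self[of f] in_hom_self[of g] by blast
  then show "dm (tn f g) = ot (dm f) (dm g)" "cd (tn f g) = ot (cd f) (cd g)" by (auto simp: hom_def)
qed

lemma tn_assoc[simp]: "tn (tn f g) h = tn f (tn g h)" using ax7 by auto
lemma tn_un[simp]: "tn (idm un) f = f" "tn f (idm un) = f" using ax8 by auto
lemma tn_id[simp]: "tn (idm U) (idm V) = idm (ot U V)" using ax9 by auto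

lemma interchange: "cd f = dm g \<Longrightarrow> cd f' = dm g' \<Longrightarrow>
   tn (cp g f) (cp g' f') = cp (tn g g') (tn f f')"
  using ax10 by (auto simp: hom_def)

lemma zr_dm[simp]: "dm (zr V W) = V" and zr_cd[simp]: "cd (zr V W) = W"
  using ax11 by (auto simp: hom_def)

lemma ad_dm[simp]: "dm f = dm g \<Longrightarrow> cd f = cd g \<Longrightarrow> dm (ad f g) = dm f"
  and ad_cd[simp]: "dm f = dm g \<Longrightarrow> cd f = cd g \<Longrightarrow> cd (ad f g) = cd f"
proof -
  assume "dm f = dm g" "cd f = cd g"
  then have "ad f g \<in> hom C (dm f) (cd f)" using ax12 in_hom_self[of f] in_hom_self[of g]
    by (metis hom_iff)
  then show "dm (ad f g) = dm f" "cd (ad f g) = cd f" by (auto simp: hom_def)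
qed

lemma ng_dm[simp]: "dm (ng f) = dm f" and ng_cd[simp]: "cd (ng f) = cd f"
proof -
  have "ng f \<in> hom C (dm f) (cd f)" using ax13 in_hom_self[of f] by blast
  then show "dm (ng f) = dm f" "cd (ng f) = cd f" by (auto simp: hom_def)
qed

lemma ad_assoc: "dm f = dm g \<Longrightarrow> cd f = cd g \<Longrightarrow> dm h = dm g \<Longrightarrow> cd h = cd g \<Longrightarrow>
   ad (ad f g) h = ad f (ad g h)"
  using ax14 by (auto simp: hom_def)
lemma ad_comm: "dm f = dm g \<Longrightarrow> cd f = cd g \<Longrightarrow> ad f g = ad g f"
  using ax15 by (auto simp: hom_def)
lemma ad_zl[simp]: "ad (zr (dm f) (cd f)) f = f"
  using ax16 by (auto simp: hom_def)
lemma ad_zl'[simp]: "dm f = V \<Longrightarrow> cd f = W \<Longrightarrow> ad (zr V W) f = f"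
  using ad_zl by auto
lemma ad_zr'[simp]: "dm f = V \<Longrightarrow> cd f = W \<Longrightarrow> ad f (zr V W) = f"
  using ad_zl ad_comm by (metis zr_cd zr_dm)
lemma ad_ng: "ad (ng f) f = zr (dm f) (cd f)"
  using ax17 by (auto simp: hom_def)

lemma cp_ad_l: "cd f = dm g \<Longrightarrow> dm g' = dm g \<Longrightarrow> cd g' = cd g \<Longrightarrow>
   cp (ad g g') f = ad (cp g f) (cp g' f)"
  using ax18 by (auto simp: hom_def)
lemma cp_ad_r: "cd f = dm g \<Longrightarrow> dm f' = dm f \<Longrightarrow> cd f' = cd f \<Longrightarrow>
   cp g (ad f f') = ad (cp g f) (cp g f')"
  using ax19 by (auto simp: hom_def)
lemma tn_ad_l: "dm f' = dm f \<Longrightarrow> cd f' = cd f \<Longrightarrow> tn (ad f f') g = ad (tn f g) (tn f' g)"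
  using ax20 in_hom_self[of g] by (auto simp: hom_def)
lemma tn_ad_r: "dm g' = dm g \<Longrightarrow> cd g' = cd g \<Longrightarrow> tn f (ad g g') = ad (tn f g) (tn f g')"
  using ax21 in_hom_self[of f] by (auto simp: hom_def)

lemma ad_cancel: assumes "dm f = dm g" "cd f = cd g" "dm h = dm g" "cd h = cd g" "ad f h = ad g h"
  shows "f = g"
proof -
  have z: "ad h (ng h) = zr (dm g) (cd g)" using assms ad_ng ad_comm[of h "ng h"] by simp
  have "f = ad f (ad h (ng h))" using assms z by simp
  also have "\<dots> = ad (ad f h) (ng h)" using assms(1-4) by (simp add: ad_assoc)
  also have "\<dots> = ad (ad g h) (ng h)" using assms by simp
  also have "\<dots> = ad g (ad h (ng h))" using assms(1-4) by (simp add: ad_assoc)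
  also have "\<dots> = g" using z by simp
  finally show ?thesis .
qed

lemma ad_self_zero: assumes "ad f f = f" shows "f = zr (dm f) (cd f)"
  using ad_cancel[of f "zr (dm f) (cd f)" f] assms by simp

lemma cp_zr_r[simp]: "dm f = U \<Longrightarrow> cp f (zr V U) = zr V (cd f)"
proof -
  assume a: "dm f = U"
  have "cp f (zr V U) = cp f (ad (zr V U) (zr V U))" by simp
  also have "\<dots> = ad (cp f (zr V U)) (cp f (zr V U))" by (rule cp_ad_r) (simp_all add: a)
  finally show ?thesis using ad_self_zero[of "cp f (zr V U)"] a by simp
qed
lemma cp_zr_l[simp]: "cd f = U \<Longrightarrow> cp (zr U W) f = zr (dm f) W"
proof -
  assume a: "cd f = U"
  have "cp (zr U W) f = cp (ad (zr U W) (zr U W)) f" by simp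
  also have "\<dots> = ad (cp (zr U W) f) (cp (zr U W) f)" by (rule cp_ad_l) (simp_all add: a)
  finally show ?thesis using ad_self_zero[of "cp (zr U W) f"] a by simp
qed
lemma tn_zr_l[simp]: "tn (zr U W) g = zr (ot U (dm g)) (ot W (cd g))"
proof -
  have "tn (zr U W) g = tn (ad (zr U W) (zr U W)) g" by simp
  also have "\<dots> = ad (tn (zr U W) g) (tn (zr U W) g)" by (rule tn_ad_l) simp_all
  finally show ?thesis using ad_self_zero[of "tn (zr U W) g"] by simp
qed
lemma tn_zr_r[simp]: "tn f (zr U W) = zr (ot (dm f) U) (ot (cd f) W)"
proof -
  have "tn f (zr U W) = tn f (ad (zr U W) (zr U W))" by simp
  also have "\<dots> = ad (tn f (zr U W)) (tn f (zr U W))" by (rule tn_ad_r) simp_all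
  finally show ?thesis using ad_self_zero[of "tn f (zr U W)"] by simp
qed

end

context smcat begin

definition scl :: "'m \<Rightarrow> bool" where "scl c \<longleftrightarrow> dm c = un \<and> cd c = un"

lemma scl_dm[simp]: "scl c \<Longrightarrow> dm c = un" and scl_cd[simp]: "scl c \<Longrightarrow> cd c = un"
  by (auto simp: scl_def)

lemma scl_id[simp]: "scl (idm un)" and scl_zr[simp]: "scl (zr un un)"
  unfolding scl_def by auto

lemma scl_ad[simp]: "scl c \<Longrightarrow> scl c' \<Longrightarrow> scl (ad c c')" unfolding scl_def by simp
lemma scl_ng[simp]: "scl c \<Longrightarrow> scl (ng c)" unfolding scl_def by simp
lemma scl_cp[simp]: "scl c \<Longrightarrow> scl c' \<Longrightarrow> scl (cp c c')" unfolding scl_def by simp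

lemma tn_scl_dm[simp]: "scl c \<Longrightarrow> dm (tn c f) = dm f" by simp
lemma tn_scl_cd[simp]: "scl c \<Longrightarrow> cd (tn c f) = cd f" by simp

lemma tn_scl_scl: assumes "scl c" "scl c'" shows "tn c c' = cp c c'"
proof -
  have "tn c c' = tn (cp c (idm un)) (cp (idm un) c')" using assms by simp
  also have "\<dots> = cp (tn c (idm un)) (tn (idm un) c')"
    by (rule interchange) (use assms in simp_all)
  finally show ?thesis by simp
qed

lemma tn_cp_scl: assumes "scl c" "scl c'" shows "tn (cp c c') f = tn c (tn c' f)"
  by (simp add: tn_scl_scl[OF assms, symmetric])

lemma scl_comm: assumes "scl c" "scl c'" shows "cp c c' = cp c' c"
  using ax22 assms unfolding hom_def scl_def by auto

lemma tn_scl_comm: assumes "scl c" "scl c'" shows "tn c c' = tn c' c"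
  using assms tn_scl_scl scl_comm by simp

lemma cp_scl_l: assumes "scl c" "cd f = dm g" shows "cp (tn c g) f = tn c (cp g f)"
proof -
  have "tn c (cp g f) = tn (cp c (idm un)) (cp g f)" using assms by simp
  also have "\<dots> = cp (tn c g) (tn (idm un) f)"
    by (rule interchange) (use assms in simp_all)
  finally show ?thesis by simp
qed

lemma cp_scl_r: assumes "scl c" "cd f = dm g" shows "cp g (tn c f) = tn c (cp g f)"
proof -
  have "tn c (cp g f) = tn (cp (idm un) c) (cp g f)" using assms by simp
  also have "\<dots> = cp (tn (idm un) g) (tn c f)"
    by (rule interchange) (use assms in simp_all)
  finally show ?thesis by simp
qed

lemma tn_scl_r: assumes "scl c" shows "tn f (tn c g) = tn c (tn f g)"
  using ax25 assms unfolding hom_def scl_def by auto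

lemma tn_scl_id: "scl c \<Longrightarrow> tn (idm un) f = f" by simp

lemma scl_inv: assumes "scl c" "c \<noteq> zr un un" obtains c' where "scl c'" "cp c' c = idm un"
  using ax24 assms unfolding hom_def scl_def by auto

lemma id_un_nz: "idm un \<noteq> zr un un" using ax23 .

lemma tn_scl_cancel: assumes "scl c" "scl c'" "tn c (idm V) = tn c' (idm V)" "idm V \<noteq> zr V V"
  shows "c = c'"
proof (rule ccontr)
  assume ne: "c \<noteq> c'"
  define e where "e = ad c (ng c')"
  have se: "scl e" using assms by (simp add: e_def)
  have enz: "e \<noteq> zr un un"
  proof
    assume "e = zr un un"
    then have "ad c (ng c') = ad c' (ng c')"
      using assms ad_ng[of c'] ad_comm[of "ng c'" c'] by (simp add: e_def)
    then have "ad (ng c') c = ad (ng c') c'" using assms ad_comm by simp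
    then show False using ne ad_cancel[of c c' "ng c'"] assms ad_comm by simp
  qed
  have "tn e (idm V) = ad (tn c (idm V)) (tn (ng c') (idm V))"
    unfolding e_def by (rule tn_ad_l) (use assms in simp_all)
  also have "\<dots> = ad (tn c' (idm V)) (tn (ng c') (idm V))" using assms by simp
  also have "\<dots> = tn (ad c' (ng c')) (idm V)"
    by (rule tn_ad_l[symmetric]) (use assms in simp_all)
  also have "ad c' (ng c') = zr un un" using assms ad_ng[of c'] ad_comm[of "ng c'" c'] by simp
  finally have z: "tn e (idm V) = zr V V" by simp
  obtain e' where e': "scl e'" "cp e' e = idm un" using scl_inv[OF se enz] by blast
  have "idm V = tn (cp e' e) (idm V)" using e' by simp
  also have "\<dots> = tn e' (tn e (idm V))" by (rule tn_cp_scl[OF e'(1) se])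
  also have "\<dots> = zr V V" using z e' by simp
  finally show False using assms(4) by simp
qed

lemma simple_id_nz: "simple_obj C V \<Longrightarrow> idm V \<noteq> zr V V"
  by (simp add: simple_obj_def)

lemma simple_endo: assumes "simple_obj C V" "dm f = V" "cd f = V"
  obtains c where "scl c" "f = tn c (idm V)"
  using assms unfolding simple_obj_def hom_def scl_def by auto

lemma scal_prop: assumes "simple_obj C V" "dm f = V" "cd f = V"
  shows "scl (scal C V f)" "f = tn (scal C V f) (idm V)"
proof -
  obtain c where c: "scl c" "f = tn c (idm V)" using simple_endo assms by blast
  have "(THE c. c \<in> hom C un un \<and> f = tn c (idm V)) = c"
    apply (rule the_equality)
    using c apply (simp add: hom_def)
    using c tn_scl_cancel simple_id_nz[OF assms(1)] unfolding hom_def scl_def by auto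
  then have "scal C V f = c" by (simp add: scal_def)
  then show "scl (scal C V f)" "f = tn (scal C V f) (idm V)" using c by auto
qed

lemma scal_scl: "simple_obj C V \<Longrightarrow> dm f = V \<Longrightarrow> cd f = V \<Longrightarrow> scl (scal C V f)"
  using scal_prop by blast

lemma scal_tn_id: assumes "simple_obj C V" "scl c" shows "scal C V (tn c (idm V)) = c"
proof -
  have "tn c (idm V) = tn (scal C V (tn c (idm V))) (idm V)"
    by (rule scal_prop(2)) (use assms in simp_all)
  then show ?thesis
    using tn_scl_cancel[of c "scal C V (tn c (idm V))" V] scal_scl[of V "tn c (idm V)"] assms simple_id_nz
    by simp
qed

lemma scal_idm: "simple_obj C V \<Longrightarrow> scal C V (idm V) = idm un"
  using scal_tn_id[of V "idm un"] by simp

lemma scal_zr: "simple_obj C V \<Longrightarrow> scal C V (zr V V) = zr un un"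
  using scal_tn_id[of V "zr un un"] by simp

lemma scal_ad: assumes "simple_obj C V" "dm f = V" "cd f = V" "dm g = V" "cd g = V"
  shows "scal C V (ad f g) = ad (scal C V f) (scal C V g)"
proof -
  let ?a = "scal C V f" and ?b = "scal C V g"
  have "ad f g = ad (tn ?a (idm V)) (tn ?b (idm V))" using scal_prop assms by metis
  also have "\<dots> = tn (ad ?a ?b) (idm V)"
    by (rule tn_ad_l[symmetric]) (use scal_scl assms in simp_all)
  finally show ?thesis using scal_tn_id scal_scl assms by simp
qed

lemma scal_tn: assumes "simple_obj C V" "dm f = V" "cd f = V" "scl c"
  shows "scal C V (tn c f) = cp c (scal C V f)"
proof -
  let ?a = "scal C V f"
  have "tn c f = tn c (tn ?a (idm V))" using scal_prop assms by metis
  also have "\<dots> = tn (cp c ?a) (idm V)" using scal_scl assms tn_cp_scl by simp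
  finally show ?thesis using scal_tn_id scal_scl assms by simp
qed

lemma scal_cp: assumes "simple_obj C V" "dm f = V" "cd f = V" "dm g = V" "cd g = V"
  shows "scal C V (cp f g) = cp (scal C V f) (scal C V g)"
proof -
  let ?a = "scal C V f" and ?b = "scal C V g"
  have "cp f g = cp (tn ?a (idm V)) (tn ?b (idm V))" using scal_prop assms by metis
  also have "\<dots> = tn ?a (tn ?b (idm V))" using scal_scl assms by (simp add: cp_scl_l)
  also have "\<dots> = tn (cp ?a ?b) (idm V)" using scal_scl assms tn_cp_scl by simp
  finally show ?thesis using scal_tn_id scal_scl assms by simp
qed


end

context smcat begin

definition typd :: "'o \<Rightarrow> 'o \<Rightarrow> 'm \<Rightarrow> bool" where
  "typd U U' f \<longleftrightarrow> dm f = U \<and> cd f = U'"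

definition msF :: "'o \<Rightarrow> 'o \<Rightarrow> ('a \<Rightarrow> 'm) \<Rightarrow> 'a \<Rightarrow> 'm \<Rightarrow> 'm" where
  "msF U U' g a acc = ad (if typd U U' (g a) then g a else zr U U') (if typd U U' acc then acc else zr U U')"

lemma msF_typd: "typd U U' (msF U U' g a acc)"
  unfolding msF_def typd_def by auto

lemma msF_comm: "comp_fun_commute (msF U U' g)"
proof
  fix x y
  show "msF U U' g y \<circ> msF U U' g x = msF U U' g x \<circ> msF U U' g y"
  proof
    fix z
    let ?gx = "if typd U U' (g x) then g x else zr U U'"
    let ?gy = "if typd U U' (g y) then g y else zr U U'"
    let ?z = "if typd U U' z then z else zr U U'"
    have t: "typd U U' ?gx" "typd U U' ?gy" "typd U U' ?z" unfolding typd_def by auto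
    have "(msF U U' g y \<circ> msF U U' g x) z = ad ?gy (ad ?gx ?z)"
      using msF_typd[of U U' g x z] by (simp add: msF_def)
    also have "\<dots> = ad (ad ?gy ?gx) ?z" using t unfolding typd_def by (simp add: ad_assoc)
    also have "ad ?gy ?gx = ad ?gx ?gy" using t unfolding typd_def by (simp add: ad_comm)
    also have "ad (ad ?gx ?gy) ?z = ad ?gx (ad ?gy ?z)" using t unfolding typd_def by (simp add: ad_assoc)
    also have "\<dots> = (msF U U' g x \<circ> msF U U' g y) z"
      using msF_typd[of U U' g y z] by (simp add: msF_def)
    finally show "(msF U U' g y \<circ> msF U U' g x) z = (msF U U' g x \<circ> msF U U' g y) z" .
  qed
qed

lemma msum_alt: assumes "\<forall>a\<in>S. typd U U' (g a)"
  shows "msum C U U' g S = Finite_Set.fold (msF U U' g) (zr U U') S"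
  unfolding msum_def
  by (rule fold_closed_eq[where B="{b. typd U U' b}"]) (use assms in \<open>auto simp: msF_def typd_def\<close>)

lemma msum_empty[simp]: "msum C U U' g {} = zr U U'"
  by (simp add: msum_def)

lemma msum_typd: assumes "finite S" "\<forall>a\<in>S. typd U U' (g a)"
  shows "typd U U' (msum C U U' g S)"
proof (cases "S = {}")
  case True then show ?thesis by (simp add: typd_def)
next
  case False
  then obtain x S' where S: "S = insert x S'" "x \<notin> S'" by (metis Set.set_insert all_not_in_conv)
  have "msum C U U' g S = msF U U' g x (Finite_Set.fold (msF U U' g) (zr U U') S')"
    using msum_alt[OF assms(2)] comp_fun_commute_on.fold_insert[OF msF_comm[unfolded comp_fun_commute_def']] S assms(1) by simp
  then show ?thesis using msF_typd by simp
qed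

lemma msum_insert: assumes "finite S" "x \<notin> S" "\<forall>a\<in>insert x S. typd U U' (g a)"
  shows "msum C U U' g (insert x S) = ad (g x) (msum C U U' g S)"
proof -
  have "msum C U U' g (insert x S) = msF U U' g x (Finite_Set.fold (msF U U' g) (zr U U') S)"
    using msum_alt[OF assms(3)] comp_fun_commute_on.fold_insert[OF msF_comm[unfolded comp_fun_commute_def']] assms by simp
  also have "Finite_Set.fold (msF U U' g) (zr U U') S = msum C U U' g S"
    using msum_alt[of S U U' g] assms by simp
  finally show ?thesis using msum_typd[of S U U' g] assms by (simp add: msF_def)
qed

lemma msum_cong: assumes "finite S" "\<forall>a\<in>S. g a = h a"
  shows "msum C U U' g S = msum C U U' h S"
  unfolding msum_def by (rule fold_closed_eq[where B=UNIV]) (use assms in auto)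

lemma msum_insert_zero: assumes "finite S" "g x = zr U U'" "\<forall>a\<in>S. typd U U' (g a)"
  shows "msum C U U' g (insert x S) = msum C U U' g S"
proof (cases "x \<in> S")
  case True then show ?thesis by (simp add: insert_absorb)
next
  case False
  have "msum C U U' g (insert x S) = ad (g x) (msum C U U' g S)"
    using assms False by (intro msum_insert) (auto simp: typd_def)
  also have "\<dots> = msum C U U' g S" using assms(2) msum_typd[OF assms(1,3)]
    unfolding typd_def by simp
  finally show ?thesis .
qed

lemma msum_zero_ext_aux: assumes "finite D" "finite S" "\<forall>a\<in>D. g a = zr U U'"
  "\<forall>a\<in>S. typd U U' (g a)"
  shows "msum C U U' g (S \<union> D) = msum C U U' g S"
  using assms
proof (induction D rule: finite_induct)
  case empty then show ?case by simp
next
  case (insert x F)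
  have "S \<union> insert x F = insert x (S \<union> F)" by auto
  then have "msum C U U' g (S \<union> insert x F) = msum C U U' g (S \<union> F)"
    using insert.prems insert.hyps
    by (simp only:) (rule msum_insert_zero, auto simp: typd_def)
  also have "\<dots> = msum C U U' g S" using insert by auto
  finally show ?case .
qed

lemma msum_zero_ext: assumes "finite S'" "S \<subseteq> S'" "\<forall>a\<in>S'-S. g a = zr U U'"
  "\<forall>a\<in>S. typd U U' (g a)"
  shows "msum C U U' g S' = msum C U U' g S"
proof -
  have "S' = S \<union> (S' - S)" using assms(2) by auto
  then show ?thesis using msum_zero_ext_aux[of "S' - S" S g U U'] assms
    by (metis finite_Diff finite_subset)
qed

lemma msum_add: assumes "finite S" "\<forall>a\<in>S. typd U U' (g a)" "\<forall>a\<in>S. typd U U' (h a)"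
  shows "msum C U U' (\<lambda>a. ad (g a) (h a)) S = ad (msum C U U' g S) (msum C U U' h S)"
  using assms
proof (induction S rule: finite_induct)
  case empty then show ?case by simp
next
  case (insert x F)
  have t: "\<forall>a\<in>insert x F. typd U U' (ad (g a) (h a))" using insert unfolding typd_def by auto
  have tg: "typd U U' (msum C U U' g F)" "typd U U' (msum C U U' h F)"
    using insert msum_typd by auto
  have "msum C U U' (\<lambda>a. ad (g a) (h a)) (insert x F) = ad (ad (g x) (h x)) (msum C U U' (\<lambda>a. ad (g a) (h a)) F)"
    using insert t by (simp add: msum_insert)
  also have "\<dots> = ad (ad (g x) (h x)) (ad (msum C U U' g F) (msum C U U' h F))" using insert by simp
  also have "\<dots> = ad (ad (g x) (msum C U U' g F)) (ad (h x) (msum C U U' h F))"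
  proof -
    have T: "typd U U' (g x)" "typd U U' (h x)" using insert by auto
    let ?a="g x" and ?b="h x" and ?c="msum C U U' g F" and ?d="msum C U U' h F"
    have T2: "dm ?a = U" "cd ?a = U'" "dm ?b = U" "cd ?b = U'" "dm ?c = U" "cd ?c = U'" "dm ?d = U" "cd ?d = U'"
      using T tg unfolding typd_def by auto
    have "ad (ad ?a ?b) (ad ?c ?d) = ad ?a (ad ?b (ad ?c ?d))" using T2 by (simp add: ad_assoc)
    also have "ad ?b (ad ?c ?d) = ad (ad ?b ?c) ?d" using T2 by (simp add: ad_assoc)
    also have "ad ?b ?c = ad ?c ?b" using T2 by (simp add: ad_comm)
    also have "ad (ad ?c ?b) ?d = ad ?c (ad ?b ?d)" using T2 by (simp add: ad_assoc)
    also have "ad ?a (ad ?c (ad ?b ?d)) = ad (ad ?a ?c) (ad ?b ?d)" using T2 by (simp add: ad_assoc)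
    finally show ?thesis .
  qed
  also have "\<dots> = ad (msum C U U' g (insert x F)) (msum C U U' h (insert x F))"
    using insert by (simp add: msum_insert)
  finally show ?case .
qed

lemma msum_reindex: assumes "finite S" "inj_on p S" "\<forall>a\<in>p ` S. typd U U' (g a)"
  shows "msum C U U' g (p ` S) = msum C U U' (\<lambda>a. g (p a)) S"
  using assms
proof (induction S rule: finite_induct)
  case empty then show ?case by simp
next
  case (insert x F)
  have "p x \<notin> p ` F" using insert by auto
  then have "msum C U U' g (p ` insert x F) = ad (g (p x)) (msum C U U' g (p ` F))"
    using insert by (simp add: msum_insert)
  also have "msum C U U' g (p ` F) = msum C U U' (\<lambda>a. g (p a)) F" using insert by auto
  also have "ad (g (p x)) \<dots> = msum C U U' (\<lambda>a. g (p a)) (insert x F)"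
    using insert by (simp add: msum_insert)
  finally show ?case .
qed

end

locale psi = smcat C for C :: "('o,'m) mcat" +
  fixes I :: "'i set" and V :: "'i \<Rightarrow> 'o" and st :: "'i \<Rightarrow> 'i" and b d :: "'i \<Rightarrow> 'm"
  assumes psi: "psi_system C I V st b d"
begin

lemma simpleV: "i \<in> I \<Longrightarrow> simple_obj C (V i)"
  using psi by (simp add: psi_system_def)

lemma orth: "i \<in> I \<Longrightarrow> j \<in> I \<Longrightarrow> i \<noteq> j \<Longrightarrow> dm f = V i \<Longrightarrow> cd f = V j \<Longrightarrow> f = zr (V i) (V j)"
  using psi unfolding psi_system_def hom_def by blast

lemma st_I[simp]: "i \<in> I \<Longrightarrow> st i \<in> I" and st_st[simp]: "i \<in> I \<Longrightarrow> st (st i) = i"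
  using psi by (auto simp: psi_system_def)

lemma b_dm[simp]: "i \<in> I \<Longrightarrow> dm (b i) = un" and b_cd[simp]: "i \<in> I \<Longrightarrow> cd (b i) = ot (V i) (V (st i))"
  and d_dm[simp]: "i \<in> I \<Longrightarrow> dm (d i) = ot (V i) (V (st i))" and d_cd[simp]: "i \<in> I \<Longrightarrow> cd (d i) = un"
  using psi by (auto simp: psi_system_def hom_def)

lemma zig1: "i \<in> I \<Longrightarrow> cp (tn (idm (V i)) (d (st i))) (tn (b i) (idm (V i))) = idm (V i)"
  and zig2: "i \<in> I \<Longrightarrow> cp (tn (d i) (idm (V i))) (tn (idm (V i)) (b (st i))) = idm (V i)"
  using psi by (auto simp: psi_system_def)

lemma cond4: "i \<in> I \<Longrightarrow> j \<in> I \<Longrightarrow> k \<in> I \<Longrightarrow> dm f = V k \<Longrightarrow> cd f = ot (V i) (V j) \<Longrightarrow> f \<noteq> zr (V k) (ot (V i) (V j)) \<Longrightarrow>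
   \<exists>ts. (\<forall>(k,x,y)\<in>set ts. k \<in> I \<and> dm x = V k \<and> cd x = ot (V i) (V j) \<and> dm y = ot (V i) (V j) \<and> cd y = V k) \<and>
            foldr (\<lambda>(k,x,y) acc. ad (cp x y) acc) ts (zr (ot (V i) (V j)) (ot (V i) (V j))) = idm (ot (V i) (V j))"
proof -
  assume a: "i \<in> I" "j \<in> I" "k \<in> I" "dm f = V k" "cd f = ot (V i) (V j)" "f \<noteq> zr (V k) (ot (V i) (V j))"
  have "\<exists>k\<in>I. \<exists>f\<in>hom C (V k) (ot (V i) (V j)). f \<noteq> zr (V k) (ot (V i) (V j))"
    using a by (auto simp: hom_def)
  then show ?thesis using psi a(1,2) unfolding psi_system_def hom_def by blast
qed

abbreviation T3 where "T3 \<equiv> I \<times> I \<times> I"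

definition ho :: "'i \<times> 'i \<times> 'i \<Rightarrow> 'o" where "ho p = (case p of (i,j,k) \<Rightarrow> ot (V i) (V j))"
definition vo :: "'i \<times> 'i \<times> 'i \<Rightarrow> 'o" where "vo p = (case p of (i,j,k) \<Rightarrow> V k)"
lemma ho_simp[simp]: "ho (i,j,k) = ot (V i) (V j)" and vo_simp[simp]: "vo (i,j,k) = V k"
  by (simp_all add: ho_def vo_def)

definition htyp where "htyp p f \<longleftrightarrow> dm f = ho p \<and> cd f = vo p"
definition ctyp where "ctyp p g \<longleftrightarrow> dm g = vo p \<and> cd g = ho p"
abbreviation hzr where "hzr p \<equiv> zr (ho p) (vo p)"
abbreviation czr where "czr p \<equiv> zr (vo p) (ho p)"

lemma htyp_zr[simp]: "htyp p (hzr p)" and ctyp_zr[simp]: "ctyp p (czr p)"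
  by (simp_all add: htyp_def ctyp_def)

definition hx :: "('i,'m) hel \<Rightarrow> 'i \<times> 'i \<times> 'i \<Rightarrow> 'm" where "hx x p = (case p of (i,j,k) \<Rightarrow> fst x i j k)"
definition cx :: "('i,'m) hel \<Rightarrow> 'i \<times> 'i \<times> 'i \<Rightarrow> 'm" where "cx x p = (case p of (i,j,k) \<Rightarrow> snd x i j k)"
lemma hx_simp[simp]: "hx x (i,j,k) = fst x i j k" and cx_simp[simp]: "cx x (i,j,k) = snd x i j k"
  by (simp_all add: hx_def cx_def)

abbreviation H where "H \<equiv> Hsp C I V"
abbreviation supp where "supp \<equiv> hsupp C I V"

lemma supp_alt: "supp x = {p \<in> T3. hx x p \<noteq> hzr p \<or> cx x p \<noteq> czr p}"
  by (auto simp: hsupp_def hz_def cz_def)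

lemma supp_T3: "supp x \<subseteq> T3" by (auto simp: supp_alt)

lemma H_iff: "x \<in> H \<longleftrightarrow> (\<forall>p\<in>T3. htyp p (hx x p) \<and> ctyp p (cx x p)) \<and>
   (\<forall>i j k. \<not> (i \<in> I \<and> j \<in> I \<and> k \<in> I) \<longrightarrow> fst x i j k = undefined \<and> snd x i j k = undefined) \<and>
   finite (supp x)"
proof -
  have e1: "\<And>P A B. (\<forall>i j k. if P i j k then A i j k else B i j k) \<longleftrightarrow>
     (\<forall>i j k. P i j k \<longrightarrow> A i j k) \<and> (\<forall>i j k. \<not> P i j k \<longrightarrow> B i j k)" by meson
  have e2: "(\<forall>p\<in>T3. htyp p (hx x p) \<and> ctyp p (cx x p)) \<longleftrightarrow>
     (\<forall>i j k. i \<in> I \<and> j \<in> I \<and> k \<in> I \<longrightarrow> fst x i j k \<in> hom C (ot (V i) (V j)) (V k) \<and> snd x i j k \<in> hom C (V k) (ot (V i) (V j)))"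
    by (auto simp: htyp_def ctyp_def hom_def)
  show ?thesis unfolding Hsp_def mem_Collect_eq e1 e2 by blast
qed

lemma H_htyp: "x \<in> H \<Longrightarrow> p \<in> T3 \<Longrightarrow> htyp p (hx x p)" and H_ctyp: "x \<in> H \<Longrightarrow> p \<in> T3 \<Longrightarrow> ctyp p (cx x p)"
  and H_fin: "x \<in> H \<Longrightarrow> finite (supp x)"
  by (auto simp: H_iff)

lemma H_out: "x \<in> H \<Longrightarrow> \<not> (i \<in> I \<and> j \<in> I \<and> k \<in> I) \<Longrightarrow> fst x i j k = undefined \<and> snd x i j k = undefined"
  by (auto simp: H_iff)

lemma H_eqI: assumes "x \<in> H" "y \<in> H" "\<forall>p\<in>T3. hx x p = hx y p \<and> cx x p = cx y p" shows "x = y"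
proof -
  have "fst x = fst y"
  proof (intro ext)
    fix i j k show "fst x i j k = fst y i j k"
      using assms H_out[of x i j k] H_out[of y i j k] by (cases "i \<in> I \<and> j \<in> I \<and> k \<in> I") force+
  qed
  moreover have "snd x = snd y"
  proof (intro ext)
    fix i j k show "snd x i j k = snd y i j k"
      using assms H_out[of x i j k] H_out[of y i j k] by (cases "i \<in> I \<and> j \<in> I \<and> k \<in> I") force+
  qed
  ultimately show ?thesis by (simp add: prod_eq_iff)
qed

lemma not_supp: "p \<in> T3 \<Longrightarrow> p \<notin> supp x \<Longrightarrow> hx x p = hzr p \<and> cx x p = czr p"
  by (auto simp: supp_alt)

definition opS :: "('i \<times> 'i \<times> 'i \<Rightarrow> 'i \<times> 'i \<times> 'i) \<Rightarrow> ('i \<times> 'i \<times> 'i \<Rightarrow> 'm \<Rightarrow> 'm) \<Rightarrow> ('i \<times> 'i \<times> 'i \<Rightarrow> 'm \<Rightarrow> 'm)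
   \<Rightarrow> ('i,'m) hel \<Rightarrow> ('i,'m) hel" where
  "opS pi al be x = ((\<lambda>a e c. if a \<in> I \<and> e \<in> I \<and> c \<in> I then al (a,e,c) (cx x (pi (a,e,c))) else undefined),
                    (\<lambda>a e c. if a \<in> I \<and> e \<in> I \<and> c \<in> I then be (a,e,c) (hx x (pi (a,e,c))) else undefined))"

lemma opS_hx: "p \<in> T3 \<Longrightarrow> hx (opS pi al be x) p = al p (cx x (pi p))"
  and opS_cx: "p \<in> T3 \<Longrightarrow> cx (opS pi al be x) p = be p (hx x (pi p))"
  by (cases p, simp add: opS_def)+

definition swp :: "('i \<times> 'i \<times> 'i \<Rightarrow> 'i \<times> 'i \<times> 'i) \<Rightarrow> ('i \<times> 'i \<times> 'i \<Rightarrow> 'm \<Rightarrow> 'm) \<Rightarrow> ('i \<times> 'i \<times> 'i \<Rightarrow> 'm \<Rightarrow> 'm) \<Rightarrow> bool" where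
  "swp pi al be \<longleftrightarrow> (\<forall>p\<in>T3. pi p \<in> T3 \<and> pi (pi p) = p) \<and>
     (\<forall>p\<in>T3. \<forall>g. ctyp (pi p) g \<longrightarrow> htyp p (al p g)) \<and>
     (\<forall>p\<in>T3. \<forall>f. htyp (pi p) f \<longrightarrow> ctyp p (be p f)) \<and>
     (\<forall>p\<in>T3. al p (czr (pi p)) = hzr p \<and> be p (hzr (pi p)) = czr p)"

lemma swp_pi: "swp pi al be \<Longrightarrow> p \<in> T3 \<Longrightarrow> pi p \<in> T3" and swp_pipi: "swp pi al be \<Longrightarrow> p \<in> T3 \<Longrightarrow> pi (pi p) = p"
  by (auto simp: swp_def)

lemma swp_supp: assumes "swp pi al be" shows "supp (opS pi al be x) \<subseteq> pi ` supp x"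
proof
  fix p assume p: "p \<in> supp (opS pi al be x)"
  then have pT: "p \<in> T3" using supp_T3 by blast
  have "pi p \<in> supp x"
  proof (rule ccontr)
    assume "pi p \<notin> supp x"
    then have "hx x (pi p) = hzr (pi p)" "cx x (pi p) = czr (pi p)" using not_supp swp_pi[OF assms pT] by auto
    moreover have "al p (czr (pi p)) = hzr p \<and> be p (hzr (pi p)) = czr p" using assms pT unfolding swp_def by blast
    ultimately show False using p pT by (simp add: supp_alt opS_hx opS_cx)
  qed
  then show "p \<in> pi ` supp x" using swp_pipi[OF assms pT] by (metis image_eqI)
qed

lemma swp_H: assumes "swp pi al be" "x \<in> H" shows "opS pi al be x \<in> H"
  unfolding H_iff
proof (intro conjI ballI allI impI)
  fix p assume p: "p \<in> T3"
  have pp: "pi p \<in> T3" using swp_pi[OF assms(1) p] .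
  have t1: "\<forall>p\<in>T3. \<forall>g. ctyp (pi p) g \<longrightarrow> htyp p (al p g)"
    and t2: "\<forall>p\<in>T3. \<forall>f. htyp (pi p) f \<longrightarrow> ctyp p (be p f)" using assms(1) unfolding swp_def by blast+
  show "htyp p (hx (opS pi al be x) p)" unfolding opS_hx[OF p]
    using t1 p H_ctyp[OF assms(2) pp] by blast
  show "ctyp p (cx (opS pi al be x) p)" unfolding opS_cx[OF p]
    using t2 p H_htyp[OF assms(2) pp] by blast
next
  fix i j k assume n: "\<not> (i \<in> I \<and> j \<in> I \<and> k \<in> I)"
  show "fst (opS pi al be x) i j k = undefined" "snd (opS pi al be x) i j k = undefined"
    unfolding opS_def by (simp_all only: fst_conv snd_conv if_not_P[OF n])
next
  show "finite (supp (opS pi al be x))"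
    by (rule finite_subset[OF swp_supp[OF assms(1)]]) (rule finite_imageI[OF H_fin[OF assms(2)]])
qed

abbreviation fm where "fm \<equiv> hform C I V"

definition ftm :: "('i,'m) hel \<Rightarrow> ('i,'m) hel \<Rightarrow> 'i \<times> 'i \<times> 'i \<Rightarrow> 'm" where
  "ftm x y = (\<lambda>(i,j,k). ad (scal C (V k) (cp (fst x i j k) (snd y i j k)))
                       (scal C (V k) (cp (fst y i j k) (snd x i j k))))"

abbreviation sc where "sc p f \<equiv> scal C (vo p) f"

lemma ftm_alt: "ftm x y p = ad (sc p (cp (hx x p) (cx y p))) (sc p (cp (hx y p) (cx x p)))"
  by (simp add: ftm_def hx_def cx_def split: prod.splits)

lemma fm_def': "fm x y = msum C un un (ftm x y) (supp x \<union> supp y)"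
  by (simp add: hform_def ftm_def)

lemma simple_vo: "p \<in> T3 \<Longrightarrow> simple_obj C (vo p)"
  using simpleV by auto

lemma sc_scl: "p \<in> T3 \<Longrightarrow> dm f = vo p \<Longrightarrow> cd f = vo p \<Longrightarrow> scl (sc p f)"
  using scal_scl simple_vo by blast

lemma ftm_scl: assumes "x \<in> H" "y \<in> H" "p \<in> T3" shows "scl (ftm x y p)"
proof -
  have "htyp p (hx x p)" "ctyp p (cx y p)" "htyp p (hx y p)" "ctyp p (cx x p)"
    using assms H_htyp H_ctyp by auto
  then have "scl (sc p (cp (hx x p) (cx y p)))" "scl (sc p (cp (hx y p) (cx x p)))"
    using assms(3) unfolding htyp_def ctyp_def by (auto intro!: sc_scl)
  then show ?thesis by (simp add: ftm_alt)
qed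

lemma ftm_zero: assumes "p \<in> T3" "p \<notin> supp x" "p \<notin> supp y" shows "ftm x y p = zr un un"
  using assms not_supp[of p x] not_supp[of p y] scal_zr[OF simple_vo[OF assms(1)]]
  by (simp add: ftm_alt)

lemma fm_over: assumes "x \<in> H" "y \<in> H" "finite S" "S \<subseteq> T3" "supp x \<union> supp y \<subseteq> S"
  shows "fm x y = msum C un un (ftm x y) S"
  unfolding fm_def'
proof (rule msum_zero_ext[symmetric])
  show "finite S" "supp x \<union> supp y \<subseteq> S" using assms by auto
  show "\<forall>a\<in>S - (supp x \<union> supp y). ftm x y a = zr un un"
    using assms(4) ftm_zero by blast
  show "\<forall>a\<in>supp x \<union> supp y. typd un un (ftm x y a)"
    using ftm_scl[OF assms(1,2)] supp_T3 unfolding typd_def scl_def by blast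
qed

lemma fm_sym: assumes "x \<in> H" "y \<in> H" shows "fm x y = fm y x"
proof -
  have "fm x y = msum C un un (ftm x y) (supp x \<union> supp y)" by (rule fm_def')
  also have "\<dots> = msum C un un (ftm y x) (supp x \<union> supp y)"
  proof (rule msum_cong)
    show "finite (supp x \<union> supp y)" using assms H_fin by auto
    show "\<forall>a\<in>supp x \<union> supp y. ftm x y a = ftm y x a"
    proof
      fix a assume "a \<in> supp x \<union> supp y"
      then have aT: "a \<in> T3" using supp_T3 by blast
      have "htyp a (hx x a)" "ctyp a (cx y a)" "htyp a (hx y a)" "ctyp a (cx x a)"
        using assms aT H_htyp H_ctyp by auto
      then have "scl (sc a (cp (hx x a) (cx y a)))" "scl (sc a (cp (hx y a) (cx x a)))"
        using aT unfolding htyp_def ctyp_def by (auto intro!: sc_scl)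
      then show "ftm x y a = ftm y x a" by (simp add: ftm_alt ad_comm)
    qed
  qed
  also have "\<dots> = fm y x" by (simp add: fm_def' Un_commute)
  finally show ?thesis .
qed

end

context psi begin

lemma sc_scl_ht: "p \<in> T3 \<Longrightarrow> htyp p f \<Longrightarrow> ctyp p g \<Longrightarrow> scl (sc p (cp f g))"
  unfolding htyp_def ctyp_def by (auto intro!: sc_scl)

lemma opS_transpose:
  assumes sw: "swp pi al be" and sw': "swp pi al' be'"
  and P1: "\<forall>p\<in>T3. \<forall>f h. htyp (pi p) f \<longrightarrow> htyp p h \<longrightarrow> sc p (cp h (be p f)) = sc (pi p) (cp f (be' (pi p) h))"
  and P2: "\<forall>p\<in>T3. \<forall>g g'. ctyp (pi p) g \<longrightarrow> ctyp p g' \<longrightarrow> sc p (cp (al p g) g') = sc (pi p) (cp (al' (pi p) g') g)"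
  and x: "x \<in> H" and y: "y \<in> H"
  shows "fm (opS pi al be x) y = fm x (opS pi al' be' y)"
proof -
  let ?X = "opS pi al be x" and ?Y = "opS pi al' be' y"
  define S0 where "S0 = supp x \<union> supp y"
  define S where "S = S0 \<union> pi ` S0"
  have S0T: "S0 \<subseteq> T3" using supp_T3 by (auto simp: S0_def)
  have piT: "\<And>p. p \<in> T3 \<Longrightarrow> pi p \<in> T3" using swp_pi[OF sw] .
  have pipi: "\<And>p. p \<in> T3 \<Longrightarrow> pi (pi p) = p" using swp_pipi[OF sw] .
  have ST: "S \<subseteq> T3" using S0T piT unfolding S_def by blast
  have fS0: "finite S0" using H_fin x y by (simp add: S0_def)
  have fS: "finite S" using fS0 by (simp add: S_def)
  have clos: "pi p \<in> S" if pS: "p \<in> S" for p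
  proof -
    from pS consider "p \<in> S0" | q where "q \<in> S0" "p = pi q" unfolding S_def by blast
    then show ?thesis
    proof cases
      case 1 then show ?thesis unfolding S_def by blast
    next
      case 2
      then have "q \<in> T3" using S0T by blast
      then have "pi p = q" using 2 pipi by simp
      then show ?thesis using 2 unfolding S_def by blast
    qed
  qed
  have piS: "pi ` S = S"
  proof
    show "pi ` S \<subseteq> S" using clos by blast
    show "S \<subseteq> pi ` S"
    proof
      fix p assume pS: "p \<in> S"
      then have "p \<in> T3" using ST by blast
      then have "p = pi (pi p)" using pipi by simp
      then show "p \<in> pi ` S" using clos[OF pS] by blast
    qed
  qed
  have injS: "inj_on pi S"
    by (rule inj_onI) (metis ST pipi subsetD)
  have XH: "?X \<in> H" using swp_H[OF sw x] .
  have YH: "?Y \<in> H" using swp_H[OF sw' y] .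
  have "fm ?X y = msum C un un (ftm ?X y) S"
  proof (rule fm_over[OF XH y fS ST])
    show "supp ?X \<union> supp y \<subseteq> S" using swp_supp[OF sw, of x] by (auto simp: S_def S0_def)
  qed
  also have "\<dots> = msum C un un (\<lambda>p. ftm x ?Y (pi p)) S"
  proof (rule msum_cong[OF fS], rule ballI)
    fix p assume pS: "p \<in> S"
    then have p: "p \<in> T3" using ST by blast
    have pp: "pi p \<in> T3" using piT[OF p] .
    have ty: "ctyp (pi p) (cx x (pi p))" "ctyp p (cx y p)" "htyp (pi p) (hx x (pi p))" "htyp p (hx y p)"
      using H_ctyp H_htyp x y p pp by auto
    have e1: "sc p (cp (al p (cx x (pi p))) (cx y p)) = sc (pi p) (cp (al' (pi p) (cx y p)) (cx x (pi p)))"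
      using P2 p ty by blast
    have e2: "sc p (cp (hx y p) (be p (hx x (pi p)))) = sc (pi p) (cp (hx x (pi p)) (be' (pi p) (hx y p)))"
      using P1 p ty by blast
    have a1: "\<forall>p\<in>T3. \<forall>g. ctyp (pi p) g \<longrightarrow> htyp p (al' p g)"
      and a2: "\<forall>p\<in>T3. \<forall>f. htyp (pi p) f \<longrightarrow> ctyp p (be' p f)" using sw' unfolding swp_def by blast+
    have t1: "htyp (pi p) (al' (pi p) (cx y p))" using a1 pp ty(2) pipi[OF p] by auto
    have t2: "ctyp (pi p) (be' (pi p) (hx y p))" using a2 pp ty(4) pipi[OF p] by auto
    have s1: "scl (sc (pi p) (cp (al' (pi p) (cx y p)) (cx x (pi p))))" using sc_scl_ht[OF pp t1 ty(1)] .
    have s2: "scl (sc (pi p) (cp (hx x (pi p)) (be' (pi p) (hx y p))))" using sc_scl_ht[OF pp ty(3) t2] .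
    show "ftm ?X y p = ftm x ?Y (pi p)"
      unfolding ftm_alt opS_hx[OF p] opS_cx[OF p] opS_hx[OF pp] opS_cx[OF pp] pipi[OF p] e1 e2
      using s1 s2 by (simp add: ad_comm)
  qed
  also have "\<dots> = msum C un un (ftm x ?Y) (pi ` S)"
  proof (rule msum_reindex[symmetric, OF fS injS])
    show "\<forall>a\<in>pi ` S. typd un un (ftm x ?Y a)"
    proof
      fix a assume "a \<in> pi ` S"
      then have "a \<in> S" by (simp only: piS)
      then have "a \<in> T3" using ST by blast
      then show "typd un un (ftm x ?Y a)" using ftm_scl[OF x YH] unfolding typd_def scl_def by blast
    qed
  qed
  also have "\<dots> = fm x ?Y"
  proof (rule fm_over[symmetric, OF x YH])
    show "finite (pi ` S)" "pi ` S \<subseteq> T3" using fS piS ST by auto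
    show "supp x \<union> supp ?Y \<subseteq> pi ` S" using swp_supp[OF sw', of y] piS by (auto simp: S_def S0_def)
  qed
  finally show ?thesis .
qed

end

context psi begin

definition piA :: "'i \<times> 'i \<times> 'i \<Rightarrow> 'i \<times> 'i \<times> 'i" where "piA p = (case p of (a,e,c) \<Rightarrow> (st a, c, e))"
definition alA where "alA p g = (case p of (a,e,c) \<Rightarrow> cp (tn (d a) (idm (V c))) (tn (idm (V a)) g))"
definition beA where "beA p f = (case p of (a,e,c) \<Rightarrow> cp (tn (idm (V a)) f) (tn (b a) (idm (V c))))"
definition piB :: "'i \<times> 'i \<times> 'i \<Rightarrow> 'i \<times> 'i \<times> 'i" where "piB p = (case p of (a,e,c) \<Rightarrow> (c, st e, a))"
definition alB where "alB p g = (case p of (a,e,c) \<Rightarrow> cp (tn (idm (V c)) (d (st e))) (tn g (idm (V e))))"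
definition beB where "beB p f = (case p of (a,e,c) \<Rightarrow> cp (tn f (idm (V e))) (tn (idm (V c)) (b (st e))))"

lemma piA_simp[simp]: "piA (a,e,c) = (st a, c, e)" and piB_simp[simp]: "piB (a,e,c) = (c, st e, a)"
  by (simp_all add: piA_def piB_def)
lemma alA_simp: "alA (a,e,c) g = cp (tn (d a) (idm (V c))) (tn (idm (V a)) g)"
  and beA_simp: "beA (a,e,c) f = cp (tn (idm (V a)) f) (tn (b a) (idm (V c)))"
  and alB_simp: "alB (a,e,c) g = cp (tn (idm (V c)) (d (st e))) (tn g (idm (V e)))"
  and beB_simp: "beB (a,e,c) f = cp (tn f (idm (V e))) (tn (idm (V c)) (b (st e)))"
  by (simp_all add: alA_def beA_def alB_def beB_def)

lemma opA_eq: "opA C I V st b d x = opS piA alA beA x"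
  unfolding opA_def opS_def by (intro prod_eqI ext) (simp_all add: alA_simp beA_simp)
lemma opB_eq: "opB C I V st b d x = opS piB alB beB x"
  unfolding opB_def opS_def by (intro prod_eqI ext) (simp_all add: alB_simp beB_simp)

lemma swpA: "swp piA alA beA"
  unfolding swp_def
proof (intro conjI ballI allI impI)
  fix p assume p: "p \<in> T3"
  obtain a e c where pe: "p = (a,e,c)" by (cases p)
  have I: "a \<in> I" "e \<in> I" "c \<in> I" using p pe by auto
  show "piA p \<in> T3" "piA (piA p) = p" using I pe by auto
  show "alA p (czr (piA p)) = hzr p" "beA p (hzr (piA p)) = czr p"
    using I pe by (simp_all add: alA_simp beA_simp)
  fix g assume "ctyp (piA p) g"
  then show "htyp p (alA p g)" using I pe by (simp add: alA_simp htyp_def ctyp_def)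
next
  fix p f assume p: "p \<in> T3" and "htyp (piA p) f"
  obtain a e c where pe: "p = (a,e,c)" by (cases p)
  have I: "a \<in> I" "e \<in> I" "c \<in> I" using p pe by auto
  show "ctyp p (beA p f)" using I pe \<open>htyp (piA p) f\<close> by (simp add: beA_simp htyp_def ctyp_def)
qed

lemma swpB: "swp piB alB beB"
  unfolding swp_def
proof (intro conjI ballI allI impI)
  fix p assume p: "p \<in> T3"
  obtain a e c where pe: "p = (a,e,c)" by (cases p)
  have I: "a \<in> I" "e \<in> I" "c \<in> I" using p pe by auto
  show "piB p \<in> T3" "piB (piB p) = p" using I pe by auto
  show "alB p (czr (piB p)) = hzr p" "beB p (hzr (piB p)) = czr p"
    using I pe by (simp_all add: alB_simp beB_simp)
  fix g assume "ctyp (piB p) g"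
  then show "htyp p (alB p g)" using I pe by (simp add: alB_simp htyp_def ctyp_def)
next
  fix p f assume p: "p \<in> T3" and "htyp (piB p) f"
  obtain a e c where pe: "p = (a,e,c)" by (cases p)
  have I: "a \<in> I" "e \<in> I" "c \<in> I" using p pe by auto
  show "ctyp p (beB p f)" using I pe \<open>htyp (piB p) f\<close> by (simp add: beB_simp htyp_def ctyp_def)
qed

end

context smcat begin

lemma tn_idm_ot: "tn (idm (ot U W)) f = tn (idm U) (tn (idm W) f)"
  by (simp flip: tn_id)

lemma ic_l: "cd f = dm g \<Longrightarrow> tn (idm W) (cp g f) = cp (tn (idm W) g) (tn (idm W) f)"
  by (metis cp_id_l id_cd id_dm interchange)
lemma ic_r: "cd f = dm g \<Longrightarrow> tn (cp g f) (idm W) = cp (tn g (idm W)) (tn f (idm W))"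
  by (metis cp_id_l id_cd id_dm interchange)

lemma slide1: "tn f g = cp (tn f (idm (cd g))) (tn (idm (dm f)) g)"
proof -
  have "tn (cp f (idm (dm f))) (cp (idm (cd g)) g) = cp (tn f (idm (cd g))) (tn (idm (dm f)) g)"
    by (rule interchange) simp_all
  then show ?thesis by simp
qed
lemma slide2: "tn f g = cp (tn (idm (cd f)) g) (tn f (idm (dm g)))"
proof -
  have "tn (cp (idm (cd f)) f) (cp g (idm (dm g))) = cp (tn (idm (cd f)) g) (tn f (idm (dm g)))"
    by (rule interchange) simp_all
  then show ?thesis by simp
qed

end

context psi begin

lemma A_inv_h: assumes p: "p \<in> T3" and f: "htyp p f" shows "alA p (beA (piA p) f) = f"
proof -
  obtain a e c where pe: "p = (a,e,c)" by (cases p)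
  have I: "a \<in> I" "e \<in> I" "c \<in> I" using p pe by auto
  have fd: "dm f = ot (V a) (V e)" "cd f = V c" using f pe by (auto simp: htyp_def)
  let ?a' = "st a"
  have "alA p (beA (piA p) f) =
    cp (tn (d a) (idm (V c))) (tn (idm (V a)) (cp (tn (idm (V ?a')) f) (tn (b ?a') (idm (V e)))))"
    using I pe by (simp add: alA_simp beA_simp)
  also have "\<dots> = cp (tn (d a) (idm (V c))) (cp (tn (idm (V a)) (tn (idm (V ?a')) f)) (tn (idm (V a)) (tn (b ?a') (idm (V e)))))"
    using I fd by (subst ic_l) simp_all
  also have "\<dots> = cp (cp (tn (d a) (idm (V c))) (tn (idm (V a)) (tn (idm (V ?a')) f))) (tn (idm (V a)) (tn (b ?a') (idm (V e))))"
    using I fd by (subst cp_assoc) simp_all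
  also have "cp (tn (d a) (idm (V c))) (tn (idm (V a)) (tn (idm (V ?a')) f)) = tn (d a) f"
  proof -
    have "tn (cp (d a) (idm (ot (V a) (V ?a')))) (cp (idm (V c)) f) = cp (tn (d a) (idm (V c))) (tn (idm (ot (V a) (V ?a'))) f)"
      by (rule interchange) (use I fd in simp_all)
    then show ?thesis using I fd by (simp add: tn_idm_ot)
  qed
  also have "tn (d a) f = cp f (tn (d a) (idm (ot (V a) (V e))))"
    using slide2[of "d a" f] I fd by simp
  also have "cp (cp f (tn (d a) (idm (ot (V a) (V e))))) (tn (idm (V a)) (tn (b ?a') (idm (V e))))
     = cp f (cp (tn (d a) (idm (ot (V a) (V e)))) (tn (idm (V a)) (tn (b ?a') (idm (V e)))))"
    using I fd by (subst cp_assoc) simp_all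
  also have "cp (tn (d a) (idm (ot (V a) (V e)))) (tn (idm (V a)) (tn (b ?a') (idm (V e)))) = idm (ot (V a) (V e))"
  proof -
    have "tn (cp (tn (d a) (idm (V a))) (tn (idm (V a)) (b ?a'))) (idm (V e)) =
       cp (tn (tn (d a) (idm (V a))) (idm (V e))) (tn (tn (idm (V a)) (b ?a')) (idm (V e)))"
      by (rule ic_r) (use I in simp)
    then show ?thesis using zig2[OF I(1)] by simp
  qed
  finally show ?thesis using fd by simp
qed

lemma A_inv_c: assumes p: "p \<in> T3" and g: "ctyp p g" shows "beA p (alA (piA p) g) = g"
proof -
  obtain a e c where pe: "p = (a,e,c)" by (cases p)
  have I: "a \<in> I" "e \<in> I" "c \<in> I" using p pe by auto
  have gd: "dm g = V c" "cd g = ot (V a) (V e)" using g pe by (auto simp: ctyp_def)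
  let ?a' = "st a"
  have "beA p (alA (piA p) g) =
    cp (tn (idm (V a)) (cp (tn (d ?a') (idm (V e))) (tn (idm (V ?a')) g))) (tn (b a) (idm (V c)))"
    using I pe by (simp add: alA_simp beA_simp)
  also have "\<dots> = cp (cp (tn (idm (V a)) (tn (d ?a') (idm (V e)))) (tn (idm (V a)) (tn (idm (V ?a')) g))) (tn (b a) (idm (V c)))"
    using I gd by (subst ic_l) simp_all
  also have "\<dots> = cp (tn (idm (V a)) (tn (d ?a') (idm (V e)))) (cp (tn (idm (V a)) (tn (idm (V ?a')) g)) (tn (b a) (idm (V c))))"
    using I gd by (subst cp_assoc) simp_all
  also have "cp (tn (idm (V a)) (tn (idm (V ?a')) g)) (tn (b a) (idm (V c))) = tn (b a) g"
  proof -
    have "tn (cp (idm (ot (V a) (V ?a'))) (b a)) (cp g (idm (V c))) = cp (tn (idm (ot (V a) (V ?a'))) g) (tn (b a) (idm (V c)))"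
      by (rule interchange) (use I gd in simp_all)
    then show ?thesis using I gd by (simp add: tn_idm_ot)
  qed
  also have "tn (b a) g = cp (tn (b a) (idm (ot (V a) (V e)))) g"
    using slide1[of "b a" g] I gd by simp
  also have "cp (tn (idm (V a)) (tn (d ?a') (idm (V e)))) (cp (tn (b a) (idm (ot (V a) (V e)))) g)
     = cp (cp (tn (idm (V a)) (tn (d ?a') (idm (V e)))) (tn (b a) (idm (ot (V a) (V e))))) g"
    using I gd by (subst cp_assoc) simp_all
  also have "cp (tn (idm (V a)) (tn (d ?a') (idm (V e)))) (tn (b a) (idm (ot (V a) (V e)))) = idm (ot (V a) (V e))"
  proof -
    have "tn (cp (tn (idm (V a)) (d ?a')) (tn (b a) (idm (V a)))) (idm (V e)) =
       cp (tn (tn (idm (V a)) (d ?a')) (idm (V e))) (tn (tn (b a) (idm (V a))) (idm (V e)))"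
      by (rule ic_r) (use I in simp)
    then show ?thesis using zig1[OF I(1)] I by simp
  qed
  finally show ?thesis using gd by simp
qed

lemma B_inv_h: assumes p: "p \<in> T3" and f: "htyp p f" shows "alB p (beB (piB p) f) = f"
proof -
  obtain a e c where pe: "p = (a,e,c)" by (cases p)
  have I: "a \<in> I" "e \<in> I" "c \<in> I" using p pe by auto
  have fd: "dm f = ot (V a) (V e)" "cd f = V c" using f pe by (auto simp: htyp_def)
  let ?e' = "st e"
  have "alB p (beB (piB p) f) =
    cp (tn (idm (V c)) (d ?e')) (tn (cp (tn f (idm (V ?e'))) (tn (idm (V a)) (b e))) (idm (V e)))"
    using I pe by (simp add: alB_simp beB_simp)
  also have "\<dots> = cp (tn (idm (V c)) (d ?e')) (cp (tn (tn f (idm (V ?e'))) (idm (V e))) (tn (tn (idm (V a)) (b e)) (idm (V e))))"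
    using I fd by (subst ic_r) simp_all
  also have "\<dots> = cp (tn (idm (V c)) (d ?e')) (cp (tn f (idm (ot (V ?e') (V e)))) (tn (idm (V a)) (tn (b e) (idm (V e)))))"
    by simp
  also have "\<dots> = cp (cp (tn (idm (V c)) (d ?e')) (tn f (idm (ot (V ?e') (V e))))) (tn (idm (V a)) (tn (b e) (idm (V e))))"
    using I fd by (subst cp_assoc) simp_all
  also have "cp (tn (idm (V c)) (d ?e')) (tn f (idm (ot (V ?e') (V e)))) = tn f (d ?e')"
  proof -
    have "tn (cp (idm (V c)) f) (cp (d ?e') (idm (ot (V ?e') (V e)))) = cp (tn (idm (V c)) (d ?e')) (tn f (idm (ot (V ?e') (V e))))"
      by (rule interchange) (use I fd in simp_all)
    then show ?thesis using I fd by simp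
  qed
  also have "tn f (d ?e') = cp f (tn (idm (ot (V a) (V e))) (d ?e'))"
    using slide1[of f "d ?e'"] I fd by simp
  also have "cp (cp f (tn (idm (ot (V a) (V e))) (d ?e'))) (tn (idm (V a)) (tn (b e) (idm (V e))))
     = cp f (cp (tn (idm (ot (V a) (V e))) (d ?e')) (tn (idm (V a)) (tn (b e) (idm (V e)))))"
    using I fd by (subst cp_assoc) simp_all
  also have "cp (tn (idm (ot (V a) (V e))) (d ?e')) (tn (idm (V a)) (tn (b e) (idm (V e)))) = idm (ot (V a) (V e))"
  proof -
    have "tn (idm (V a)) (cp (tn (idm (V e)) (d ?e')) (tn (b e) (idm (V e)))) =
       cp (tn (idm (V a)) (tn (idm (V e)) (d ?e'))) (tn (idm (V a)) (tn (b e) (idm (V e))))"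
      by (rule ic_l) (use I in simp)
    then show ?thesis unfolding tn_idm_ot using zig1[OF I(2)] I by simp
  qed
  finally show ?thesis using fd by simp
qed

lemma B_inv_c: assumes p: "p \<in> T3" and g: "ctyp p g" shows "beB p (alB (piB p) g) = g"
proof -
  obtain a e c where pe: "p = (a,e,c)" by (cases p)
  have I: "a \<in> I" "e \<in> I" "c \<in> I" using p pe by auto
  have gd: "dm g = V c" "cd g = ot (V a) (V e)" using g pe by (auto simp: ctyp_def)
  let ?e' = "st e"
  have "beB p (alB (piB p) g) =
    cp (tn (cp (tn (idm (V a)) (d e)) (tn g (idm (V ?e')))) (idm (V e))) (tn (idm (V c)) (b ?e'))"
    using I pe by (simp add: alB_simp beB_simp)
  also have "\<dots> = cp (cp (tn (tn (idm (V a)) (d e)) (idm (V e))) (tn (tn g (idm (V ?e'))) (idm (V e)))) (tn (idm (V c)) (b ?e'))"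
    using I gd by (subst ic_r) simp_all
  also have "\<dots> = cp (cp (tn (idm (V a)) (tn (d e) (idm (V e)))) (tn g (idm (ot (V ?e') (V e))))) (tn (idm (V c)) (b ?e'))"
    by simp
  also have "\<dots> = cp (tn (idm (V a)) (tn (d e) (idm (V e)))) (cp (tn g (idm (ot (V ?e') (V e)))) (tn (idm (V c)) (b ?e')))"
    using I gd by (subst cp_assoc) simp_all
  also have "cp (tn g (idm (ot (V ?e') (V e)))) (tn (idm (V c)) (b ?e')) = tn g (b ?e')"
  proof -
    have "tn (cp g (idm (V c))) (cp (idm (ot (V ?e') (V e))) (b ?e')) = cp (tn g (idm (ot (V ?e') (V e)))) (tn (idm (V c)) (b ?e'))"
      by (rule interchange) (use I gd in simp_all)
    then show ?thesis using I gd by simp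
  qed
  also have "tn g (b ?e') = cp (tn (idm (ot (V a) (V e))) (b ?e')) g"
    using slide2[of g "b ?e'"] I gd by simp
  also have "cp (tn (idm (V a)) (tn (d e) (idm (V e)))) (cp (tn (idm (ot (V a) (V e))) (b ?e')) g)
     = cp (cp (tn (idm (V a)) (tn (d e) (idm (V e)))) (tn (idm (ot (V a) (V e))) (b ?e'))) g"
    using I gd by (subst cp_assoc) simp_all
  also have "cp (tn (idm (V a)) (tn (d e) (idm (V e)))) (tn (idm (ot (V a) (V e))) (b ?e')) = idm (ot (V a) (V e))"
  proof -
    have "tn (idm (V a)) (cp (tn (d e) (idm (V e))) (tn (idm (V e)) (b ?e'))) =
       cp (tn (idm (V a)) (tn (d e) (idm (V e)))) (tn (idm (V a)) (tn (idm (V e)) (b ?e')))"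
      by (rule ic_l) (use I in simp)
    then show ?thesis unfolding tn_idm_ot using zig2[OF I(2)] I by simp
  qed
  finally show ?thesis using gd by simp
qed

end

context psi begin

lemma trace_recover:
  assumes c: "c \<in> I" and W: "dm W = un" "cd W = ot (V c) (V (st c))"
  shows "cp (tn (cp (tn (idm (V c)) (d (st c))) (tn W (idm (V c)))) (idm (V (st c)))) (b c) = W"
proof -
  let ?c' = "st c"
  have "tn (cp (tn (idm (V c)) (d ?c')) (tn W (idm (V c)))) (idm (V ?c')) =
     cp (tn (tn (idm (V c)) (d ?c')) (idm (V ?c'))) (tn (tn W (idm (V c))) (idm (V ?c')))"
    by (rule ic_r) (use c W in simp)
  also have "\<dots> = cp (tn (idm (V c)) (tn (d ?c') (idm (V ?c')))) (tn W (idm (ot (V c) (V ?c'))))"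
    by simp
  finally have e1: "cp (tn (cp (tn (idm (V c)) (d ?c')) (tn W (idm (V c)))) (idm (V ?c'))) (b c) =
     cp (cp (tn (idm (V c)) (tn (d ?c') (idm (V ?c')))) (tn W (idm (ot (V c) (V ?c'))))) (b c)" by simp
  also have "\<dots> = cp (tn (idm (V c)) (tn (d ?c') (idm (V ?c')))) (cp (tn W (idm (ot (V c) (V ?c')))) (b c))"
    using c W by (subst cp_assoc) simp_all
  also have "cp (tn W (idm (ot (V c) (V ?c')))) (b c) = tn W (b c)"
  proof -
    have "tn (cp W (idm un)) (cp (idm (ot (V c) (V ?c'))) (b c)) = cp (tn W (idm (ot (V c) (V ?c')))) (tn (idm un) (b c))"
      by (rule interchange) (use c W in simp_all)
    then show ?thesis using c W by simp
  qed
  also have "tn W (b c) = cp (tn (idm (ot (V c) (V ?c'))) (b c)) W"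
    using slide2[of W "b c"] c W by simp
  also have "cp (tn (idm (V c)) (tn (d ?c') (idm (V ?c')))) (cp (tn (idm (ot (V c) (V ?c'))) (b c)) W) =
      cp (cp (tn (idm (V c)) (tn (d ?c') (idm (V ?c')))) (tn (idm (ot (V c) (V ?c'))) (b c))) W"
    using c W by (subst cp_assoc) simp_all
  also have "cp (tn (idm (V c)) (tn (d ?c') (idm (V ?c')))) (tn (idm (ot (V c) (V ?c'))) (b c)) = idm (ot (V c) (V ?c'))"
  proof -
    have "tn (idm (V c)) (cp (tn (d ?c') (idm (V ?c'))) (tn (idm (V ?c')) (b c))) =
       cp (tn (idm (V c)) (tn (d ?c') (idm (V ?c')))) (tn (idm (V c)) (tn (idm (V ?c')) (b c)))"
      by (rule ic_l) (use c in simp)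
    then show ?thesis unfolding tn_idm_ot using zig2[of ?c'] c by simp
  qed
  finally show ?thesis using W by simp
qed

lemma trace_eq:
  assumes c: "c \<in> I" and W: "dm W = un" "cd W = ot (V c) (V (st c))"
  shows "scal C (V c) (cp (tn (idm (V c)) (d (st c))) (tn W (idm (V c)))) =
         scal C (V (st c)) (cp (tn (d (st c)) (idm (V (st c)))) (tn (idm (V (st c))) W))"
proof -
  let ?c' = "st c"
  let ?u = "cp (tn (idm (V c)) (d ?c')) (tn W (idm (V c)))"
  have ud: "dm ?u = V c" "cd ?u = V c" using c W by simp_all
  define l where "l = scal C (V c) ?u"
  have sl: "scl l" unfolding l_def using scal_scl[OF simpleV[OF c] ud] .
  have ul: "?u = tn l (idm (V c))" unfolding l_def using scal_prop(2)[OF simpleV[OF c] ud] .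
  have "W = cp (tn ?u (idm (V ?c'))) (b c)" using trace_recover[OF c W] by simp
  also have "\<dots> = cp (tn l (idm (ot (V c) (V ?c')))) (b c)"
    by (subst ul) simp
  also have "\<dots> = tn l (b c)" using cp_scl_l[OF sl, of "b c" "idm (ot (V c) (V ?c'))"] c by simp
  finally have Wl: "W = tn l (b c)" .
  have "cp (tn (d ?c') (idm (V ?c'))) (tn (idm (V ?c')) W) = cp (tn (d ?c') (idm (V ?c'))) (tn l (tn (idm (V ?c')) (b c)))"
    using Wl tn_scl_r[OF sl] by simp
  also have "\<dots> = tn l (cp (tn (d ?c') (idm (V ?c'))) (tn (idm (V ?c')) (b c)))"
    by (rule cp_scl_r[OF sl]) (use c in simp)
  also have "cp (tn (d ?c') (idm (V ?c'))) (tn (idm (V ?c')) (b c)) = idm (V ?c')"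
    using zig2[of ?c'] c by simp
  finally have "cp (tn (d ?c') (idm (V ?c'))) (tn (idm (V ?c')) W) = tn l (idm (V ?c'))" .
  then show ?thesis using scal_tn_id[OF simpleV[OF st_I[OF c]] sl] by (simp add: l_def)
qed

definition piX where "piX p = piA (piB (piA p))"
definition alX where "alX p g = alA p (beB (piA p) (alA (piB (piA p)) g))"
definition beX where "beX p f = beA p (alB (piA p) (beA (piB (piA p)) f))"
definition piY where "piY p = piB (piA (piB p))"
definition alY where "alY p g = alB p (beA (piB p) (alB (piA (piB p)) g))"
definition beY where "beY p f = beB p (alA (piB p) (beB (piA (piB p)) f))"

lemma piX_simp: "a \<in> I \<Longrightarrow> e \<in> I \<Longrightarrow> c \<in> I \<Longrightarrow> piX (a,e,c) = (st e, st a, st c)"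
  and piY_simp: "a \<in> I \<Longrightarrow> e \<in> I \<Longrightarrow> c \<in> I \<Longrightarrow> piY (a,e,c) = (st e, st a, st c)"
  by (simp_all add: piX_def piY_def)

lemma beX_form:
  assumes I: "a \<in> I" "e \<in> I" "c \<in> I" and f: "dm f = ot (V (st e)) (V (st a))" "cd f = V (st c)"
  shows "beX (a,e,c) f = cp (tn (idm (ot (V a) (V e))) (d (st c)))
     (tn (cp (tn (idm (V a)) (tn (idm (V e)) f)) (cp (tn (idm (V a)) (tn (b e) (idm (V (st a))))) (b a))) (idm (V c)))"
proof -
  let ?a' = "st a" and ?e' = "st e" and ?c' = "st c"
  let ?g = "cp (tn (idm (V e)) f) (tn (b e) (idm (V ?a')))"
  have gd: "dm ?g = V ?a'" "cd ?g = ot (V e) (V ?c')" using I f by simp_all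
  have "beX (a,e,c) f = cp (tn (idm (V a)) (cp (tn (idm (V e)) (d ?c')) (tn ?g (idm (V c))))) (tn (b a) (idm (V c)))"
    using I by (simp add: beX_def alA_simp beA_simp alB_simp beB_simp)
  also have "\<dots> = cp (cp (tn (idm (V a)) (tn (idm (V e)) (d ?c'))) (tn (idm (V a)) (tn ?g (idm (V c))))) (tn (b a) (idm (V c)))"
    using I gd by (subst ic_l) simp_all
  also have "\<dots> = cp (tn (idm (V a)) (tn (idm (V e)) (d ?c'))) (cp (tn (idm (V a)) (tn ?g (idm (V c)))) (tn (b a) (idm (V c))))"
    using I gd by (subst cp_assoc) simp_all
  also have "cp (tn (idm (V a)) (tn ?g (idm (V c)))) (tn (b a) (idm (V c))) = tn (cp (tn (idm (V a)) ?g) (b a)) (idm (V c))"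
  proof -
    have "tn (cp (tn (idm (V a)) ?g) (b a)) (idm (V c)) = cp (tn (tn (idm (V a)) ?g) (idm (V c))) (tn (b a) (idm (V c)))"
      by (rule ic_r) (use I gd in simp)
    then show ?thesis by simp
  qed
  also have "tn (idm (V a)) ?g = cp (tn (idm (V a)) (tn (idm (V e)) f)) (tn (idm (V a)) (tn (b e) (idm (V ?a'))))"
    using I f by (subst ic_l) simp_all
  also have "cp (cp (tn (idm (V a)) (tn (idm (V e)) f)) (tn (idm (V a)) (tn (b e) (idm (V ?a'))))) (b a) =
     cp (tn (idm (V a)) (tn (idm (V e)) f)) (cp (tn (idm (V a)) (tn (b e) (idm (V ?a')))) (b a))"
    using I f by (subst cp_assoc) simp_all
  finally show ?thesis by (simp add: tn_idm_ot)
qed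

lemma beY_form:
  assumes I: "a \<in> I" "e \<in> I" "c \<in> I" and h: "dm h = ot (V a) (V e)" "cd h = V c"
  shows "beY (st e, st a, st c) h = cp (tn (d (st c)) (idm (ot (V (st e)) (V (st a)))))
     (tn (idm (V (st c))) (cp (tn h (idm (ot (V (st e)) (V (st a))))) (cp (tn (idm (V a)) (tn (b e) (idm (V (st a))))) (b a))))"
proof -
  let ?a' = "st a" and ?e' = "st e" and ?c' = "st c"
  let ?g = "cp (tn h (idm (V ?e'))) (tn (idm (V a)) (b e))"
  have gd: "dm ?g = V a" "cd ?g = ot (V c) (V ?e')" using I h by simp_all
  have "beY (?e', ?a', ?c') h = cp (tn (cp (tn (d ?c') (idm (V ?e'))) (tn (idm (V ?c')) ?g)) (idm (V ?a'))) (tn (idm (V ?c')) (b a))"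
    using I by (simp add: beY_def alA_simp beA_simp alB_simp beB_simp)
  also have "\<dots> = cp (cp (tn (tn (d ?c') (idm (V ?e'))) (idm (V ?a'))) (tn (tn (idm (V ?c')) ?g) (idm (V ?a')))) (tn (idm (V ?c')) (b a))"
    using I gd by (subst ic_r) simp_all
  also have "\<dots> = cp (cp (tn (d ?c') (idm (ot (V ?e') (V ?a')))) (tn (idm (V ?c')) (tn ?g (idm (V ?a'))))) (tn (idm (V ?c')) (b a))"
    by simp
  also have "\<dots> = cp (tn (d ?c') (idm (ot (V ?e') (V ?a')))) (cp (tn (idm (V ?c')) (tn ?g (idm (V ?a')))) (tn (idm (V ?c')) (b a)))"
    using I gd by (subst cp_assoc) simp_all
  also have "cp (tn (idm (V ?c')) (tn ?g (idm (V ?a')))) (tn (idm (V ?c')) (b a)) = tn (idm (V ?c')) (cp (tn ?g (idm (V ?a'))) (b a))"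
    by (rule ic_l[symmetric]) (use I gd in simp)
  also have "tn ?g (idm (V ?a')) = cp (tn h (idm (ot (V ?e') (V ?a')))) (tn (idm (V a)) (tn (b e) (idm (V ?a'))))"
  proof -
    have "tn ?g (idm (V ?a')) = cp (tn (tn h (idm (V ?e'))) (idm (V ?a'))) (tn (tn (idm (V a)) (b e)) (idm (V ?a')))"
      by (rule ic_r) (use I h in simp)
    then show ?thesis by simp
  qed
  also have "cp (cp (tn h (idm (ot (V ?e') (V ?a')))) (tn (idm (V a)) (tn (b e) (idm (V ?a'))))) (b a) =
     cp (tn h (idm (ot (V ?e') (V ?a')))) (cp (tn (idm (V a)) (tn (b e) (idm (V ?a')))) (b a))"
    using I h by (subst cp_assoc) simp_all
  finally show ?thesis .
qed

lemma P1_XY: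
  assumes I: "a \<in> I" "e \<in> I" "c \<in> I"
    and f: "dm f = ot (V (st e)) (V (st a))" "cd f = V (st c)"
    and h: "dm h = ot (V a) (V e)" "cd h = V c"
  shows "scal C (V c) (cp h (beX (a,e,c) f)) = scal C (V (st c)) (cp f (beY (st e, st a, st c) h))"
proof -
  let ?a' = "st a" and ?e' = "st e" and ?c' = "st c"
  define K where "K = cp (tn (idm (V a)) (tn (b e) (idm (V ?a')))) (b a)"
  have Kd: "dm K = un" "cd K = ot (V a) (ot (V e) (ot (V ?e') (V ?a')))" using I by (simp_all add: K_def)
  define F where "F = cp (tn (idm (V a)) (tn (idm (V e)) f)) K"
  have Fd: "dm F = un" "cd F = ot (V a) (ot (V e) (V ?c'))" using I f Kd by (simp_all add: F_def)
  define G where "G = cp (tn h (idm (ot (V ?e') (V ?a')))) K"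
  have Gd: "dm G = un" "cd G = ot (V c) (ot (V ?e') (V ?a'))" using I h Kd by (simp_all add: G_def)
  define W where "W = cp (tn h (idm (V ?c'))) F"
  have Wd: "dm W = un" "cd W = ot (V c) (V ?c')" using I h Fd by (simp_all add: W_def)
  have WG: "W = cp (tn (idm (V c)) f) G"
  proof -
    have "W = cp (cp (tn h (idm (V ?c'))) (tn (idm (ot (V a) (V e))) f)) K"
      unfolding W_def F_def tn_idm_ot using I f h Kd by (subst cp_assoc) simp_all
    also have "cp (tn h (idm (V ?c'))) (tn (idm (ot (V a) (V e))) f) = tn h f"
    proof -
      have "tn (cp h (idm (ot (V a) (V e)))) (cp (idm (V ?c')) f) = cp (tn h (idm (V ?c'))) (tn (idm (ot (V a) (V e))) f)"
        by (rule interchange) (use I f h in simp_all)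
      then show ?thesis using h f by simp
    qed
    also have "tn h f = cp (tn (idm (V c)) f) (tn h (idm (ot (V ?e') (V ?a'))))"
    proof -
      have "tn (cp (idm (V c)) h) (cp f (idm (ot (V ?e') (V ?a')))) = cp (tn (idm (V c)) f) (tn h (idm (ot (V ?e') (V ?a'))))"
        by (rule interchange) (use I f h in simp_all)
      then show ?thesis using h f by simp
    qed
    also have "cp (cp (tn (idm (V c)) f) (tn h (idm (ot (V ?e') (V ?a'))))) K = cp (tn (idm (V c)) f) G"
      unfolding G_def using I f h Kd by (subst cp_assoc) simp_all
    finally show ?thesis .
  qed
  have L: "cp h (beX (a,e,c) f) = cp (tn (idm (V c)) (d ?c')) (tn W (idm (V c)))"
  proof -
    have "cp h (beX (a,e,c) f) = cp h (cp (tn (idm (ot (V a) (V e))) (d ?c')) (tn F (idm (V c))))"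
      using beX_form[OF I f] by (simp add: F_def K_def)
    also have "\<dots> = cp (cp h (tn (idm (ot (V a) (V e))) (d ?c'))) (tn F (idm (V c)))"
      using I h Fd by (subst cp_assoc) simp_all
    also have "cp h (tn (idm (ot (V a) (V e))) (d ?c')) = tn h (d ?c')"
      using slide1[of h "d ?c'"] I h by simp
    also have "tn h (d ?c') = cp (tn (idm (V c)) (d ?c')) (tn h (idm (ot (V ?c') (V c))))"
      using slide2[of h "d ?c'"] I h by simp
    also have "cp (cp (tn (idm (V c)) (d ?c')) (tn h (idm (ot (V ?c') (V c))))) (tn F (idm (V c))) =
       cp (tn (idm (V c)) (d ?c')) (cp (tn h (idm (ot (V ?c') (V c)))) (tn F (idm (V c))))"
      using I h Fd by (subst cp_assoc) simp_all
    also have "cp (tn h (idm (ot (V ?c') (V c)))) (tn F (idm (V c))) = tn W (idm (V c))"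
    proof -
      have "tn (cp (tn h (idm (V ?c'))) F) (idm (V c)) = cp (tn (tn h (idm (V ?c'))) (idm (V c))) (tn F (idm (V c)))"
        by (rule ic_r) (use I h Fd in simp)
      then show ?thesis using I by (simp add: W_def)
    qed
    finally show ?thesis .
  qed
  have R: "cp f (beY (?e', ?a', ?c') h) = cp (tn (d ?c') (idm (V ?c'))) (tn (idm (V ?c')) W)"
  proof -
    have "cp f (beY (?e', ?a', ?c') h) = cp f (cp (tn (d ?c') (idm (ot (V ?e') (V ?a')))) (tn (idm (V ?c')) G))"
      using beY_form[OF I h] by (simp add: G_def K_def)
    also have "\<dots> = cp (cp f (tn (d ?c') (idm (ot (V ?e') (V ?a'))))) (tn (idm (V ?c')) G)"
      using I f Gd by (subst cp_assoc) simp_all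
    also have "cp f (tn (d ?c') (idm (ot (V ?e') (V ?a')))) = tn (d ?c') f"
      using slide2[of "d ?c'" f] I f by simp
    also have "tn (d ?c') f = cp (tn (d ?c') (idm (V ?c'))) (tn (idm (ot (V ?c') (V c))) f)"
      using slide1[of "d ?c'" f] I f by simp
    also have "cp (cp (tn (d ?c') (idm (V ?c'))) (tn (idm (ot (V ?c') (V c))) f)) (tn (idm (V ?c')) G) =
       cp (tn (d ?c') (idm (V ?c'))) (cp (tn (idm (ot (V ?c') (V c))) f) (tn (idm (V ?c')) G))"
      using I f Gd by (subst cp_assoc) simp_all
    also have "cp (tn (idm (ot (V ?c') (V c))) f) (tn (idm (V ?c')) G) = tn (idm (V ?c')) W"
    proof -
      have "tn (idm (V ?c')) (cp (tn (idm (V c)) f) G) = cp (tn (idm (V ?c')) (tn (idm (V c)) f)) (tn (idm (V ?c')) G)"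
        by (rule ic_l) (use I f Gd in simp)
      then show ?thesis using WG by (simp add: tn_idm_ot)
    qed
    finally show ?thesis .
  qed
  show ?thesis unfolding L R using trace_eq[OF I(3) Wd] .
qed

end

context psi begin

lemma opS_comp3:
  assumes p1: "\<And>p. p \<in> T3 \<Longrightarrow> p1 p \<in> T3" and p2: "\<And>p. p \<in> T3 \<Longrightarrow> p2 p \<in> T3"
  shows "opS p1 a1 b1 (opS p2 a2 b2 (opS p3 a3 b3 x)) =
    opS (\<lambda>p. p3 (p2 (p1 p))) (\<lambda>p g. a1 p (b2 (p1 p) (a3 (p2 (p1 p)) g))) (\<lambda>p f. b1 p (a2 (p1 p) (b3 (p2 (p1 p)) f))) x"
proof -
  have h: "\<And>a e c. a \<in> I \<Longrightarrow> e \<in> I \<Longrightarrow> c \<in> I \<Longrightarrow> (a,e,c) \<in> T3" by simp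
  show ?thesis
    unfolding opS_def[of p1 a1 b1] opS_def[of "\<lambda>p. p3 (p2 (p1 p))"]
    apply (intro prod_eqI ext)
     apply (simp_all only: fst_conv snd_conv)
    using opS_hx opS_cx p1 p2 h by auto
qed

lemma opS_cong_pi: assumes "\<And>p. p \<in> T3 \<Longrightarrow> pi p = pi' p" shows "opS pi al be x = opS pi' al be x"
  unfolding opS_def using assms by (intro prod_eqI ext) auto

definition invo :: "('i \<times> 'i \<times> 'i \<Rightarrow> 'i \<times> 'i \<times> 'i) \<Rightarrow> ('i \<times> 'i \<times> 'i \<Rightarrow> 'm \<Rightarrow> 'm) \<Rightarrow> ('i \<times> 'i \<times> 'i \<Rightarrow> 'm \<Rightarrow> 'm) \<Rightarrow> bool" where
  "invo pi al be \<longleftrightarrow> (\<forall>p\<in>T3. \<forall>f. htyp p f \<longrightarrow> al p (be (pi p) f) = f) \<and> (\<forall>p\<in>T3. \<forall>g. ctyp p g \<longrightarrow> be p (al (pi p) g) = g)"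

lemma opS_invo: assumes sw: "swp pi al be" and iv: "invo pi al be" and x: "x \<in> H"
  shows "opS pi al be (opS pi al be x) = x"
proof (rule H_eqI[OF swp_H[OF sw swp_H[OF sw x]] x], intro ballI conjI)
  fix p assume p: "p \<in> T3"
  have pp: "pi p \<in> T3" and ppp: "pi (pi p) = p" using swp_pi[OF sw p] swp_pipi[OF sw p] by auto
  show "hx (opS pi al be (opS pi al be x)) p = hx x p"
    unfolding opS_hx[OF p] opS_cx[OF pp] ppp using iv H_htyp[OF x p] p unfolding invo_def by blast
  show "cx (opS pi al be (opS pi al be x)) p = cx x p"
    unfolding opS_cx[OF p] opS_hx[OF pp] ppp using iv H_ctyp[OF x p] p unfolding invo_def by blast
qed

lemma opS_transpose1:
  assumes sw: "swp pi al be" and sw': "swp pi al' be'" and iv: "invo pi al be" and iv': "invo pi al' be'"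
  and P1: "\<forall>p\<in>T3. \<forall>f h. htyp (pi p) f \<longrightarrow> htyp p h \<longrightarrow> sc p (cp h (be p f)) = sc (pi p) (cp f (be' (pi p) h))"
  and x: "x \<in> H" and y: "y \<in> H"
  shows "fm (opS pi al be x) y = fm x (opS pi al' be' y)"
proof (rule opS_transpose[OF sw sw' P1 _ x y], intro ballI allI impI)
  fix p g g' assume p: "p \<in> T3" and g: "ctyp (pi p) g" and g': "ctyp p g'"
  have pp: "pi p \<in> T3" and ppp: "pi (pi p) = p" using swp_pi[OF sw p] swp_pipi[OF sw p] by auto
  define f where "f = al p g"
  define h where "h = al' (pi p) g'"
  have fh: "htyp p f" using sw p g unfolding swp_def f_def by blast
  have hh: "htyp (pi p) h" using sw' pp g' ppp unfolding swp_def h_def by metis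
  have gf: "be (pi p) f = g" using iv pp g ppp unfolding invo_def f_def by metis
  have gh: "be' p h = g'" using iv' p g' unfolding invo_def h_def by blast
  have "sc (pi p) (cp h (be (pi p) f)) = sc (pi (pi p)) (cp f (be' (pi (pi p)) h))"
    using P1 pp hh fh ppp by metis
  then show "sc p (cp (al p g) g') = sc (pi p) (cp (al' (pi p) g') g)"
    using gf gh ppp by (simp add: f_def h_def)
qed

lemma swp_comp3:
  assumes s1: "swp p1 a1 b1" and s2: "swp p2 a2 b2"
  shows "swp (\<lambda>p. p1 (p2 (p1 p))) (\<lambda>p g. a1 p (b2 (p1 p) (a1 (p2 (p1 p)) g))) (\<lambda>p f. b1 p (a2 (p1 p) (b1 (p2 (p1 p)) f)))"
proof -
  have T1: "\<And>p. p \<in> T3 \<Longrightarrow> p1 p \<in> T3" "\<And>p. p \<in> T3 \<Longrightarrow> p1 (p1 p) = p"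
   and T2: "\<And>p. p \<in> T3 \<Longrightarrow> p2 p \<in> T3" "\<And>p. p \<in> T3 \<Longrightarrow> p2 (p2 p) = p"
    using s1 s2 unfolding swp_def by auto
  have a1: "\<And>p g. p \<in> T3 \<Longrightarrow> ctyp (p1 p) g \<Longrightarrow> htyp p (a1 p g)"
   and b1: "\<And>p f. p \<in> T3 \<Longrightarrow> htyp (p1 p) f \<Longrightarrow> ctyp p (b1 p f)"
   and a2: "\<And>p g. p \<in> T3 \<Longrightarrow> ctyp (p2 p) g \<Longrightarrow> htyp p (a2 p g)"
   and b2: "\<And>p f. p \<in> T3 \<Longrightarrow> htyp (p2 p) f \<Longrightarrow> ctyp p (b2 p f)"
   and z1: "\<And>p. p \<in> T3 \<Longrightarrow> a1 p (czr (p1 p)) = hzr p \<and> b1 p (hzr (p1 p)) = czr p"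
   and z2: "\<And>p. p \<in> T3 \<Longrightarrow> a2 p (czr (p2 p)) = hzr p \<and> b2 p (hzr (p2 p)) = czr p"
    using s1 s2 unfolding swp_def by blast+
  show ?thesis unfolding swp_def
  proof (intro conjI ballI allI impI)
    fix p assume p: "p \<in> T3"
    have q1: "p1 p \<in> T3" and q2: "p2 (p1 p) \<in> T3" and q3: "p1 (p2 (p1 p)) \<in> T3" using T1 T2 p by auto
    show "p1 (p2 (p1 p)) \<in> T3" using q3 .
    show "p1 (p2 (p1 (p1 (p2 (p1 p))))) = p" using T1 T2 p q1 q2 by simp
    show "a1 p (b2 (p1 p) (a1 (p2 (p1 p)) (czr (p1 (p2 (p1 p)))))) = hzr p"
      using z1[OF q2] z2[OF q1] z1[OF p] T2(2)[OF q1] by simp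
    show "b1 p (a2 (p1 p) (b1 (p2 (p1 p)) (hzr (p1 (p2 (p1 p)))))) = czr p"
      using z1[OF q2] z2[OF q1] z1[OF p] T2(2)[OF q1] by simp
  next
    fix p g assume p: "p \<in> T3" and g: "ctyp (p1 (p2 (p1 p))) g"
    have q1: "p1 p \<in> T3" and q2: "p2 (p1 p) \<in> T3" using T1 T2 p by auto
    have "htyp (p2 (p1 p)) (a1 (p2 (p1 p)) g)" using a1[OF q2 g] .
    then have "ctyp (p1 p) (b2 (p1 p) (a1 (p2 (p1 p)) g))" using b2[OF q1] by simp
    then show "htyp p (a1 p (b2 (p1 p) (a1 (p2 (p1 p)) g)))" using a1[OF p] by simp
  next
    fix p f assume p: "p \<in> T3" and f: "htyp (p1 (p2 (p1 p))) f"
    have q1: "p1 p \<in> T3" and q2: "p2 (p1 p) \<in> T3" using T1 T2 p by auto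
    have "ctyp (p2 (p1 p)) (b1 (p2 (p1 p)) f)" using b1[OF q2 f] .
    then have "htyp (p1 p) (a2 (p1 p) (b1 (p2 (p1 p)) f))" using a2[OF q1] by simp
    then show "ctyp p (b1 p (a2 (p1 p) (b1 (p2 (p1 p)) f)))" using b1[OF p] by simp
  qed
qed

lemma invo_comp3:
  assumes s1: "swp p1 a1 b1" and s2: "swp p2 a2 b2" and i1: "invo p1 a1 b1" and i2: "invo p2 a2 b2"
  shows "invo (\<lambda>p. p1 (p2 (p1 p))) (\<lambda>p g. a1 p (b2 (p1 p) (a1 (p2 (p1 p)) g))) (\<lambda>p f. b1 p (a2 (p1 p) (b1 (p2 (p1 p)) f)))"
proof -
  have T1: "\<And>p. p \<in> T3 \<Longrightarrow> p1 p \<in> T3" "\<And>p. p \<in> T3 \<Longrightarrow> p1 (p1 p) = p"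
   and T2: "\<And>p. p \<in> T3 \<Longrightarrow> p2 p \<in> T3" "\<And>p. p \<in> T3 \<Longrightarrow> p2 (p2 p) = p"
    using s1 s2 unfolding swp_def by auto
  have a1: "\<And>p g. p \<in> T3 \<Longrightarrow> ctyp (p1 p) g \<Longrightarrow> htyp p (a1 p g)"
   and b1: "\<And>p f. p \<in> T3 \<Longrightarrow> htyp (p1 p) f \<Longrightarrow> ctyp p (b1 p f)"
   and a2: "\<And>p g. p \<in> T3 \<Longrightarrow> ctyp (p2 p) g \<Longrightarrow> htyp p (a2 p g)"
   and b2: "\<And>p f. p \<in> T3 \<Longrightarrow> htyp (p2 p) f \<Longrightarrow> ctyp p (b2 p f)"
    using s1 s2 unfolding swp_def by blast+
  have i1h: "\<And>p f. p \<in> T3 \<Longrightarrow> htyp p f \<Longrightarrow> a1 p (b1 (p1 p) f) = f"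
   and i1c: "\<And>p g. p \<in> T3 \<Longrightarrow> ctyp p g \<Longrightarrow> b1 p (a1 (p1 p) g) = g"
   and i2h: "\<And>p f. p \<in> T3 \<Longrightarrow> htyp p f \<Longrightarrow> a2 p (b2 (p2 p) f) = f"
   and i2c: "\<And>p g. p \<in> T3 \<Longrightarrow> ctyp p g \<Longrightarrow> b2 p (a2 (p2 p) g) = g"
    using i1 i2 unfolding invo_def by blast+
  show ?thesis unfolding invo_def
  proof (intro conjI ballI allI impI)
    fix p f assume p: "p \<in> T3" and f: "htyp p f"
    have q1: "p1 p \<in> T3" and q2: "p2 (p1 p) \<in> T3" using T1 T2 p by auto
    let ?q = "p1 (p2 (p1 p))"
    have e1: "p1 ?q = p2 (p1 p)" using T1 q2 by simp
    have e2: "p2 (p1 ?q) = p1 p" using e1 T2 q1 by simp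
    have f1: "ctyp (p1 p) (b1 (p1 p) f)" using b1[OF q1] f T1 p by simp
    have f2: "htyp (p2 (p1 p)) (a2 (p2 (p1 p)) (b1 (p1 p) f))" using a2[OF q2] f1 T2 q1 by simp
    have "a1 (p2 (p1 p)) (b1 ?q (a2 (p2 (p1 p)) (b1 (p1 p) f))) = a2 (p2 (p1 p)) (b1 (p1 p) f)"
      using i1h[OF q2 f2] by simp
    moreover have "b2 (p1 p) (a2 (p2 (p1 p)) (b1 (p1 p) f)) = b1 (p1 p) f" using i2c[OF q1 f1] .
    moreover have "a1 p (b1 (p1 p) f) = f" using i1h[OF p f] .
    ultimately show "a1 p (b2 (p1 p) (a1 (p2 (p1 p)) (b1 ?q (a2 (p1 ?q) (b1 (p2 (p1 ?q)) f))))) = f"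
      using e1 e2 by simp
  next
    fix p g assume p: "p \<in> T3" and g: "ctyp p g"
    have q1: "p1 p \<in> T3" and q2: "p2 (p1 p) \<in> T3" using T1 T2 p by auto
    let ?q = "p1 (p2 (p1 p))"
    have e1: "p1 ?q = p2 (p1 p)" using T1 q2 by simp
    have e2: "p2 (p1 ?q) = p1 p" using e1 T2 q1 by simp
    have g1: "htyp (p1 p) (a1 (p1 p) g)" using a1[OF q1] g T1 p by simp
    have g2: "ctyp (p2 (p1 p)) (b2 (p2 (p1 p)) (a1 (p1 p) g))" using b2[OF q2] g1 T2 q1 by simp
    have "b1 (p2 (p1 p)) (a1 ?q (b2 (p2 (p1 p)) (a1 (p1 p) g))) = b2 (p2 (p1 p)) (a1 (p1 p) g)"
      using i1c[OF q2 g2] by simp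
    moreover have "a2 (p1 p) (b2 (p2 (p1 p)) (a1 (p1 p) g)) = a1 (p1 p) g" using i2h[OF q1 g1] .
    moreover have "b1 p (a1 (p1 p) g) = g" using i1c[OF p g] .
    ultimately show "b1 p (a2 (p1 p) (b1 (p2 (p1 p)) (a1 ?q (b2 (p1 ?q) (a1 (p2 (p1 ?q)) g))))) = g"
      using e1 e2 by simp
  qed
qed

lemma invoA: "invo piA alA beA" unfolding invo_def using A_inv_h A_inv_c by blast
lemma invoB: "invo piB alB beB" unfolding invo_def using B_inv_h B_inv_c by blast

lemma X_def': "piX = (\<lambda>p. piA (piB (piA p)))" "alX = (\<lambda>p g. alA p (beB (piA p) (alA (piB (piA p)) g)))"
   "beX = (\<lambda>p f. beA p (alB (piA p) (beA (piB (piA p)) f)))"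
  by (auto simp: piX_def alX_def beX_def intro!: ext)
lemma Y_def': "piY = (\<lambda>p. piB (piA (piB p)))" "alY = (\<lambda>p g. alB p (beA (piB p) (alB (piA (piB p)) g)))"
   "beY = (\<lambda>p f. beB p (alA (piB p) (beB (piA (piB p)) f)))"
  by (auto simp: piY_def alY_def beY_def intro!: ext)

lemma swpX: "swp piX alX beX" unfolding X_def' by (rule swp_comp3[OF swpA swpB])
lemma swpY: "swp piY alY beY" unfolding Y_def' by (rule swp_comp3[OF swpB swpA])
lemma invoX: "invo piX alX beX" unfolding X_def' by (rule invo_comp3[OF swpA swpB invoA invoB])
lemma invoY: "invo piY alY beY" unfolding Y_def' by (rule invo_comp3[OF swpB swpA invoB invoA])

lemma piXY: assumes "p \<in> T3" shows "piY p = piX p"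
proof -
  obtain a e c where pe: "p = (a,e,c)" by (cases p)
  then have "a \<in> I" "e \<in> I" "c \<in> I" using assms by auto
  then show ?thesis using pe by (simp add: piX_simp piY_simp)
qed

lemma swp_cong_pi: assumes sw: "swp pi al be" and e: "\<And>p. p \<in> T3 \<Longrightarrow> pi p = pi' p" shows "swp pi' al be"
proof -
  have A: "\<forall>p\<in>T3. pi p \<in> T3 \<and> pi (pi p) = p" and B: "\<forall>p\<in>T3. \<forall>g. ctyp (pi p) g \<longrightarrow> htyp p (al p g)"
    and C: "\<forall>p\<in>T3. \<forall>f. htyp (pi p) f \<longrightarrow> ctyp p (be p f)"
    and D: "\<forall>p\<in>T3. al p (czr (pi p)) = hzr p \<and> be p (hzr (pi p)) = czr p"
    using sw unfolding swp_def by blast+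
  have A': "\<forall>p\<in>T3. pi' p \<in> T3 \<and> pi' (pi' p) = p"
  proof
    fix p assume p: "p \<in> T3"
    then have "pi' p = pi p" using e by simp
    moreover have "pi p \<in> T3" using A p by blast
    moreover have "pi' (pi p) = pi (pi p)" using e[OF \<open>pi p \<in> T3\<close>] by simp
    ultimately show "pi' p \<in> T3 \<and> pi' (pi' p) = p" using A p by metis
  qed
  have B': "\<forall>p\<in>T3. \<forall>g. ctyp (pi' p) g \<longrightarrow> htyp p (al p g)" using B e by simp
  have C': "\<forall>p\<in>T3. \<forall>f. htyp (pi' p) f \<longrightarrow> ctyp p (be p f)" using C e by simp
  have D': "\<forall>p\<in>T3. al p (czr (pi' p)) = hzr p \<and> be p (hzr (pi' p)) = czr p" using D e by simp
  show ?thesis unfolding swp_def using A' B' C' D' by blast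
qed

lemma invo_cong_pi: assumes iv: "invo pi al be" and e: "\<And>p. p \<in> T3 \<Longrightarrow> pi p = pi' p" shows "invo pi' al be"
proof -
  have "\<forall>p\<in>T3. \<forall>f. htyp p f \<longrightarrow> al p (be (pi p) f) = f" "\<forall>p\<in>T3. \<forall>g. ctyp p g \<longrightarrow> be p (al (pi p) g) = g"
    using iv unfolding invo_def by blast+
  then show ?thesis unfolding invo_def using e by simp
qed

lemma swpY': "swp piX alY beY" using swp_cong_pi[OF swpY piXY] .
lemma invoY': "invo piX alY beY" using invo_cong_pi[OF invoY piXY] .

lemma P1X: "\<forall>p\<in>T3. \<forall>f h. htyp (piX p) f \<longrightarrow> htyp p h \<longrightarrow> sc p (cp h (beX p f)) = sc (piX p) (cp f (beY (piX p) h))"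
proof (intro ballI allI impI)
  fix p f h assume p: "p \<in> T3" and f: "htyp (piX p) f" and h: "htyp p h"
  obtain a e c where pe: "p = (a,e,c)" by (cases p)
  have I: "a \<in> I" "e \<in> I" "c \<in> I" using p pe by auto
  show "sc p (cp h (beX p f)) = sc (piX p) (cp f (beY (piX p) h))"
    using P1_XY[OF I] f h I pe by (simp add: piX_simp htyp_def)
qed

lemma X_transpose: "x \<in> H \<Longrightarrow> y \<in> H \<Longrightarrow> fm (opS piX alX beX x) y = fm x (opS piX alY beY y)"
  by (rule opS_transpose1[OF swpX swpY' invoX invoY' P1X])

end

context smcat begin

definition lsum :: "'o \<Rightarrow> 'o \<Rightarrow> ('a \<Rightarrow> 'm) \<Rightarrow> 'a list \<Rightarrow> 'm" where
  "lsum U U' F ts = foldr (\<lambda>t acc. ad (F t) acc) ts (zr U U')"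

lemma lsum_Nil[simp]: "lsum U U' F [] = zr U U'" and lsum_Cons[simp]: "lsum U U' F (t # ts) = ad (F t) (lsum U U' F ts)"
  by (simp_all add: lsum_def)

lemma lsum_typ: "(\<forall>t\<in>set ts. dm (F t) = U \<and> cd (F t) = U') \<Longrightarrow> dm (lsum U U' F ts) = U \<and> cd (lsum U U' F ts) = U'"
  by (induction ts) auto

lemma lsum_cong: "(\<forall>t\<in>set ts. F t = G t) \<Longrightarrow> lsum U U' F ts = lsum U U' G ts"
  by (induction ts) auto

lemma lsum_zero: "(\<forall>t\<in>set ts. F t = zr U U') \<Longrightarrow> lsum U U' F ts = zr U U'"
  by (induction ts) auto

lemma lsum_cp_l: assumes "\<forall>t\<in>set ts. dm (F t) = U \<and> cd (F t) = U'" "dm g = U'"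
  shows "cp g (lsum U U' F ts) = lsum U (cd g) (\<lambda>t. cp g (F t)) ts"
  using assms
proof (induction ts)
  case Nil then show ?case by simp
next
  case (Cons t ts)
  have "cp g (ad (F t) (lsum U U' F ts)) = ad (cp g (F t)) (cp g (lsum U U' F ts))"
    by (rule cp_ad_r) (use Cons.prems lsum_typ[of ts F U U'] in simp_all)
  then show ?case using Cons by simp
qed

lemma lsum_cp_r: assumes "\<forall>t\<in>set ts. dm (F t) = U \<and> cd (F t) = U'" "cd f = U"
  shows "cp (lsum U U' F ts) f = lsum (dm f) U' (\<lambda>t. cp (F t) f) ts"
  using assms
proof (induction ts)
  case Nil then show ?case by simp
next
  case (Cons t ts)
  have "cp (ad (F t) (lsum U U' F ts)) f = ad (cp (F t) f) (cp (lsum U U' F ts) f)"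
    by (rule cp_ad_l) (use Cons.prems lsum_typ[of ts F U U'] in simp_all)
  then show ?case using Cons by simp
qed

lemma lsum_lin: assumes "\<forall>t\<in>set ts. dm (F t) = U \<and> cd (F t) = U'"
  and add: "\<And>f f'. dm f = U \<Longrightarrow> cd f = U' \<Longrightarrow> dm f' = U \<Longrightarrow> cd f' = U' \<Longrightarrow> phi (ad f f') = ad (phi f) (phi f')"
  and z: "phi (zr U U') = zr W W'"
  shows "phi (lsum U U' F ts) = lsum W W' (\<lambda>t. phi (F t)) ts"
  using assms(1)
proof (induction ts)
  case Nil then show ?case using z by simp
next
  case (Cons t ts)
  then show ?case using add lsum_typ[of ts F U U'] by simp
qed

lemma lsum_nz: "lsum U U' F ts \<noteq> zr U U' \<Longrightarrow> \<exists>t\<in>set ts. F t \<noteq> zr U U'"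
  using lsum_zero[of ts F U U'] by metis

lemma foldr_lsum: "foldr (\<lambda>(k,x,y) acc. ad (cp x y) acc) ts z = foldr (\<lambda>t acc. ad ((\<lambda>(k,x,y). cp x y) t) acc) ts z"
proof (induction ts)
  case Nil then show ?case by simp
next
  case (Cons t ts)
  obtain k x y where "t = (k,x,y)" by (cases t)
  then show ?case using Cons by simp
qed

end

context psi begin

lemma cond4': assumes "i \<in> I" "j \<in> I" "k \<in> I" "ctyp (i,j,k) g" "g \<noteq> czr (i,j,k)"
  obtains ts where "\<forall>(k,x,y)\<in>set ts. k \<in> I \<and> dm x = V k \<and> cd x = ot (V i) (V j) \<and> dm y = ot (V i) (V j) \<and> cd y = V k"
    "lsum (ot (V i) (V j)) (ot (V i) (V j)) (\<lambda>(k,x,y). cp x y) ts = idm (ot (V i) (V j))"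
proof -
  have "\<exists>ts. (\<forall>(k,x,y)\<in>set ts. k \<in> I \<and> dm x = V k \<and> cd x = ot (V i) (V j) \<and> dm y = ot (V i) (V j) \<and> cd y = V k) \<and>
            foldr (\<lambda>(k,x,y) acc. ad (cp x y) acc) ts (zr (ot (V i) (V j)) (ot (V i) (V j))) = idm (ot (V i) (V j))"
    by (rule cond4[OF assms(1,2,3)]) (use assms(4,5) in \<open>simp_all add: ctyp_def\<close>)
  then obtain ts where A: "\<forall>(k,x,y)\<in>set ts. k \<in> I \<and> dm x = V k \<and> cd x = ot (V i) (V j) \<and> dm y = ot (V i) (V j) \<and> cd y = V k"
    and B: "foldr (\<lambda>(k,x,y) acc. ad (cp x y) acc) ts (zr (ot (V i) (V j)) (ot (V i) (V j))) = idm (ot (V i) (V j))"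
    by blast
  have "lsum (ot (V i) (V j)) (ot (V i) (V j)) (\<lambda>(k,x,y). cp x y) ts = idm (ot (V i) (V j))"
    unfolding lsum_def using B foldr_lsum[of ts] by simp
  then show thesis using that A by blast
qed

definition good :: "'i \<Rightarrow> 'i \<Rightarrow> bool" where
  "good i j \<longleftrightarrow> (\<exists>k\<in>I. \<exists>g. ctyp (i,j,k) g \<and> g \<noteq> czr (i,j,k))"

definition dts :: "'i \<Rightarrow> 'i \<Rightarrow> ('i \<times> 'm \<times> 'm) list" where
  "dts i j = (SOME ts. (\<forall>(k,x,y)\<in>set ts. k \<in> I \<and> dm x = V k \<and> cd x = ot (V i) (V j) \<and> dm y = ot (V i) (V j) \<and> cd y = V k) \<and>
    lsum (ot (V i) (V j)) (ot (V i) (V j)) (\<lambda>(k,x,y). cp x y) ts = idm (ot (V i) (V j)))"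

lemma dts: assumes "i \<in> I" "j \<in> I" "good i j"
  shows "\<forall>(k,x,y)\<in>set (dts i j). k \<in> I \<and> dm x = V k \<and> cd x = ot (V i) (V j) \<and> dm y = ot (V i) (V j) \<and> cd y = V k"
    "lsum (ot (V i) (V j)) (ot (V i) (V j)) (\<lambda>(k,x,y). cp x y) (dts i j) = idm (ot (V i) (V j))"
proof -
  obtain k g where "k \<in> I" "ctyp (i,j,k) g" "g \<noteq> czr (i,j,k)" using assms(3) unfolding good_def by blast
  then obtain ts where "\<forall>(k,x,y)\<in>set ts. k \<in> I \<and> dm x = V k \<and> cd x = ot (V i) (V j) \<and> dm y = ot (V i) (V j) \<and> cd y = V k"
    "lsum (ot (V i) (V j)) (ot (V i) (V j)) (\<lambda>(k,x,y). cp x y) ts = idm (ot (V i) (V j))"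
    using cond4'[OF assms(1,2)] by blast
  then have "\<exists>ts. (\<forall>(k,x,y)\<in>set ts. k \<in> I \<and> dm x = V k \<and> cd x = ot (V i) (V j) \<and> dm y = ot (V i) (V j) \<and> cd y = V k) \<and>
    lsum (ot (V i) (V j)) (ot (V i) (V j)) (\<lambda>(k,x,y). cp x y) ts = idm (ot (V i) (V j))" by blast
  from someI_ex[OF this] show
    "\<forall>(k,x,y)\<in>set (dts i j). k \<in> I \<and> dm x = V k \<and> cd x = ot (V i) (V j) \<and> dm y = ot (V i) (V j) \<and> cd y = V k"
    "lsum (ot (V i) (V j)) (ot (V i) (V j)) (\<lambda>(k,x,y). cp x y) (dts i j) = idm (ot (V i) (V j))"
    unfolding dts_def by blast+
qed

lemma decomp_h: assumes I: "i \<in> I" "j \<in> I" "k \<in> I" "good i j" and f: "htyp (i,j,k) f"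
  shows "f = lsum (ot (V i) (V j)) (V k) (\<lambda>(k',x,y). if k' = k then tn (scal C (V k) (cp f x)) y else zr (ot (V i) (V j)) (V k)) (dts i j)"
proof -
  let ?O = "ot (V i) (V j)"
  have fd: "dm f = ?O" "cd f = V k" using f by (auto simp: htyp_def)
  note D = dts[OF I(1,2,4)]
  have ty: "\<forall>t\<in>set (dts i j). dm ((\<lambda>(k,x,y). cp x y) t) = ?O \<and> cd ((\<lambda>(k,x,y). cp x y) t) = ?O"
    using D(1) by auto
  have "f = cp f (idm ?O)" using fd by simp
  also have "\<dots> = cp f (lsum ?O ?O (\<lambda>(k,x,y). cp x y) (dts i j))" using D(2) by simp
  also have "\<dots> = lsum ?O (V k) (\<lambda>t. cp f ((\<lambda>(k,x,y). cp x y) t)) (dts i j)"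
    using lsum_cp_l[OF ty] fd by simp
  also have "\<dots> = lsum ?O (V k) (\<lambda>(k',x,y). if k' = k then tn (scal C (V k) (cp f x)) y else zr ?O (V k)) (dts i j)"
  proof (rule lsum_cong, rule ballI)
    fix t assume t: "t \<in> set (dts i j)"
    obtain k' x y where te: "t = (k',x,y)" by (cases t)
    have tt: "k' \<in> I" "dm x = V k'" "cd x = ?O" "dm y = ?O" "cd y = V k'" using D(1) t te by auto
    show "cp f ((\<lambda>(k,x,y). cp x y) t) = (\<lambda>(k',x,y). if k' = k then tn (scal C (V k) (cp f x)) y else zr ?O (V k)) t"
    proof (cases "k' = k")
      case True
      have "cp f x = tn (scal C (V k) (cp f x)) (idm (V k))"
        by (rule scal_prop(2)[OF simpleV[OF I(3)]]) (use tt fd True in simp_all)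
      then have "cp f (cp x y) = cp (tn (scal C (V k) (cp f x)) (idm (V k))) y"
        using tt fd by (simp add: cp_assoc)
      also have "\<dots> = tn (scal C (V k) (cp f x)) y"
        using cp_scl_l[of "scal C (V k) (cp f x)" y "idm (V k)"] scal_scl[OF simpleV[OF I(3)], of "cp f x"] tt fd True by simp
      finally show ?thesis using te True by simp
    next
      case False
      have "cp f x = zr (V k') (V k)" using orth[OF tt(1) I(3) False] tt fd by simp
      then have "cp f (cp x y) = zr ?O (V k)" using tt fd by (simp add: cp_assoc)
      then show ?thesis using te False by simp
    qed
  qed
  finally show ?thesis .
qed

lemma decomp_c: assumes I: "i \<in> I" "j \<in> I" "k \<in> I" "good i j" and g: "ctyp (i,j,k) g"
  shows "g = lsum (V k) (ot (V i) (V j)) (\<lambda>(k',x,y). if k' = k then tn (scal C (V k) (cp y g)) x else zr (V k) (ot (V i) (V j))) (dts i j)"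
proof -
  let ?O = "ot (V i) (V j)"
  have gd: "dm g = V k" "cd g = ?O" using g by (auto simp: ctyp_def)
  note D = dts[OF I(1,2,4)]
  have ty: "\<forall>t\<in>set (dts i j). dm ((\<lambda>(k,x,y). cp x y) t) = ?O \<and> cd ((\<lambda>(k,x,y). cp x y) t) = ?O"
    using D(1) by auto
  have "g = cp (idm ?O) g" using gd by simp
  also have "\<dots> = cp (lsum ?O ?O (\<lambda>(k,x,y). cp x y) (dts i j)) g" using D(2) by simp
  also have "\<dots> = lsum (V k) ?O (\<lambda>t. cp ((\<lambda>(k,x,y). cp x y) t) g) (dts i j)"
    using lsum_cp_r[OF ty] gd by simp
  also have "\<dots> = lsum (V k) ?O (\<lambda>(k',x,y). if k' = k then tn (scal C (V k) (cp y g)) x else zr (V k) ?O) (dts i j)"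
  proof (rule lsum_cong, rule ballI)
    fix t assume t: "t \<in> set (dts i j)"
    obtain k' x y where te: "t = (k',x,y)" by (cases t)
    have tt: "k' \<in> I" "dm x = V k'" "cd x = ?O" "dm y = ?O" "cd y = V k'" using D(1) t te by auto
    show "cp ((\<lambda>(k,x,y). cp x y) t) g = (\<lambda>(k',x,y). if k' = k then tn (scal C (V k) (cp y g)) x else zr (V k) ?O) t"
    proof (cases "k' = k")
      case True
      have "cp y g = tn (scal C (V k) (cp y g)) (idm (V k))"
        by (rule scal_prop(2)[OF simpleV[OF I(3)]]) (use tt gd True in simp_all)
      then have "cp (cp x y) g = cp x (tn (scal C (V k) (cp y g)) (idm (V k)))"
        using tt gd by (simp add: cp_assoc)
      also have "\<dots> = tn (scal C (V k) (cp y g)) x"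
        using cp_scl_r[of "scal C (V k) (cp y g)" "idm (V k)" x] scal_scl[OF simpleV[OF I(3)], of "cp y g"] tt gd True by simp
      finally show ?thesis using te True by simp
    next
      case False
      have "cp y g = zr (V k) (V k')" using orth[OF I(3) tt(1)] False tt gd by simp
      then have "cp (cp x y) g = zr (V k) ?O" using tt gd by (simp add: cp_assoc[symmetric])
      then show ?thesis using te False by simp
    qed
  qed
  finally show ?thesis .
qed

lemma not_good_c: "\<not> good i j \<Longrightarrow> k \<in> I \<Longrightarrow> ctyp (i,j,k) g \<Longrightarrow> g = czr (i,j,k)"
  unfolding good_def by blast

lemma hat_zero: assumes p: "p \<in> T3" "p = (i,j,k)" and ng: "\<not> good i j" and f: "htyp p f"
  shows "f = hzr p"
proof (rule ccontr)
  assume fnz: "f \<noteq> hzr p"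
  have I: "i \<in> I" "j \<in> I" "k \<in> I" using p by auto
  define q where "q = (st i, k, j)"
  have qT: "q \<in> T3" using I by (simp add: q_def)
  have pq: "piA p = q" "piA q = p" using p I by (simp_all add: q_def)
  have swA: "\<forall>p\<in>T3. \<forall>f. htyp (piA p) f \<longrightarrow> ctyp p (beA p f)" "\<forall>p\<in>T3. alA p (czr (piA p)) = hzr p \<and> beA p (hzr (piA p)) = czr p"
    using swpA unfolding swp_def by blast+
  define u where "u = beA q f"
  have uc: "ctyp q u" using swA(1) qT f pq unfolding u_def by metis
  have unz: "u \<noteq> czr q"
  proof
    assume "u = czr q"
    then have "alA p (beA (piA p) f) = hzr p" using swA(2) p pq unfolding u_def by metis
    then show False using A_inv_h[OF p(1) f] fnz by simp
  qed
  have gq: "good (st i) k" unfolding good_def using uc unz I q_def by auto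
  have Iq: "st i \<in> I" "k \<in> I" "j \<in> I" using I by auto
  have ucq: "ctyp (st i, k, j) u" using uc q_def by simp
  have "u = lsum (V j) (ot (V (st i)) (V k)) (\<lambda>(k',x,y). if k' = j then tn (scal C (V j) (cp y u)) x else zr (V j) (ot (V (st i)) (V k))) (dts (st i) k)"
    using decomp_c[OF Iq gq ucq] .
  moreover have "u \<noteq> zr (V j) (ot (V (st i)) (V k))" using unz by (simp add: q_def)
  ultimately have "lsum (V j) (ot (V (st i)) (V k)) (\<lambda>(k',x,y). if k' = j then tn (scal C (V j) (cp y u)) x else zr (V j) (ot (V (st i)) (V k))) (dts (st i) k) \<noteq> zr (V j) (ot (V (st i)) (V k))"
    by simp
  from lsum_nz[OF this] obtain t where t: "t \<in> set (dts (st i) k)"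
    and tnz: "(\<lambda>(k',x,y). if k' = j then tn (scal C (V j) (cp y u)) x else zr (V j) (ot (V (st i)) (V k))) t \<noteq> zr (V j) (ot (V (st i)) (V k))"
    by blast
  obtain k' x y where te: "t = (k',x,y)" by (cases t)
  have tt: "k' \<in> I" "dm x = V k'" "cd x = ot (V (st i)) (V k)" "dm y = ot (V (st i)) (V k)" "cd y = V k'"
    using dts(1)[OF Iq(1,2) gq] t te by auto
  have kj: "k' = j" using tnz te by (auto split: if_splits)
  have ynz: "y \<noteq> hzr q"
  proof
    assume "y = hzr q"
    then have "cp y u = zr (V j) (V j)" using uc by (simp add: q_def ctyp_def)
    then have "tn (scal C (V j) (cp y u)) x = zr (V j) (ot (V (st i)) (V k))"
      using scal_zr[OF simpleV[OF I(2)]] tt kj by simp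
    then show False using tnz te kj by simp
  qed
  have yh: "htyp q y" using tt kj by (simp add: q_def htyp_def)
  define w where "w = beA p y"
  have wc: "ctyp p w" using swA(1) p yh pq unfolding w_def by metis
  have wnz: "w \<noteq> czr p"
  proof
    assume "w = czr p"
    then have "alA q (beA (piA q) y) = hzr q" using swA(2) qT pq unfolding w_def by metis
    then show False using A_inv_h[OF qT yh] ynz by simp
  qed
  have "good i j" unfolding good_def using wc wnz p I by auto
  then show False using ng by simp
qed

lemma scl_self_zero: "scl c \<Longrightarrow> ad c c = c \<Longrightarrow> c = zr un un"
  using ad_self_zero[of c] by simp

lemma rep_c: assumes p: "p \<in> T3"
  and sp: "\<And>f. htyp p f \<Longrightarrow> scl (phi f)"
  and ap: "\<And>f f'. htyp p f \<Longrightarrow> htyp p f' \<Longrightarrow> phi (ad f f') = ad (phi f) (phi f')"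
  and mp: "\<And>s f. scl s \<Longrightarrow> htyp p f \<Longrightarrow> phi (tn s f) = cp s (phi f)"
  shows "\<exists>g. ctyp p g \<and> (\<forall>f. htyp p f \<longrightarrow> sc p (cp f g) = phi f)"
proof -
  obtain i j k where pe: "p = (i,j,k)" by (cases p)
  have I: "i \<in> I" "j \<in> I" "k \<in> I" using p pe by auto
  let ?O = "ot (V i) (V j)"
  have z: "phi (hzr p) = zr un un"
  proof -
    have "phi (ad (hzr p) (hzr p)) = ad (phi (hzr p)) (phi (hzr p))" by (rule ap) simp_all
    then have "ad (phi (hzr p)) (phi (hzr p)) = phi (hzr p)" by simp
    then show ?thesis using scl_self_zero sp[of "hzr p"] by simp
  qed
  show ?thesis
  proof (cases "good i j")
    case False
    have "\<forall>f. htyp p f \<longrightarrow> sc p (cp f (czr p)) = phi f"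
    proof (intro allI impI)
      fix f assume f: "htyp p f"
      have "f = hzr p" using hat_zero[OF p pe False f] .
      then show "sc p (cp f (czr p)) = phi f" using z scal_zr[OF simpleV[OF I(3)]] pe by simp
    qed
    then show ?thesis using ctyp_zr by blast
  next
    case True
    note D = dts[OF I(1,2) True]
    define T where "T = (\<lambda>(k',x,y). if k' = k then tn (phi y) x else zr (V k) ?O)"
    define g where "g = lsum (V k) ?O T (dts i j)"
    have Tty: "\<forall>t\<in>set (dts i j). dm (T t) = V k \<and> cd (T t) = ?O"
    proof
      fix t assume t: "t \<in> set (dts i j)"
      obtain k' x y where te: "t = (k',x,y)" by (cases t)
      have tt: "k' \<in> I" "dm x = V k'" "cd x = ?O" "dm y = ?O" "cd y = V k'" using D(1) t te by auto
      show "dm (T t) = V k \<and> cd (T t) = ?O"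
      proof (cases "k' = k")
        case True
        have "scl (phi y)" using sp tt True pe by (simp add: htyp_def)
        then show ?thesis using te tt True by (simp add: T_def)
      qed (simp add: T_def te)
    qed
    have gc: "ctyp p g" using lsum_typ[OF Tty] pe by (simp add: g_def ctyp_def)
    have "\<forall>f. htyp p f \<longrightarrow> sc p (cp f g) = phi f"
    proof (intro allI impI)
      fix f assume f: "htyp p f"
      have fd: "dm f = ?O" "cd f = V k" using f pe by (auto simp: htyp_def)
      define T2 where "T2 = (\<lambda>(k',x,y). if k' = k then tn (scal C (V k) (cp f x)) y else zr ?O (V k))"
      have T2ty: "\<forall>t\<in>set (dts i j). dm (T2 t) = ?O \<and> cd (T2 t) = V k"
      proof
        fix t assume t: "t \<in> set (dts i j)"
        obtain k' x y where te: "t = (k',x,y)" by (cases t)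
        have tt: "k' \<in> I" "dm x = V k'" "cd x = ?O" "dm y = ?O" "cd y = V k'" using D(1) t te by auto
        show "dm (T2 t) = ?O \<and> cd (T2 t) = V k"
        proof (cases "k' = k")
          case True
          have "scl (scal C (V k) (cp f x))" using scal_scl[OF simpleV[OF I(3)]] tt fd True by simp
          then show ?thesis using te tt True by (simp add: T2_def)
        qed (simp add: T2_def te)
      qed
      have CT: "\<forall>t\<in>set (dts i j). dm (cp f (T t)) = V k \<and> cd (cp f (T t)) = V k"
        using Tty fd by auto
      have "sc p (cp f g) = scal C (V k) (lsum (V k) (V k) (\<lambda>t. cp f (T t)) (dts i j))"
        unfolding g_def using lsum_cp_l[OF Tty] fd pe by simp
      also have "\<dots> = lsum un un (\<lambda>t. scal C (V k) (cp f (T t))) (dts i j)"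
        by (rule lsum_lin[OF CT]) (simp_all add: scal_ad[OF simpleV[OF I(3)]] scal_zr[OF simpleV[OF I(3)]])
      also have "\<dots> = lsum un un (\<lambda>t. phi (T2 t)) (dts i j)"
      proof (rule lsum_cong, rule ballI)
        fix t assume t: "t \<in> set (dts i j)"
        obtain k' x y where te: "t = (k',x,y)" by (cases t)
        have tt: "k' \<in> I" "dm x = V k'" "cd x = ?O" "dm y = ?O" "cd y = V k'" using D(1) t te by auto
        show "scal C (V k) (cp f (T t)) = phi (T2 t)"
        proof (cases "k' = k")
          case True
          have yh: "htyp p y" using tt True pe by (simp add: htyp_def)
          have s1: "scl (phi y)" using sp[OF yh] .
          have s2: "scl (scal C (V k) (cp f x))" using scal_scl[OF simpleV[OF I(3)]] tt fd True by simp
          have "scal C (V k) (cp f (tn (phi y) x)) = scal C (V k) (tn (phi y) (cp f x))"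
            using cp_scl_r[OF s1, of x f] tt fd by simp
          also have "\<dots> = cp (phi y) (scal C (V k) (cp f x))"
            using scal_tn[OF simpleV[OF I(3)], of "cp f x" "phi y"] s1 tt fd True by simp
          also have "\<dots> = cp (scal C (V k) (cp f x)) (phi y)" using scl_comm s1 s2 by simp
          also have "\<dots> = phi (tn (scal C (V k) (cp f x)) y)" using mp[OF s2 yh] by simp
          finally show ?thesis using te True by (simp add: T_def T2_def)
        next
          case False
          have "phi (zr ?O (V k)) = zr un un" using z pe by simp
          then show ?thesis using te False scal_zr[OF simpleV[OF I(3)]] fd by (simp add: T_def T2_def)
        qed
      qed
      also have "\<dots> = phi (lsum ?O (V k) T2 (dts i j))"
      proof (rule lsum_lin[symmetric, OF T2ty])
        show "\<And>f f'. dm f = ?O \<Longrightarrow> cd f = V k \<Longrightarrow> dm f' = ?O \<Longrightarrow> cd f' = V k \<Longrightarrow> phi (ad f f') = ad (phi f) (phi f')"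
          using ap pe by (simp add: htyp_def)
        show "phi (zr ?O (V k)) = zr un un" using z pe by simp
      qed
      also have "lsum ?O (V k) T2 (dts i j) = f"
        using decomp_h[OF I True, of f] f pe by (simp add: T2_def)
      finally show "sc p (cp f g) = phi f" .
    qed
    then show ?thesis using gc by blast
  qed
qed

lemma rep_h: assumes p: "p \<in> T3"
  and sp: "\<And>g. ctyp p g \<Longrightarrow> scl (pf g)"
  and ap: "\<And>g g'. ctyp p g \<Longrightarrow> ctyp p g' \<Longrightarrow> pf (ad g g') = ad (pf g) (pf g')"
  and mp: "\<And>s g. scl s \<Longrightarrow> ctyp p g \<Longrightarrow> pf (tn s g) = cp s (pf g)"
  shows "\<exists>f. htyp p f \<and> (\<forall>g. ctyp p g \<longrightarrow> sc p (cp f g) = pf g)"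
proof -
  obtain i j k where pe: "p = (i,j,k)" by (cases p)
  have I: "i \<in> I" "j \<in> I" "k \<in> I" using p pe by auto
  let ?O = "ot (V i) (V j)"
  have z: "pf (czr p) = zr un un"
  proof -
    have "pf (ad (czr p) (czr p)) = ad (pf (czr p)) (pf (czr p))" by (rule ap) simp_all
    then have "ad (pf (czr p)) (pf (czr p)) = pf (czr p)" by simp
    then show ?thesis using scl_self_zero sp[of "czr p"] by simp
  qed
  show ?thesis
  proof (cases "good i j")
    case False
    have "\<forall>g. ctyp p g \<longrightarrow> sc p (cp (hzr p) g) = pf g"
    proof (intro allI impI)
      fix g assume g: "ctyp p g"
      have "g = czr p" using not_good_c[OF False I(3)] g pe by simp
      then show "sc p (cp (hzr p) g) = pf g" using z scal_zr[OF simpleV[OF I(3)]] pe by simp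
    qed
    then show ?thesis using htyp_zr by blast
  next
    case True
    note D = dts[OF I(1,2) True]
    define T where "T = (\<lambda>(k',x,y). if k' = k then tn (pf x) y else zr ?O (V k))"
    define f where "f = lsum ?O (V k) T (dts i j)"
    have Tty: "\<forall>t\<in>set (dts i j). dm (T t) = ?O \<and> cd (T t) = V k"
    proof
      fix t assume t: "t \<in> set (dts i j)"
      obtain k' x y where te: "t = (k',x,y)" by (cases t)
      have tt: "k' \<in> I" "dm x = V k'" "cd x = ?O" "dm y = ?O" "cd y = V k'" using D(1) t te by auto
      show "dm (T t) = ?O \<and> cd (T t) = V k"
      proof (cases "k' = k")
        case True
        have "scl (pf x)" using sp tt True pe by (simp add: ctyp_def)
        then show ?thesis using te tt True by (simp add: T_def)
      qed (simp add: T_def te)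
    qed
    have fh: "htyp p f" using lsum_typ[OF Tty] pe by (simp add: f_def htyp_def)
    have "\<forall>g. ctyp p g \<longrightarrow> sc p (cp f g) = pf g"
    proof (intro allI impI)
      fix g assume g: "ctyp p g"
      have gd: "dm g = V k" "cd g = ?O" using g pe by (auto simp: ctyp_def)
      define T2 where "T2 = (\<lambda>(k',x,y). if k' = k then tn (scal C (V k) (cp y g)) x else zr (V k) ?O)"
      have T2ty: "\<forall>t\<in>set (dts i j). dm (T2 t) = V k \<and> cd (T2 t) = ?O"
      proof
        fix t assume t: "t \<in> set (dts i j)"
        obtain k' x y where te: "t = (k',x,y)" by (cases t)
        have tt: "k' \<in> I" "dm x = V k'" "cd x = ?O" "dm y = ?O" "cd y = V k'" using D(1) t te by auto
        show "dm (T2 t) = V k \<and> cd (T2 t) = ?O"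
        proof (cases "k' = k")
          case True
          have "scl (scal C (V k) (cp y g))" using scal_scl[OF simpleV[OF I(3)]] tt gd True by simp
          then show ?thesis using te tt True by (simp add: T2_def)
        qed (simp add: T2_def te)
      qed
      have CT: "\<forall>t\<in>set (dts i j). dm (cp (T t) g) = V k \<and> cd (cp (T t) g) = V k"
        using Tty gd by auto
      have "sc p (cp f g) = scal C (V k) (lsum (V k) (V k) (\<lambda>t. cp (T t) g) (dts i j))"
        unfolding f_def using lsum_cp_r[OF Tty] gd pe by simp
      also have "\<dots> = lsum un un (\<lambda>t. scal C (V k) (cp (T t) g)) (dts i j)"
        by (rule lsum_lin[OF CT]) (simp_all add: scal_ad[OF simpleV[OF I(3)]] scal_zr[OF simpleV[OF I(3)]])
      also have "\<dots> = lsum un un (\<lambda>t. pf (T2 t)) (dts i j)"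
      proof (rule lsum_cong, rule ballI)
        fix t assume t: "t \<in> set (dts i j)"
        obtain k' x y where te: "t = (k',x,y)" by (cases t)
        have tt: "k' \<in> I" "dm x = V k'" "cd x = ?O" "dm y = ?O" "cd y = V k'" using D(1) t te by auto
        show "scal C (V k) (cp (T t) g) = pf (T2 t)"
        proof (cases "k' = k")
          case True
          have xc: "ctyp p x" using tt True pe by (simp add: ctyp_def)
          have s1: "scl (pf x)" using sp[OF xc] .
          have s2: "scl (scal C (V k) (cp y g))" using scal_scl[OF simpleV[OF I(3)]] tt gd True by simp
          have "scal C (V k) (cp (tn (pf x) y) g) = scal C (V k) (tn (pf x) (cp y g))"
            using cp_scl_l[OF s1, of g y] tt gd by simp
          also have "\<dots> = cp (pf x) (scal C (V k) (cp y g))"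
            using scal_tn[OF simpleV[OF I(3)], of "cp y g" "pf x"] s1 tt gd True by simp
          also have "\<dots> = cp (scal C (V k) (cp y g)) (pf x)" using scl_comm s1 s2 by simp
          also have "\<dots> = pf (tn (scal C (V k) (cp y g)) x)" using mp[OF s2 xc] by simp
          finally show ?thesis using te True by (simp add: T_def T2_def)
        next
          case False
          have "pf (zr (V k) ?O) = zr un un" using z pe by simp
          then show ?thesis using te False scal_zr[OF simpleV[OF I(3)]] gd by (simp add: T_def T2_def)
        qed
      qed
      also have "\<dots> = pf (lsum (V k) ?O T2 (dts i j))"
      proof (rule lsum_lin[symmetric, OF T2ty])
        show "\<And>f f'. dm f = V k \<Longrightarrow> cd f = ?O \<Longrightarrow> dm f' = V k \<Longrightarrow> cd f' = ?O \<Longrightarrow> pf (ad f f') = ad (pf f) (pf f')"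
          using ap pe by (simp add: ctyp_def)
        show "pf (zr (V k) ?O) = zr un un" using z pe by simp
      qed
      also have "lsum (V k) ?O T2 (dts i j) = g"
        using decomp_c[OF I True, of g] g pe by (simp add: T2_def)
      finally show "sc p (cp f g) = pf g" .
    qed
    then show ?thesis using fh by blast
  qed
qed

lemma uniq_c: assumes p: "p \<in> T3" and g: "ctyp p g" and g': "ctyp p g'"
  and e: "\<And>f. htyp p f \<Longrightarrow> sc p (cp f g) = sc p (cp f g')"
  shows "g = g'"
proof -
  obtain i j k where pe: "p = (i,j,k)" by (cases p)
  have I: "i \<in> I" "j \<in> I" "k \<in> I" using p pe by auto
  show ?thesis
  proof (cases "good i j")
    case False
    have "g = czr (i,j,k)" "g' = czr (i,j,k)" using not_good_c[OF False I(3)] g g' pe by auto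
    then show ?thesis by simp
  next
    case True
    note D = dts[OF I(1,2) True]
    have "g = lsum (V k) (ot (V i) (V j)) (\<lambda>(k',x,y). if k' = k then tn (scal C (V k) (cp y g)) x else zr (V k) (ot (V i) (V j))) (dts i j)"
      using decomp_c[OF I True] g pe by simp
    also have "\<dots> = lsum (V k) (ot (V i) (V j)) (\<lambda>(k',x,y). if k' = k then tn (scal C (V k) (cp y g')) x else zr (V k) (ot (V i) (V j))) (dts i j)"
    proof (rule lsum_cong, rule ballI)
      fix t assume t: "t \<in> set (dts i j)"
      obtain k' x y where te: "t = (k',x,y)" by (cases t)
      have tt: "dm y = ot (V i) (V j)" "cd y = V k'" using D(1) t te by auto
      show "(\<lambda>(k',x,y). if k' = k then tn (scal C (V k) (cp y g)) x else zr (V k) (ot (V i) (V j))) t =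
            (\<lambda>(k',x,y). if k' = k then tn (scal C (V k) (cp y g')) x else zr (V k) (ot (V i) (V j))) t"
      proof (cases "k' = k")
        case True
        have "htyp p y" using tt True pe by (simp add: htyp_def)
        then show ?thesis using e te True pe by simp
      qed (simp add: te)
    qed
    also have "\<dots> = g'" using decomp_c[OF I True] g' pe by simp
    finally show ?thesis .
  qed
qed

lemma uniq_h: assumes p: "p \<in> T3" and f: "htyp p f" and f': "htyp p f'"
  and e: "\<And>g. ctyp p g \<Longrightarrow> sc p (cp f g) = sc p (cp f' g)"
  shows "f = f'"
proof -
  obtain i j k where pe: "p = (i,j,k)" by (cases p)
  have I: "i \<in> I" "j \<in> I" "k \<in> I" using p pe by auto
  show ?thesis
  proof (cases "good i j")
    case False then show ?thesis using hat_zero[OF p pe False f] hat_zero[OF p pe False f'] by simp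
  next
    case True
    note D = dts[OF I(1,2) True]
    have "f = lsum (ot (V i) (V j)) (V k) (\<lambda>(k',x,y). if k' = k then tn (scal C (V k) (cp f x)) y else zr (ot (V i) (V j)) (V k)) (dts i j)"
      using decomp_h[OF I True] f pe by simp
    also have "\<dots> = lsum (ot (V i) (V j)) (V k) (\<lambda>(k',x,y). if k' = k then tn (scal C (V k) (cp f' x)) y else zr (ot (V i) (V j)) (V k)) (dts i j)"
    proof (rule lsum_cong, rule ballI)
      fix t assume t: "t \<in> set (dts i j)"
      obtain k' x y where te: "t = (k',x,y)" by (cases t)
      have tt: "dm x = V k'" "cd x = ot (V i) (V j)" using D(1) t te by auto
      show "(\<lambda>(k',x,y). if k' = k then tn (scal C (V k) (cp f x)) y else zr (ot (V i) (V j)) (V k)) t =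
            (\<lambda>(k',x,y). if k' = k then tn (scal C (V k) (cp f' x)) y else zr (ot (V i) (V j)) (V k)) t"
      proof (cases "k' = k")
        case True
        have "ctyp p x" using tt True pe by (simp add: ctyp_def)
        then show ?thesis using e te True pe by simp
      qed (simp add: te)
    qed
    also have "\<dots> = f'" using decomp_h[OF I True] f' pe by simp
    finally show ?thesis .
  qed
qed

end

context psi begin

lemma htyp_ad: "htyp p f \<Longrightarrow> htyp p f' \<Longrightarrow> htyp p (ad f f')" by (simp add: htyp_def)
lemma ctyp_ad: "ctyp p g \<Longrightarrow> ctyp p g' \<Longrightarrow> ctyp p (ad g g')" by (simp add: ctyp_def)
lemma htyp_tn: "scl s \<Longrightarrow> htyp p f \<Longrightarrow> htyp p (tn s f)" by (simp add: htyp_def)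
lemma ctyp_tn: "scl s \<Longrightarrow> ctyp p g \<Longrightarrow> ctyp p (tn s g)" by (simp add: ctyp_def)

definition hlin where "hlin q q' F \<longleftrightarrow> (\<forall>f. htyp q f \<longrightarrow> ctyp q' (F f)) \<and>
   (\<forall>f f'. htyp q f \<longrightarrow> htyp q f' \<longrightarrow> F (ad f f') = ad (F f) (F f')) \<and>
   (\<forall>s f. scl s \<longrightarrow> htyp q f \<longrightarrow> F (tn s f) = tn s (F f))"
definition clin where "clin q q' G \<longleftrightarrow> (\<forall>g. ctyp q g \<longrightarrow> htyp q' (G g)) \<and>
   (\<forall>g g'. ctyp q g \<longrightarrow> ctyp q g' \<longrightarrow> G (ad g g') = ad (G g) (G g')) \<and>
   (\<forall>s g. scl s \<longrightarrow> ctyp q g \<longrightarrow> G (tn s g) = tn s (G g))"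

lemma beA_lin: assumes p: "p \<in> T3" shows "hlin (piA p) p (beA p)"
proof -
  obtain a e c where pe: "p = (a,e,c)" by (cases p)
  have I: "a \<in> I" "e \<in> I" "c \<in> I" using p pe by auto
  have ty: "\<forall>f. htyp (piA p) f \<longrightarrow> ctyp p (beA p f)" using swpA p unfolding swp_def by blast
  show ?thesis unfolding hlin_def
  proof (intro conjI allI impI)
    show "\<And>f. htyp (piA p) f \<Longrightarrow> ctyp p (beA p f)" using ty by blast
  next
    fix f f' assume f: "htyp (piA p) f" and f': "htyp (piA p) f'"
    have fd: "dm f = ot (V (st a)) (V c)" "cd f = V e" "dm f' = ot (V (st a)) (V c)" "cd f' = V e"
      using f f' pe by (auto simp: htyp_def)
    have "tn (idm (V a)) (ad f f') = ad (tn (idm (V a)) f) (tn (idm (V a)) f')" by (rule tn_ad_r) (use fd in simp_all)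
    then show "beA p (ad f f') = ad (beA p f) (beA p f')"
      using pe I fd by (simp add: beA_simp cp_ad_l)
  next
    fix s f assume s: "scl s" and f: "htyp (piA p) f"
    have fd: "dm f = ot (V (st a)) (V c)" "cd f = V e" using f pe by (auto simp: htyp_def)
    show "beA p (tn s f) = tn s (beA p f)"
      using pe I fd s by (simp add: beA_simp tn_scl_r cp_scl_l)
  qed
qed

lemma alA_lin: assumes p: "p \<in> T3" shows "clin (piA p) p (alA p)"
proof -
  obtain a e c where pe: "p = (a,e,c)" by (cases p)
  have I: "a \<in> I" "e \<in> I" "c \<in> I" using p pe by auto
  have ty: "\<forall>g. ctyp (piA p) g \<longrightarrow> htyp p (alA p g)" using swpA p unfolding swp_def by blast
  show ?thesis unfolding clin_def
  proof (intro conjI allI impI)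
    show "\<And>g. ctyp (piA p) g \<Longrightarrow> htyp p (alA p g)" using ty by blast
  next
    fix g g' assume g: "ctyp (piA p) g" and g': "ctyp (piA p) g'"
    have gd: "dm g = V e" "cd g = ot (V (st a)) (V c)" "dm g' = V e" "cd g' = ot (V (st a)) (V c)"
      using g g' pe by (auto simp: ctyp_def)
    have "tn (idm (V a)) (ad g g') = ad (tn (idm (V a)) g) (tn (idm (V a)) g')" by (rule tn_ad_r) (use gd in simp_all)
    then show "alA p (ad g g') = ad (alA p g) (alA p g')"
      using pe I gd by (simp add: alA_simp cp_ad_r)
  next
    fix s g assume s: "scl s" and g: "ctyp (piA p) g"
    have gd: "dm g = V e" "cd g = ot (V (st a)) (V c)" using g pe by (auto simp: ctyp_def)
    show "alA p (tn s g) = tn s (alA p g)"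
      using pe I gd s by (simp add: alA_simp tn_scl_r cp_scl_r)
  qed
qed

lemma beB_lin: assumes p: "p \<in> T3" shows "hlin (piB p) p (beB p)"
proof -
  obtain a e c where pe: "p = (a,e,c)" by (cases p)
  have I: "a \<in> I" "e \<in> I" "c \<in> I" using p pe by auto
  have ty: "\<forall>f. htyp (piB p) f \<longrightarrow> ctyp p (beB p f)" using swpB p unfolding swp_def by blast
  show ?thesis unfolding hlin_def
  proof (intro conjI allI impI)
    show "\<And>f. htyp (piB p) f \<Longrightarrow> ctyp p (beB p f)" using ty by blast
  next
    fix f f' assume f: "htyp (piB p) f" and f': "htyp (piB p) f'"
    have fd: "dm f = ot (V c) (V (st e))" "cd f = V a" "dm f' = ot (V c) (V (st e))" "cd f' = V a"
      using f f' pe by (auto simp: htyp_def)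
    have "tn (ad f f') (idm (V e)) = ad (tn f (idm (V e))) (tn f' (idm (V e)))" by (rule tn_ad_l) (use fd in simp_all)
    then show "beB p (ad f f') = ad (beB p f) (beB p f')"
      using pe I fd by (simp add: beB_simp cp_ad_l)
  next
    fix s f assume s: "scl s" and f: "htyp (piB p) f"
    have fd: "dm f = ot (V c) (V (st e))" "cd f = V a" using f pe by (auto simp: htyp_def)
    show "beB p (tn s f) = tn s (beB p f)"
      using pe I fd s by (simp add: beB_simp cp_scl_l)
  qed
qed

lemma alB_lin: assumes p: "p \<in> T3" shows "clin (piB p) p (alB p)"
proof -
  obtain a e c where pe: "p = (a,e,c)" by (cases p)
  have I: "a \<in> I" "e \<in> I" "c \<in> I" using p pe by auto
  have ty: "\<forall>g. ctyp (piB p) g \<longrightarrow> htyp p (alB p g)" using swpB p unfolding swp_def by blast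
  show ?thesis unfolding clin_def
  proof (intro conjI allI impI)
    show "\<And>g. ctyp (piB p) g \<Longrightarrow> htyp p (alB p g)" using ty by blast
  next
    fix g g' assume g: "ctyp (piB p) g" and g': "ctyp (piB p) g'"
    have gd: "dm g = V a" "cd g = ot (V c) (V (st e))" "dm g' = V a" "cd g' = ot (V c) (V (st e))"
      using g g' pe by (auto simp: ctyp_def)
    have "tn (ad g g') (idm (V e)) = ad (tn g (idm (V e))) (tn g' (idm (V e)))" by (rule tn_ad_l) (use gd in simp_all)
    then show "alB p (ad g g') = ad (alB p g) (alB p g')"
      using pe I gd by (simp add: alB_simp cp_ad_r)
  next
    fix s g assume s: "scl s" and g: "ctyp (piB p) g"
    have gd: "dm g = V a" "cd g = ot (V c) (V (st e))" using g pe by (auto simp: ctyp_def)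
    show "alB p (tn s g) = tn s (alB p g)"
      using pe I gd s by (simp add: alB_simp cp_scl_r)
  qed
qed

definition repC where "repC q phi = (SOME g. ctyp q g \<and> (\<forall>f. htyp q f \<longrightarrow> sc q (cp f g) = phi f))"
definition repH where "repH q ps = (SOME f. htyp q f \<and> (\<forall>g. ctyp q g \<longrightarrow> sc q (cp f g) = ps g))"

definition flinh where "flinh q phi \<longleftrightarrow> (\<forall>f. htyp q f \<longrightarrow> scl (phi f)) \<and>
  (\<forall>f f'. htyp q f \<longrightarrow> htyp q f' \<longrightarrow> phi (ad f f') = ad (phi f) (phi f')) \<and>
  (\<forall>s f. scl s \<longrightarrow> htyp q f \<longrightarrow> phi (tn s f) = cp s (phi f))"
definition flinc where "flinc q ps \<longleftrightarrow> (\<forall>g. ctyp q g \<longrightarrow> scl (ps g)) \<and>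
  (\<forall>g g'. ctyp q g \<longrightarrow> ctyp q g' \<longrightarrow> ps (ad g g') = ad (ps g) (ps g')) \<and>
  (\<forall>s g. scl s \<longrightarrow> ctyp q g \<longrightarrow> ps (tn s g) = cp s (ps g))"

lemma repC_spec: assumes q: "q \<in> T3" and l: "flinh q phi"
  shows "ctyp q (repC q phi)" "\<And>f. htyp q f \<Longrightarrow> sc q (cp f (repC q phi)) = phi f"
proof -
  have "\<exists>g. ctyp q g \<and> (\<forall>f. htyp q f \<longrightarrow> sc q (cp f g) = phi f)"
    by (rule rep_c[OF q]) (use l in \<open>unfold flinh_def, blast+\<close>)
  from someI_ex[OF this] show "ctyp q (repC q phi)" "\<And>f. htyp q f \<Longrightarrow> sc q (cp f (repC q phi)) = phi f"
    unfolding repC_def by blast+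
qed

lemma repH_spec: assumes q: "q \<in> T3" and l: "flinc q ps"
  shows "htyp q (repH q ps)" "\<And>g. ctyp q g \<Longrightarrow> sc q (cp (repH q ps) g) = ps g"
proof -
  have "\<exists>f. htyp q f \<and> (\<forall>g. ctyp q g \<longrightarrow> sc q (cp f g) = ps g)"
    by (rule rep_h[OF q]) (use l in \<open>unfold flinc_def, blast+\<close>)
  from someI_ex[OF this] show "htyp q (repH q ps)" "\<And>g. ctyp q g \<Longrightarrow> sc q (cp (repH q ps) g) = ps g"
    unfolding repH_def by blast+
qed

lemma sc_zr: "q \<in> T3 \<Longrightarrow> sc q (zr (vo q) (vo q)) = zr un un"
  using scal_zr[OF simple_vo] by blast

lemma repC_zero: assumes q: "q \<in> T3" and l: "flinh q phi" and z: "\<And>f. htyp q f \<Longrightarrow> phi f = zr un un"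
  shows "repC q phi = czr q"
proof (rule uniq_c[OF q repC_spec(1)[OF q l] ctyp_zr])
  fix f assume f: "htyp q f"
  have "cp f (czr q) = zr (vo q) (vo q)" using f by (simp add: htyp_def)
  then show "sc q (cp f (repC q phi)) = sc q (cp f (czr q))"
    using repC_spec(2)[OF q l f] z[OF f] sc_zr[OF q] by simp
qed

lemma repH_zero: assumes q: "q \<in> T3" and l: "flinc q ps" and z: "\<And>g. ctyp q g \<Longrightarrow> ps g = zr un un"
  shows "repH q ps = hzr q"
proof (rule uniq_h[OF q repH_spec(1)[OF q l] htyp_zr])
  fix g assume g: "ctyp q g"
  have "cp (hzr q) g = zr (vo q) (vo q)" using g by (simp add: ctyp_def)
  then show "sc q (cp (repH q ps) g) = sc q (cp (hzr q) g)"
    using repH_spec(2)[OF q l g] z[OF g] sc_zr[OF q] by simp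
qed

lemma flinh_from: assumes q': "q' \<in> T3" and F: "hlin q q' F" and h: "htyp q' h"
  shows "flinh q (\<lambda>f. sc q' (cp h (F f)))"
proof -
  have F1: "\<And>f. htyp q f \<Longrightarrow> ctyp q' (F f)"
   and F2: "\<And>f f'. htyp q f \<Longrightarrow> htyp q f' \<Longrightarrow> F (ad f f') = ad (F f) (F f')"
   and F3: "\<And>s f. scl s \<Longrightarrow> htyp q f \<Longrightarrow> F (tn s f) = tn s (F f)" using F unfolding hlin_def by blast+
  have hd: "dm h = ho q'" "cd h = vo q'" using h by (auto simp: htyp_def)
  show ?thesis unfolding flinh_def
  proof (intro conjI allI impI)
    fix f assume f: "htyp q f"
    show "scl (sc q' (cp h (F f)))" using sc_scl_ht[OF q' h F1[OF f]] .
  next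
    fix f f' assume f: "htyp q f" and f': "htyp q f'"
    have t: "dm (F f) = vo q'" "cd (F f) = ho q'" "dm (F f') = vo q'" "cd (F f') = ho q'"
      using F1[OF f] F1[OF f'] by (auto simp: ctyp_def)
    have "cp h (F (ad f f')) = ad (cp h (F f)) (cp h (F f'))"
      using F2[OF f f'] t hd by (simp add: cp_ad_r)
    then show "sc q' (cp h (F (ad f f'))) = ad (sc q' (cp h (F f))) (sc q' (cp h (F f')))"
      using scal_ad[OF simple_vo[OF q']] t hd by simp
  next
    fix s f assume s: "scl s" and f: "htyp q f"
    have t: "dm (F f) = vo q'" "cd (F f) = ho q'" using F1[OF f] by (auto simp: ctyp_def)
    have "cp h (F (tn s f)) = tn s (cp h (F f))" using F3[OF s f] cp_scl_r[OF s] t hd by simp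
    then show "sc q' (cp h (F (tn s f))) = cp s (sc q' (cp h (F f)))"
      using scal_tn[OF simple_vo[OF q']] s t hd by simp
  qed
qed

lemma flinc_from: assumes q': "q' \<in> T3" and G: "clin q q' G" and g': "ctyp q' g'"
  shows "flinc q (\<lambda>g. sc q' (cp (G g) g'))"
proof -
  have G1: "\<And>g. ctyp q g \<Longrightarrow> htyp q' (G g)"
   and G2: "\<And>g g''. ctyp q g \<Longrightarrow> ctyp q g'' \<Longrightarrow> G (ad g g'') = ad (G g) (G g'')"
   and G3: "\<And>s g. scl s \<Longrightarrow> ctyp q g \<Longrightarrow> G (tn s g) = tn s (G g)" using G unfolding clin_def by blast+
  have gd: "dm g' = vo q'" "cd g' = ho q'" using g' by (auto simp: ctyp_def)
  show ?thesis unfolding flinc_def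
  proof (intro conjI allI impI)
    fix g assume g: "ctyp q g"
    show "scl (sc q' (cp (G g) g'))" using sc_scl_ht[OF q' G1[OF g] g'] .
  next
    fix g g'' assume g: "ctyp q g" and g'': "ctyp q g''"
    have t: "dm (G g) = ho q'" "cd (G g) = vo q'" "dm (G g'') = ho q'" "cd (G g'') = vo q'"
      using G1[OF g] G1[OF g''] by (auto simp: htyp_def)
    have "cp (G (ad g g'')) g' = ad (cp (G g) g') (cp (G g'') g')"
      using G2[OF g g''] t gd by (simp add: cp_ad_l)
    then show "sc q' (cp (G (ad g g'')) g') = ad (sc q' (cp (G g) g')) (sc q' (cp (G g'') g'))"
      using scal_ad[OF simple_vo[OF q']] t gd by simp
  next
    fix s g assume s: "scl s" and g: "ctyp q g"
    have t: "dm (G g) = ho q'" "cd (G g) = vo q'" using G1[OF g] by (auto simp: htyp_def)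
    have "cp (G (tn s g)) g' = tn s (cp (G g) g')" using G3[OF s g] cp_scl_l[OF s] t gd by simp
    then show "sc q' (cp (G (tn s g)) g') = cp s (sc q' (cp (G g) g'))"
      using scal_tn[OF simple_vo[OF q']] s t gd by simp
  qed
qed

definition alS where "alS pi al q g' = repH q (\<lambda>g. sc (pi q) (cp (al (pi q) g) g'))"
definition beS where "beS pi be q h = repC q (\<lambda>f. sc (pi q) (cp h (be (pi q) f)))"

lemma star_props:
  assumes sw: "swp pi al be" and lin: "\<And>p. p \<in> T3 \<Longrightarrow> hlin (pi p) p (be p) \<and> clin (pi p) p (al p)"
  shows "swp pi (alS pi al) (beS pi be)"
    and "\<forall>p\<in>T3. \<forall>f h. htyp (pi p) f \<longrightarrow> htyp p h \<longrightarrow> sc p (cp h (be p f)) = sc (pi p) (cp f (beS pi be (pi p) h))"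
    and "\<forall>p\<in>T3. \<forall>g g'. ctyp (pi p) g \<longrightarrow> ctyp p g' \<longrightarrow> sc p (cp (al p g) g') = sc (pi p) (cp (alS pi al (pi p) g') g)"
proof -
  have P: "\<And>p. p \<in> T3 \<Longrightarrow> pi p \<in> T3" "\<And>p. p \<in> T3 \<Longrightarrow> pi (pi p) = p" using sw unfolding swp_def by auto
  have linq: "hlin q (pi q) (be (pi q)) \<and> clin q (pi q) (al (pi q))" if q: "q \<in> T3" for q
  proof -
    have "hlin (pi (pi q)) (pi q) (be (pi q)) \<and> clin (pi (pi q)) (pi q) (al (pi q))" using lin[OF P(1)[OF q]] .
    then show ?thesis using P(2)[OF q] by simp
  qed
  have FH: "flinh q (\<lambda>f. sc (pi q) (cp h (be (pi q) f)))" if q: "q \<in> T3" and h: "htyp (pi q) h" for q h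
    using flinh_from[OF P(1)[OF q] conjunct1[OF linq[OF q]] h] .
  have FC: "flinc q (\<lambda>g. sc (pi q) (cp (al (pi q) g) g'))" if q: "q \<in> T3" and g': "ctyp (pi q) g'" for q g'
    using flinc_from[OF P(1)[OF q] conjunct2[OF linq[OF q]] g'] .
  show "swp pi (alS pi al) (beS pi be)"
    unfolding swp_def
  proof (intro conjI ballI allI impI)
    fix p assume p: "p \<in> T3"
    show "pi p \<in> T3" "pi (pi p) = p" using P p by auto
    show "alS pi al p (czr (pi p)) = hzr p"
      unfolding alS_def
    proof (rule repH_zero[OF p FC[OF p ctyp_zr]])
      fix g assume g: "ctyp p g"
      have "htyp (pi p) (al (pi p) g)" using linq[OF p] g unfolding clin_def by blast
      then have "cp (al (pi p) g) (czr (pi p)) = zr (vo (pi p)) (vo (pi p))" by (simp add: htyp_def)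
      then show "sc (pi p) (cp (al (pi p) g) (czr (pi p))) = zr un un" using sc_zr[OF P(1)[OF p]] by simp
    qed
    show "beS pi be p (hzr (pi p)) = czr p"
      unfolding beS_def
    proof (rule repC_zero[OF p FH[OF p htyp_zr]])
      fix f assume f: "htyp p f"
      have "ctyp (pi p) (be (pi p) f)" using linq[OF p] f unfolding hlin_def by blast
      then have "cp (hzr (pi p)) (be (pi p) f) = zr (vo (pi p)) (vo (pi p))" by (simp add: ctyp_def)
      then show "sc (pi p) (cp (hzr (pi p)) (be (pi p) f)) = zr un un" using sc_zr[OF P(1)[OF p]] by simp
    qed
  next
    fix p g assume p: "p \<in> T3" and g: "ctyp (pi p) g"
    show "htyp p (alS pi al p g)" unfolding alS_def using repH_spec(1)[OF p FC[OF p g]] .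
  next
    fix p f assume p: "p \<in> T3" and f: "htyp (pi p) f"
    show "ctyp p (beS pi be p f)" unfolding beS_def using repC_spec(1)[OF p FH[OF p f]] .
  qed
  show "\<forall>p\<in>T3. \<forall>f h. htyp (pi p) f \<longrightarrow> htyp p h \<longrightarrow> sc p (cp h (be p f)) = sc (pi p) (cp f (beS pi be (pi p) h))"
  proof (intro ballI allI impI)
    fix p f h assume p: "p \<in> T3" and f: "htyp (pi p) f" and h: "htyp p h"
    have q: "pi p \<in> T3" using P p by simp
    have h': "htyp (pi (pi p)) h" using h P p by simp
    have "sc (pi p) (cp f (beS pi be (pi p) h)) = sc (pi (pi p)) (cp h (be (pi (pi p)) f))"
      unfolding beS_def using repC_spec(2)[OF q FH[OF q h'] f] .
    then show "sc p (cp h (be p f)) = sc (pi p) (cp f (beS pi be (pi p) h))" using P p by simp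
  qed
  show "\<forall>p\<in>T3. \<forall>g g'. ctyp (pi p) g \<longrightarrow> ctyp p g' \<longrightarrow> sc p (cp (al p g) g') = sc (pi p) (cp (alS pi al (pi p) g') g)"
  proof (intro ballI allI impI)
    fix p g g' assume p: "p \<in> T3" and g: "ctyp (pi p) g" and g': "ctyp p g'"
    have q: "pi p \<in> T3" using P p by simp
    have g'': "ctyp (pi (pi p)) g'" using g' P p by simp
    have "sc (pi p) (cp (alS pi al (pi p) g') g) = sc (pi (pi p)) (cp (al (pi (pi p)) g) g')"
      unfolding alS_def using repH_spec(2)[OF q FC[OF q g''] g] .
    then show "sc p (cp (al p g) g') = sc (pi p) (cp (alS pi al (pi p) g') g)" using P p by simp
  qed
qed

lemma star_transpose:
  assumes sw: "swp pi al be" and lin: "\<And>p. p \<in> T3 \<Longrightarrow> hlin (pi p) p (be p) \<and> clin (pi p) p (al p)"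
    and x: "x \<in> H" and y: "y \<in> H"
  shows "fm (opS pi al be x) y = fm x (opS pi (alS pi al) (beS pi be) y)"
  by (rule opS_transpose[OF sw star_props[OF sw lin] x y])

lemma linA: "p \<in> T3 \<Longrightarrow> hlin (piA p) p (beA p) \<and> clin (piA p) p (alA p)" using beA_lin alA_lin by blast
lemma linB: "p \<in> T3 \<Longrightarrow> hlin (piB p) p (beB p) \<and> clin (piB p) p (alB p)" using beB_lin alB_lin by blast

definition eh where "eh p0 f = ((\<lambda>a e c. if a \<in> I \<and> e \<in> I \<and> c \<in> I then (if (a,e,c) = p0 then f else hzr (a,e,c)) else undefined),
   (\<lambda>a e c. if a \<in> I \<and> e \<in> I \<and> c \<in> I then czr (a,e,c) else undefined))"
definition ec where "ec p0 g = ((\<lambda>a e c. if a \<in> I \<and> e \<in> I \<and> c \<in> I then hzr (a,e,c) else undefined),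
   (\<lambda>a e c. if a \<in> I \<and> e \<in> I \<and> c \<in> I then (if (a,e,c) = p0 then g else czr (a,e,c)) else undefined))"

lemma eh_hx: "q \<in> T3 \<Longrightarrow> hx (eh p0 f) q = (if q = p0 then f else hzr q)"
  and eh_cx: "q \<in> T3 \<Longrightarrow> cx (eh p0 f) q = czr q"
  and ec_hx: "q \<in> T3 \<Longrightarrow> hx (ec p0 g) q = hzr q"
  and ec_cx: "q \<in> T3 \<Longrightarrow> cx (ec p0 g) q = (if q = p0 then g else czr q)"
  by (cases q, simp add: eh_def ec_def)+

lemma eh_supp: "supp (eh p0 f) \<subseteq> {p0}"
proof
  fix q assume q: "q \<in> supp (eh p0 f)"
  then have qT: "q \<in> T3" using supp_T3 by blast
  show "q \<in> {p0}"
  proof (rule ccontr)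
    assume "q \<notin> {p0}"
    then have "hx (eh p0 f) q = hzr q" "cx (eh p0 f) q = czr q" using eh_hx[OF qT] eh_cx[OF qT] by auto
    then show False using q unfolding supp_alt by blast
  qed
qed
lemma ec_supp: "supp (ec p0 g) \<subseteq> {p0}"
proof
  fix q assume q: "q \<in> supp (ec p0 g)"
  then have qT: "q \<in> T3" using supp_T3 by blast
  show "q \<in> {p0}"
  proof (rule ccontr)
    assume "q \<notin> {p0}"
    then have "hx (ec p0 g) q = hzr q" "cx (ec p0 g) q = czr q" using ec_hx[OF qT] ec_cx[OF qT] by auto
    then show False using q unfolding supp_alt by blast
  qed
qed

lemma eh_H: assumes "p0 \<in> T3" "htyp p0 f" shows "eh p0 f \<in> H"
  unfolding H_iff
proof (intro conjI ballI allI impI)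
  fix p assume p: "p \<in> T3"
  show "htyp p (hx (eh p0 f) p)" using assms eh_hx[OF p] by auto
  show "ctyp p (cx (eh p0 f) p)" using eh_cx[OF p] by simp
next
  fix i j k assume n: "\<not> (i \<in> I \<and> j \<in> I \<and> k \<in> I)"
  show "fst (eh p0 f) i j k = undefined" "snd (eh p0 f) i j k = undefined"
    unfolding eh_def by (simp_all only: fst_conv snd_conv if_not_P[OF n])
next
  show "finite (supp (eh p0 f))" using eh_supp finite_subset by blast
qed

lemma ec_H: assumes "p0 \<in> T3" "ctyp p0 g" shows "ec p0 g \<in> H"
  unfolding H_iff
proof (intro conjI ballI allI impI)
  fix p assume p: "p \<in> T3"
  show "htyp p (hx (ec p0 g) p)" using ec_hx[OF p] by simp
  show "ctyp p (cx (ec p0 g) p)" using assms ec_cx[OF p] by auto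
next
  fix i j k assume n: "\<not> (i \<in> I \<and> j \<in> I \<and> k \<in> I)"
  show "fst (ec p0 g) i j k = undefined" "snd (ec p0 g) i j k = undefined"
    unfolding ec_def by (simp_all only: fst_conv snd_conv if_not_P[OF n])
next
  show "finite (supp (ec p0 g))" using ec_supp finite_subset by blast
qed

lemma msum_single: assumes "finite S" "p \<in> S" "\<forall>q\<in>S - {p}. g q = zr un un" "typd un un (g p)"
  shows "msum C un un g S = g p"
proof -
  have "msum C un un g S = msum C un un g {p}"
    by (rule msum_zero_ext) (use assms in auto)
  also have "\<dots> = ad (g p) (msum C un un g {})"
    by (rule msum_insert) (use assms in auto)
  finally show ?thesis using assms(4) by (simp add: typd_def)
qed

lemma fm_eh: assumes p0: "p0 \<in> T3" and f: "htyp p0 f" and x: "x \<in> H"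
  shows "fm (eh p0 f) x = sc p0 (cp f (cx x p0))"
proof -
  let ?S = "insert p0 (supp x)"
  have fS: "finite ?S" using H_fin[OF x] by simp
  have ST: "?S \<subseteq> T3" using p0 supp_T3 by blast
  have "fm (eh p0 f) x = msum C un un (ftm (eh p0 f) x) ?S"
    by (rule fm_over[OF eh_H[OF p0 f] x fS ST]) (use eh_supp in blast)
  also have "\<dots> = ftm (eh p0 f) x p0"
  proof (rule msum_single[OF fS])
    show "p0 \<in> ?S" by simp
    show "\<forall>q\<in>?S - {p0}. ftm (eh p0 f) x q = zr un un"
    proof
      fix q assume q: "q \<in> ?S - {p0}"
      then have qT: "q \<in> T3" using ST by blast
      have t: "htyp q (hx x q)" "ctyp q (cx x q)" using H_htyp[OF x qT] H_ctyp[OF x qT] .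
      have "cp (hzr q) (cx x q) = zr (vo q) (vo q)" "cp (hx x q) (czr q) = zr (vo q) (vo q)"
        using t by (simp_all add: htyp_def ctyp_def)
      then show "ftm (eh p0 f) x q = zr un un"
        unfolding ftm_alt using eh_hx[OF qT] eh_cx[OF qT] q sc_zr[OF qT] by simp
    qed
    show "typd un un (ftm (eh p0 f) x p0)" using ftm_scl[OF eh_H[OF p0 f] x p0] unfolding typd_def scl_def by blast
  qed
  also have "\<dots> = sc p0 (cp f (cx x p0))"
  proof -
    have t: "htyp p0 (hx x p0)" "ctyp p0 (cx x p0)" using H_htyp[OF x p0] H_ctyp[OF x p0] .
    have "cp (hx x p0) (czr p0) = zr (vo p0) (vo p0)" using t by (simp add: htyp_def ctyp_def)
    moreover have "scl (sc p0 (cp f (cx x p0)))" using sc_scl_ht[OF p0 f t(2)] .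
    ultimately show ?thesis unfolding ftm_alt using eh_hx[OF p0] eh_cx[OF p0] sc_zr[OF p0] by simp
  qed
  finally show ?thesis .
qed

lemma fm_ec: assumes p0: "p0 \<in> T3" and g: "ctyp p0 g" and x: "x \<in> H"
  shows "fm (ec p0 g) x = sc p0 (cp (hx x p0) g)"
proof -
  let ?S = "insert p0 (supp x)"
  have fS: "finite ?S" using H_fin[OF x] by simp
  have ST: "?S \<subseteq> T3" using p0 supp_T3 by blast
  have "fm (ec p0 g) x = msum C un un (ftm (ec p0 g) x) ?S"
    by (rule fm_over[OF ec_H[OF p0 g] x fS ST]) (use ec_supp in blast)
  also have "\<dots> = ftm (ec p0 g) x p0"
  proof (rule msum_single[OF fS])
    show "p0 \<in> ?S" by simp
    show "\<forall>q\<in>?S - {p0}. ftm (ec p0 g) x q = zr un un"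
    proof
      fix q assume q: "q \<in> ?S - {p0}"
      then have qT: "q \<in> T3" using ST by blast
      have t: "htyp q (hx x q)" "ctyp q (cx x q)" using H_htyp[OF x qT] H_ctyp[OF x qT] .
      have "cp (hzr q) (cx x q) = zr (vo q) (vo q)" "cp (hx x q) (czr q) = zr (vo q) (vo q)"
        using t by (simp_all add: htyp_def ctyp_def)
      then show "ftm (ec p0 g) x q = zr un un"
        unfolding ftm_alt using ec_hx[OF qT] ec_cx[OF qT] q sc_zr[OF qT] by simp
    qed
    show "typd un un (ftm (ec p0 g) x p0)" using ftm_scl[OF ec_H[OF p0 g] x p0] unfolding typd_def scl_def by blast
  qed
  also have "\<dots> = sc p0 (cp (hx x p0) g)"
  proof -
    have t: "htyp p0 (hx x p0)" "ctyp p0 (cx x p0)" using H_htyp[OF x p0] H_ctyp[OF x p0] .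
    have "cp (hzr p0) (cx x p0) = zr (vo p0) (vo p0)" using t by (simp add: htyp_def ctyp_def)
    moreover have "scl (sc p0 (cp (hx x p0) g))" using sc_scl_ht[OF p0 t(1) g] .
    ultimately show ?thesis unfolding ftm_alt using ec_hx[OF p0] ec_cx[OF p0] sc_zr[OF p0] by (simp add: ad_comm)
  qed
  finally show ?thesis .
qed

lemma nondeg: assumes x: "x \<in> H" and x': "x' \<in> H" and e: "\<And>y. y \<in> H \<Longrightarrow> fm y x = fm y x'"
  shows "x = x'"
proof (rule H_eqI[OF x x'], intro ballI conjI)
  fix p assume p: "p \<in> T3"
  show "hx x p = hx x' p"
  proof (rule uniq_h[OF p H_htyp[OF x p] H_htyp[OF x' p]])
    fix g assume g: "ctyp p g"
    show "sc p (cp (hx x p) g) = sc p (cp (hx x' p) g)"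
      using e[OF ec_H[OF p g]] fm_ec[OF p g x] fm_ec[OF p g x'] by simp
  qed
  show "cx x p = cx x' p"
  proof (rule uniq_c[OF p H_ctyp[OF x p] H_ctyp[OF x' p]])
    fix f assume f: "htyp p f"
    show "sc p (cp f (cx x p)) = sc p (cp f (cx x' p))"
      using e[OF eh_H[OF p f]] fm_eh[OF p f x] fm_eh[OF p f x'] by simp
  qed
qed

end

context psi begin

abbreviation "Ao \<equiv> opS piA alA beA"
abbreviation "Bo \<equiv> opS piB alB beB"
abbreviation "As \<equiv> opS piA (alS piA alA) (beS piA beA)"
abbreviation "Bs \<equiv> opS piB (alS piB alB) (beS piB beB)"

lemma opA_eq': "opA C I V st b d = Ao" using opA_eq by (intro ext) simp
lemma opB_eq': "opB C I V st b d = Bo" using opB_eq by (intro ext) simp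

lemma swpAs: "swp piA (alS piA alA) (beS piA beA)" using star_props(1)[OF swpA linA] .
lemma swpBs: "swp piB (alS piB alB) (beS piB beB)" using star_props(1)[OF swpB linB] .

lemma A_H: "x \<in> H \<Longrightarrow> Ao x \<in> H" using swp_H[OF swpA] .
lemma B_H: "x \<in> H \<Longrightarrow> Bo x \<in> H" using swp_H[OF swpB] .
lemma As_H: "x \<in> H \<Longrightarrow> As x \<in> H" using swp_H[OF swpAs] .
lemma Bs_H: "x \<in> H \<Longrightarrow> Bs x \<in> H" using swp_H[OF swpBs] .

lemma AA: "x \<in> H \<Longrightarrow> Ao (Ao x) = x" using opS_invo[OF swpA invoA] .
lemma BB: "x \<in> H \<Longrightarrow> Bo (Bo x) = x" using opS_invo[OF swpB invoB] .

lemma A_tr: "x \<in> H \<Longrightarrow> y \<in> H \<Longrightarrow> fm (Ao x) y = fm x (As y)" using star_transpose[OF swpA linA] .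
lemma B_tr: "x \<in> H \<Longrightarrow> y \<in> H \<Longrightarrow> fm (Bo x) y = fm x (Bs y)" using star_transpose[OF swpB linB] .

lemma T3_piA: "p \<in> T3 \<Longrightarrow> piA p \<in> T3" and T3_piB: "p \<in> T3 \<Longrightarrow> piB p \<in> T3"
  using swp_pi[OF swpA] swp_pi[OF swpB] by auto

lemma ABA: "Ao (Bo (Ao x)) = opS piX alX beX x"
proof -
  have "Ao (Bo (Ao x)) = opS (\<lambda>p. piA (piB (piA p))) (\<lambda>p g. alA p (beB (piA p) (alA (piB (piA p)) g)))
      (\<lambda>p f. beA p (alB (piA p) (beA (piB (piA p)) f))) x"
    by (rule opS_comp3) (fact T3_piA, fact T3_piB)
  then show ?thesis unfolding X_def' .
qed
lemma BAB: "Bo (Ao (Bo x)) = opS piX alY beY x"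
proof -
  have "Bo (Ao (Bo x)) = opS (\<lambda>p. piB (piA (piB p))) (\<lambda>p g. alB p (beA (piB p) (alB (piA (piB p)) g)))
      (\<lambda>p f. beB p (alA (piB p) (beB (piA (piB p)) f))) x"
    by (rule opS_comp3) (fact T3_piB, fact T3_piA)
  then have "Bo (Ao (Bo x)) = opS piY alY beY x" unfolding Y_def' .
  also have "\<dots> = opS piX alY beY x" by (rule opS_cong_pi) (rule piXY)
  finally show ?thesis .
qed

lemma X_tr: "x \<in> H \<Longrightarrow> y \<in> H \<Longrightarrow> fm (Ao (Bo (Ao x))) y = fm x (Bo (Ao (Bo y)))"
  unfolding ABA BAB by (rule X_transpose)

lemma nondeg1: "z \<in> H \<Longrightarrow> z' \<in> H \<Longrightarrow> (\<And>x. x \<in> H \<Longrightarrow> fm x z = fm x z') \<Longrightarrow> z = z'"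
  using nondeg by blast

lemma AsAs: assumes y: "y \<in> H" shows "As (As y) = y"
proof (rule nondeg1[OF As_H[OF As_H[OF y]] y])
  fix x assume x: "x \<in> H"
  have "fm x (As (As y)) = fm (Ao x) (As y)" using A_tr[OF x As_H[OF y]] by simp
  also have "\<dots> = fm (Ao (Ao x)) y" using A_tr[OF A_H[OF x] y] by simp
  finally show "fm x (As (As y)) = fm x y" using AA[OF x] by simp
qed

lemma BsBs: assumes y: "y \<in> H" shows "Bs (Bs y) = y"
proof (rule nondeg1[OF Bs_H[OF Bs_H[OF y]] y])
  fix x assume x: "x \<in> H"
  have "fm x (Bs (Bs y)) = fm (Bo x) (Bs y)" using B_tr[OF x Bs_H[OF y]] by simp
  also have "\<dots> = fm (Bo (Bo x)) y" using B_tr[OF B_H[OF x] y] by simp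
  finally show "fm x (Bs (Bs y)) = fm x y" using BB[OF x] by simp
qed

lemma pqp: assumes y: "y \<in> H" shows "As (Bs (As y)) = Bo (Ao (Bo y))"
proof (rule nondeg1[OF As_H[OF Bs_H[OF As_H[OF y]]] B_H[OF A_H[OF B_H[OF y]]]])
  fix x assume x: "x \<in> H"
  have "fm x (As (Bs (As y))) = fm (Ao x) (Bs (As y))" using A_tr[OF x Bs_H[OF As_H[OF y]]] by simp
  also have "\<dots> = fm (Bo (Ao x)) (As y)" using B_tr[OF A_H[OF x] As_H[OF y]] by simp
  also have "\<dots> = fm (Ao (Bo (Ao x))) y" using A_tr[OF B_H[OF A_H[OF x]] y] by simp
  also have "\<dots> = fm x (Bo (Ao (Bo y)))" using X_tr[OF x y] .
  finally show "fm x (As (Bs (As y))) = fm x (Bo (Ao (Bo y)))" .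
qed

lemma qpq: assumes y: "y \<in> H" shows "Bs (As (Bs y)) = Ao (Bo (Ao y))"
proof (rule nondeg1[OF Bs_H[OF As_H[OF Bs_H[OF y]]] A_H[OF B_H[OF A_H[OF y]]]])
  fix x assume x: "x \<in> H"
  have "fm x (Bs (As (Bs y))) = fm (Bo x) (As (Bs y))" using B_tr[OF x As_H[OF Bs_H[OF y]]] by simp
  also have "\<dots> = fm (Ao (Bo x)) (Bs y)" using A_tr[OF B_H[OF x] Bs_H[OF y]] by simp
  also have "\<dots> = fm (Bo (Ao (Bo x))) y" using B_tr[OF A_H[OF B_H[OF x]] y] by simp
  also have "\<dots> = fm y (Bo (Ao (Bo x)))" using fm_sym[OF B_H[OF A_H[OF B_H[OF x]]] y] .
  also have "\<dots> = fm (Ao (Bo (Ao y))) x" using X_tr[OF y x] by simp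
  also have "\<dots> = fm x (Ao (Bo (Ao y)))" using fm_sym[OF A_H[OF B_H[OF A_H[OF y]]] x] .
  finally show "fm x (Bs (As (Bs y))) = fm x (Ao (Bo (Ao y)))" .
qed

lemma transpose_eq:
  assumes G: "\<And>y. y \<in> H \<Longrightarrow> G y \<in> H" and tr: "\<And>x y. x \<in> H \<Longrightarrow> y \<in> H \<Longrightarrow> fm (F x) y = fm x (G y)"
    and y: "y \<in> H"
  shows "op_transpose H fm F y = G y"
proof -
  let ?P = "\<lambda>g. (\<forall>y\<in>H. g y \<in> H) \<and> (\<forall>x\<in>H. \<forall>y\<in>H. fm (F x) y = fm x (g y))"
  have "?P G" using G tr by blast
  then have "\<exists>g. ?P g" by blast
  then have "?P (SOME g. ?P g)" by (rule someI_ex)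
  then have P: "?P (op_transpose H fm F)" unfolding op_transpose_def .
  show ?thesis
  proof (rule nondeg1)
    show "op_transpose H fm F y \<in> H" using P y by blast
    show "G y \<in> H" using G y .
    fix x assume x: "x \<in> H"
    show "fm x (op_transpose H fm F y) = fm x (G y)" using P x y tr[OF x y] by metis
  qed
qed

lemma TA: "y \<in> H \<Longrightarrow> op_transpose H fm Ao y = As y"
  by (rule transpose_eq[OF As_H A_tr])
lemma TB: "y \<in> H \<Longrightarrow> op_transpose H fm Bo y = Bs y"
  by (rule transpose_eq[OF Bs_H B_tr])

lemma sym_opI: assumes "\<And>y. y \<in> H \<Longrightarrow> F y \<in> H" "\<And>x y. x \<in> H \<Longrightarrow> y \<in> H \<Longrightarrow> fm (F x) y = fm x (F y)"
  shows "symmetric_op H fm F"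
  unfolding symmetric_op_def using transpose_eq[of F F] assms by blast

definition inhat where "inhat p x \<longleftrightarrow> x \<in> H \<and> (\<forall>q\<in>T3. cx x q = czr q \<and> (q \<noteq> p \<longrightarrow> hx x q = hzr q))"
definition inchk where "inchk p x \<longleftrightarrow> x \<in> H \<and> (\<forall>q\<in>T3. hx x q = hzr q \<and> (q \<noteq> p \<longrightarrow> cx x q = czr q))"

lemma hat_part_iff: "i \<in> I \<Longrightarrow> j \<in> I \<Longrightarrow> k \<in> I \<Longrightarrow> x \<in> hat_part C I V i j k \<longleftrightarrow> inhat (i,j,k) x"
  unfolding hat_part_def inhat_def by (auto simp: hz_def cz_def)
lemma check_part_iff: "i \<in> I \<Longrightarrow> j \<in> I \<Longrightarrow> k \<in> I \<Longrightarrow> x \<in> check_part C I V i j k \<longleftrightarrow> inchk (i,j,k) x"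
  unfolding check_part_def inchk_def by (auto simp: hz_def cz_def)

lemma swp_hat: assumes sw: "swp pi al be" and p: "p \<in> T3" and x: "inhat p x"
  shows "inchk (pi p) (opS pi al be x)"
proof -
  have xH: "x \<in> H" using x by (simp add: inhat_def)
  have z: "\<And>q. q \<in> T3 \<Longrightarrow> al q (czr (pi q)) = hzr q \<and> be q (hzr (pi q)) = czr q"
    using sw unfolding swp_def by blast
  have P: "\<And>q. q \<in> T3 \<Longrightarrow> pi q \<in> T3" "\<And>q. q \<in> T3 \<Longrightarrow> pi (pi q) = q" using swp_pi[OF sw] swp_pipi[OF sw] by auto
  show ?thesis unfolding inchk_def
  proof (intro conjI ballI impI)
    show "opS pi al be x \<in> H" using swp_H[OF sw xH] .
  next
    fix q assume q: "q \<in> T3"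
    have xc: "\<forall>q\<in>T3. cx x q = czr q \<and> (q \<noteq> p \<longrightarrow> hx x q = hzr q)" using x unfolding inhat_def by blast
    have "cx x (pi q) = czr (pi q)" using conjunct1[OF bspec[OF xc P(1)[OF q]]] .
    then show "hx (opS pi al be x) q = hzr q"
      using opS_hx[OF q] z[OF q] by simp
    assume qp: "q \<noteq> pi p"
    have "pi q \<noteq> p"
    proof
      assume "pi q = p"
      then have "pi (pi q) = pi p" by simp
      then show False using P(2)[OF q] qp by simp
    qed
    then have "hx x (pi q) = hzr (pi q)" using mp[OF conjunct2[OF bspec[OF xc P(1)[OF q]]]] by blast
    then show "cx (opS pi al be x) q = czr q"
      using opS_cx[OF q] z[OF q] by simp
  qed
qed

lemma swp_chk: assumes sw: "swp pi al be" and p: "p \<in> T3" and x: "inchk p x"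
  shows "inhat (pi p) (opS pi al be x)"
proof -
  have xH: "x \<in> H" using x by (simp add: inchk_def)
  have z: "\<And>q. q \<in> T3 \<Longrightarrow> al q (czr (pi q)) = hzr q \<and> be q (hzr (pi q)) = czr q"
    using sw unfolding swp_def by blast
  have P: "\<And>q. q \<in> T3 \<Longrightarrow> pi q \<in> T3" "\<And>q. q \<in> T3 \<Longrightarrow> pi (pi q) = q" using swp_pi[OF sw] swp_pipi[OF sw] by auto
  show ?thesis unfolding inhat_def
  proof (intro conjI ballI impI)
    show "opS pi al be x \<in> H" using swp_H[OF sw xH] .
  next
    fix q assume q: "q \<in> T3"
    have xc: "\<forall>q\<in>T3. hx x q = hzr q \<and> (q \<noteq> p \<longrightarrow> cx x q = czr q)" using x unfolding inchk_def by blast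
    have "hx x (pi q) = hzr (pi q)" using conjunct1[OF bspec[OF xc P(1)[OF q]]] .
    then show "cx (opS pi al be x) q = czr q"
      using opS_cx[OF q] z[OF q] by simp
    assume qp: "q \<noteq> pi p"
    have "pi q \<noteq> p"
    proof
      assume "pi q = p"
      then have "pi (pi q) = pi p" by simp
      then show False using P(2)[OF q] qp by simp
    qed
    then have "cx x (pi q) = czr (pi q)" using mp[OF conjunct2[OF bspec[OF xc P(1)[OF q]]]] by blast
    then show "hx (opS pi al be x) q = hzr q"
      using opS_hx[OF q] z[OF q] by simp
  qed
qed

lemma gradI: assumes "\<And>p x. p \<in> T3 \<Longrightarrow> inhat p x \<Longrightarrow> inhat p (F x)" "\<And>p x. p \<in> T3 \<Longrightarrow> inchk p x \<Longrightarrow> inchk p (F x)"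
  shows "grading_preserving C I V F"
  unfolding grading_preserving_def
proof (intro ballI conjI subsetI)
  fix i j k y assume I: "i \<in> I" "j \<in> I" "k \<in> I"
  {
    assume "y \<in> F ` check_part C I V i j k"
    then obtain x where "x \<in> check_part C I V i j k" "y = F x" by blast
    then show "y \<in> check_part C I V i j k" using assms(2)[of "(i,j,k)" x] I check_part_iff by auto
  }
  {
    assume "y \<in> F ` hat_part C I V i j k"
    then obtain x where "x \<in> hat_part C I V i j k" "y = F x" by blast
    then show "y \<in> hat_part C I V i j k" using assms(1)[of "(i,j,k)" x] I hat_part_iff by auto
  }
qed

lemma piAB3: assumes p: "p \<in> T3" shows "piA (piB (piA (piB (piA (piB p))))) = p"
proof -
  obtain a e c where pe: "p = (a,e,c)" by (cases p)
  have "a \<in> I" "e \<in> I" "c \<in> I" using p pe by auto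
  then show ?thesis using pe by simp
qed

lemma inhat_H: "inhat p x \<Longrightarrow> x \<in> H" and inchk_H: "inchk p x \<Longrightarrow> x \<in> H"
  by (simp_all add: inhat_def inchk_def)

end

context psi begin

lemma main:
  defines "L \<equiv> op_transpose H fm Ao \<circ> Ao"
      and "R \<equiv> op_transpose H fm Bo \<circ> Bo"
      and "Cc \<equiv> Ao \<circ> Bo \<circ> Ao \<circ> Bo \<circ> Ao \<circ> Bo"
  shows "(\<forall>F\<in>{L, R, Cc}. bij_betw F H H \<and> symmetric_op H fm F \<and> grading_preserving C I V F)
    \<and> (\<forall>x\<in>H. Ao (Cc (Ao x)) = the_inv_into H Cc x)
    \<and> (\<forall>x\<in>H. Bo (Cc (Bo x)) = the_inv_into H Cc x)
    \<and> (\<forall>x\<in>H. L (Cc (the_inv_into H L x)) = Cc x)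
    \<and> (\<forall>x\<in>H. R (Cc (the_inv_into H R x)) = Cc x)
    \<and> (\<forall>x\<in>H. Ao (L (Ao x)) = the_inv_into H L x)
    \<and> (\<forall>x\<in>H. Bo (R (Bo x)) = the_inv_into H R x)
    \<and> (\<forall>x\<in>H. Ao (R (Ao x)) = the_inv_into H L (R (the_inv_into H Cc x)))
    \<and> (\<forall>x\<in>H. Bo (L (Bo x)) = the_inv_into H R (L (Cc x)))"
proof -
  note H = A_H B_H As_H Bs_H
  have Lx: "\<And>x. x \<in> H \<Longrightarrow> L x = As (Ao x)" unfolding L_def using TA A_H by simp
  have Rx: "\<And>x. x \<in> H \<Longrightarrow> R x = Bs (Bo x)" unfolding R_def using TB B_H by simp
  have Cx: "\<And>x. Cc x = Ao (Bo (Ao (Bo (Ao (Bo x)))))" unfolding Cc_def by simp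
  have LH: "\<And>x. x \<in> H \<Longrightarrow> L x \<in> H" using Lx H by simp
  have RH: "\<And>x. x \<in> H \<Longrightarrow> R x \<in> H" using Rx H by simp
  have CH: "\<And>x. x \<in> H \<Longrightarrow> Cc x \<in> H" using Cx H by simp
  define Li where "Li x = Ao (As x)" for x
  define Ri where "Ri x = Bo (Bs x)" for x
  define Ci where "Ci x = Bo (Ao (Bo (Ao (Bo (Ao x)))))" for x
  have LiH: "\<And>x. x \<in> H \<Longrightarrow> Li x \<in> H" using H by (simp add: Li_def)
  have RiH: "\<And>x. x \<in> H \<Longrightarrow> Ri x \<in> H" using H by (simp add: Ri_def)
  have CiH: "\<And>x. x \<in> H \<Longrightarrow> Ci x \<in> H" using H by (simp add: Ci_def)
  have L1: "\<And>x. x \<in> H \<Longrightarrow> Li (L x) = x" using Lx AsAs AA H by (simp add: Li_def)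
  have L2: "\<And>x. x \<in> H \<Longrightarrow> L (Li x) = x" using Lx AsAs AA H by (simp add: Li_def)
  have R1: "\<And>x. x \<in> H \<Longrightarrow> Ri (R x) = x" using Rx BsBs BB H by (simp add: Ri_def)
  have R2: "\<And>x. x \<in> H \<Longrightarrow> R (Ri x) = x" using Rx BsBs BB H by (simp add: Ri_def)
  have C1: "\<And>x. x \<in> H \<Longrightarrow> Ci (Cc x) = x" using Cx AA BB H by (simp add: Ci_def)
  have C2: "\<And>x. x \<in> H \<Longrightarrow> Cc (Ci x) = x" using Cx AA BB H by (simp add: Ci_def)
  have bL: "bij_betw L H H" by (rule bij_betw_byWitness[where f'=Li]) (use L1 L2 LH LiH in auto)
  have bR: "bij_betw R H H" by (rule bij_betw_byWitness[where f'=Ri]) (use R1 R2 RH RiH in auto)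
  have bC: "bij_betw Cc H H" by (rule bij_betw_byWitness[where f'=Ci]) (use C1 C2 CH CiH in auto)
  have iL: "\<And>x. x \<in> H \<Longrightarrow> the_inv_into H L x = Li x"
    using the_inv_into_f_eq[OF bij_betw_imp_inj_on[OF bL]] L2 LiH by blast
  have iR: "\<And>x. x \<in> H \<Longrightarrow> the_inv_into H R x = Ri x"
    using the_inv_into_f_eq[OF bij_betw_imp_inj_on[OF bR]] R2 RiH by blast
  have iC: "\<And>x. x \<in> H \<Longrightarrow> the_inv_into H Cc x = Ci x"
    using the_inv_into_f_eq[OF bij_betw_imp_inj_on[OF bC]] C2 CiH by blast
  have sL: "symmetric_op H fm L"
  proof (rule sym_opI[OF LH])
    fix x y assume x: "x \<in> H" and y: "y \<in> H"
    have "fm (L x) y = fm y (As (Ao x))" using Lx[OF x] fm_sym H x y by simp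
    also have "\<dots> = fm (Ao y) (Ao x)" using A_tr[OF y A_H[OF x]] by simp
    also have "\<dots> = fm (Ao x) (Ao y)" using fm_sym H x y by simp
    also have "\<dots> = fm x (L y)" using A_tr[OF x A_H[OF y]] Lx[OF y] by simp
    finally show "fm (L x) y = fm x (L y)" .
  qed
  have sR: "symmetric_op H fm R"
  proof (rule sym_opI[OF RH])
    fix x y assume x: "x \<in> H" and y: "y \<in> H"
    have "fm (R x) y = fm y (Bs (Bo x))" using Rx[OF x] fm_sym H x y by simp
    also have "\<dots> = fm (Bo y) (Bo x)" using B_tr[OF y B_H[OF x]] by simp
    also have "\<dots> = fm (Bo x) (Bo y)" using fm_sym H x y by simp
    also have "\<dots> = fm x (R y)" using B_tr[OF x B_H[OF y]] Rx[OF y] by simp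
    finally show "fm (R x) y = fm x (R y)" .
  qed
  have sC: "symmetric_op H fm Cc"
  proof (rule sym_opI[OF CH])
    fix x y assume x: "x \<in> H" and y: "y \<in> H"
    have "fm (Cc x) y = fm (Bo (Ao (Bo (Ao (Bo x))))) (As y)" unfolding Cx using A_tr H x y by simp
    also have "\<dots> = fm (Ao (Bo (Ao (Bo x)))) (Bs (As y))" using B_tr H x y by simp
    also have "\<dots> = fm (Bo (Ao (Bo x))) (As (Bs (As y)))" using A_tr H x y by simp
    also have "\<dots> = fm (Ao (Bo x)) (Bs (As (Bs (As y))))" using B_tr H x y by simp
    also have "\<dots> = fm (Bo x) (As (Bs (As (Bs (As y)))))" using A_tr H x y by simp
    also have "\<dots> = fm x (Bs (As (Bs (As (Bs (As y))))))" using B_tr H x y by simp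
    also have "Bs (As (Bs (As (Bs (As y))))) = Cc y"
    proof -
      have "As (Bs (As y)) = Bo (Ao (Bo y))" using pqp[OF y] .
      moreover have "Bs (As (Bs (Bo (Ao (Bo y))))) = Ao (Bo (Ao (Bo (Ao (Bo y)))))" using qpq H y by simp
      ultimately show ?thesis using Cx by simp
    qed
    finally show "fm (Cc x) y = fm x (Cc y)" .
  qed
  have gA: "\<And>p x. p \<in> T3 \<Longrightarrow> inhat p x \<Longrightarrow> inchk (piA p) (Ao x)" using swp_hat[OF swpA] .
  have gA': "\<And>p x. p \<in> T3 \<Longrightarrow> inchk p x \<Longrightarrow> inhat (piA p) (Ao x)" using swp_chk[OF swpA] .
  have gB: "\<And>p x. p \<in> T3 \<Longrightarrow> inhat p x \<Longrightarrow> inchk (piB p) (Bo x)" using swp_hat[OF swpB] .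
  have gB': "\<And>p x. p \<in> T3 \<Longrightarrow> inchk p x \<Longrightarrow> inhat (piB p) (Bo x)" using swp_chk[OF swpB] .
  have gAs: "\<And>p x. p \<in> T3 \<Longrightarrow> inhat p x \<Longrightarrow> inchk (piA p) (As x)" using swp_hat[OF swpAs] .
  have gAs': "\<And>p x. p \<in> T3 \<Longrightarrow> inchk p x \<Longrightarrow> inhat (piA p) (As x)" using swp_chk[OF swpAs] .
  have gBs: "\<And>p x. p \<in> T3 \<Longrightarrow> inhat p x \<Longrightarrow> inchk (piB p) (Bs x)" using swp_hat[OF swpBs] .
  have gBs': "\<And>p x. p \<in> T3 \<Longrightarrow> inchk p x \<Longrightarrow> inhat (piB p) (Bs x)" using swp_chk[OF swpBs] .
  have PA: "\<And>p. p \<in> T3 \<Longrightarrow> piA p \<in> T3" "\<And>p. p \<in> T3 \<Longrightarrow> piA (piA p) = p" using swp_pi[OF swpA] swp_pipi[OF swpA] by auto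
  have PB: "\<And>p. p \<in> T3 \<Longrightarrow> piB p \<in> T3" "\<And>p. p \<in> T3 \<Longrightarrow> piB (piB p) = p" using swp_pi[OF swpB] swp_pipi[OF swpB] by auto
  have grL: "grading_preserving C I V L"
  proof (rule gradI)
    fix p x assume p: "p \<in> T3"
    { assume x: "inhat p x"
      have "inhat (piA (piA p)) (As (Ao x))" using gAs'[OF PA(1)[OF p] gA[OF p x]] .
      then show "inhat p (L x)" using Lx[OF inhat_H[OF x]] PA(2)[OF p] by simp }
    { assume x: "inchk p x"
      have "inchk (piA (piA p)) (As (Ao x))" using gAs[OF PA(1)[OF p] gA'[OF p x]] .
      then show "inchk p (L x)" using Lx[OF inchk_H[OF x]] PA(2)[OF p] by simp }
  qed
  have grR: "grading_preserving C I V R"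
  proof (rule gradI)
    fix p x assume p: "p \<in> T3"
    { assume x: "inhat p x"
      have "inhat (piB (piB p)) (Bs (Bo x))" using gBs'[OF PB(1)[OF p] gB[OF p x]] .
      then show "inhat p (R x)" using Rx[OF inhat_H[OF x]] PB(2)[OF p] by simp }
    { assume x: "inchk p x"
      have "inchk (piB (piB p)) (Bs (Bo x))" using gBs[OF PB(1)[OF p] gB'[OF p x]] .
      then show "inchk p (R x)" using Rx[OF inchk_H[OF x]] PB(2)[OF p] by simp }
  qed
  have grC: "grading_preserving C I V Cc"
  proof (rule gradI)
    fix p x assume p: "p \<in> T3"
    have p1: "piB p \<in> T3" and p2: "piA (piB p) \<in> T3" and p3: "piB (piA (piB p)) \<in> T3"
      and p4: "piA (piB (piA (piB p))) \<in> T3" and p5: "piB (piA (piB (piA (piB p)))) \<in> T3"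
      using PA PB p by auto
    { assume x: "inhat p x"
      have "inhat (piA (piB (piA (piB (piA (piB p)))))) (Ao (Bo (Ao (Bo (Ao (Bo x))))))"
        using gA'[OF p5 gB[OF p4 gA'[OF p3 gB[OF p2 gA'[OF p1 gB[OF p x]]]]]] .
      then show "inhat p (Cc x)" using piAB3[OF p] Cx by simp }
    { assume x: "inchk p x"
      have "inchk (piA (piB (piA (piB (piA (piB p)))))) (Ao (Bo (Ao (Bo (Ao (Bo x))))))"
        using gA[OF p5 gB'[OF p4 gA[OF p3 gB'[OF p2 gA[OF p1 gB'[OF p x]]]]]] .
      then show "inchk p (Cc x)" using piAB3[OF p] Cx by simp }
  qed
  have part1: "\<forall>F\<in>{L, R, Cc}. bij_betw F H H \<and> symmetric_op H fm F \<and> grading_preserving C I V F"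
    using bL bR bC sL sR sC grL grR grC by blast
  have i1: "\<forall>x\<in>H. Ao (Cc (Ao x)) = the_inv_into H Cc x"
    using iC Cx AA H by (simp add: Ci_def)
  have i2: "\<forall>x\<in>H. Bo (Cc (Bo x)) = the_inv_into H Cc x"
    using iC Cx BB H by (simp add: Ci_def)
  have i3: "\<forall>x\<in>H. L (Cc (the_inv_into H L x)) = Cc x"
  proof
    fix x assume x: "x \<in> H"
    have "L (Cc (the_inv_into H L x)) = As (Ao (Ao (Bo (Ao (Bo (Ao (Bo (Ao (As x)))))))))"
      using iL[OF x] Lx Cx H x by (simp add: Li_def)
    also have "\<dots> = As (Bo (Ao (Bo (Ao (Bo (Ao (As x)))))))" using AA H x by simp
    also have "Bo (Ao (Bo (Ao (Bo (Ao (As x)))))) = As (Bs (As (Ao (Bo (Ao (As x))))))"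
      using pqp H x by simp
    also have "Ao (Bo (Ao (As x))) = Bs (As (Bs (As x)))" using qpq H x by simp
    also have "As (As (Bs (As (Bs (As (Bs (As x))))))) = Bs (As (Bs (As (Bs (As x)))))"
      using AsAs H x by simp
    also have "\<dots> = Ao (Bo (Ao (As (Bs (As x)))))" by (rule qpq) (use H x in simp)
    also have "\<dots> = Ao (Bo (Ao (Bo (Ao (Bo x)))))" using pqp x by simp
    finally show "L (Cc (the_inv_into H L x)) = Cc x" using Cx by simp
  qed
  have i4: "\<forall>x\<in>H. R (Cc (the_inv_into H R x)) = Cc x"
  proof
    fix x assume x: "x \<in> H"
    have "R (Cc (the_inv_into H R x)) = Bs (Bo (Ao (Bo (Ao (Bo (Ao (Bo (Bo (Bs x)))))))))"
      using iR[OF x] Rx Cx H x by (simp add: Ri_def)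
    also have "\<dots> = Bs (Bo (Ao (Bo (Ao (Bo (Ao (Bs x)))))))" using BB H x by simp
    also have "Bo (Ao (Bo (Ao (Bo (Ao (Bs x)))))) = As (Bs (As (Ao (Bo (Ao (Bs x))))))"
      using pqp H x by simp
    also have "Ao (Bo (Ao (Bs x))) = Bs (As (Bs (Bs x)))" using qpq H x by simp
    also have "Bs (Bs x) = x" using BsBs x by simp
    also have "Bs (As (Bs (As (Bs (As x))))) = Ao (Bo (Ao (As (Bs (As x)))))" by (rule qpq) (use H x in simp)
    also have "\<dots> = Ao (Bo (Ao (Bo (Ao (Bo x)))))" using pqp x by simp
    finally show "R (Cc (the_inv_into H R x)) = Cc x" using Cx by simp
  qed
  have i5: "\<forall>x\<in>H. Ao (L (Ao x)) = the_inv_into H L x"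
    using iL Lx AA H by (simp add: Li_def)
  have i6: "\<forall>x\<in>H. Bo (R (Bo x)) = the_inv_into H R x"
    using iR Rx BB H by (simp add: Ri_def)
  have i7: "\<forall>x\<in>H. Ao (R (Ao x)) = the_inv_into H L (R (the_inv_into H Cc x))"
  proof
    fix x assume x: "x \<in> H"
    have "the_inv_into H L (R (the_inv_into H Cc x)) = Ao (As (Bs (Bo (Bo (Ao (Bo (Ao (Bo (Ao x)))))))))"
      using iC[OF x] CiH[OF x] RH iL Rx H x by (simp add: Ci_def Li_def)
    also have "Bo (Bo (Ao (Bo (Ao (Bo (Ao x)))))) = Ao (Bo (Ao (Bo (Ao x))))" using BB H x by simp
    also have "Ao (Bo (Ao (Bo (Ao x)))) = Bs (As (Bs (Bo (Ao x))))" using qpq H x by simp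
    also have "As (Bs (Bs (As (Bs (Bo (Ao x)))))) = Bs (Bo (Ao x))" using BsBs AsAs H x by simp
    finally show "Ao (R (Ao x)) = the_inv_into H L (R (the_inv_into H Cc x))" using Rx H x by simp
  qed
  have i8: "\<forall>x\<in>H. Bo (L (Bo x)) = the_inv_into H R (L (Cc x))"
  proof
    fix x assume x: "x \<in> H"
    have "the_inv_into H R (L (Cc x)) = Bo (Bs (As (Ao (Ao (Bo (Ao (Bo (Ao (Bo x)))))))))"
      using iR LH CH Lx Cx H x by (simp add: Ri_def)
    also have "Ao (Ao (Bo (Ao (Bo (Ao (Bo x)))))) = Bo (Ao (Bo (Ao (Bo x))))" using AA H x by simp
    also have "Bo (Ao (Bo (Ao (Bo x)))) = As (Bs (As (Ao (Bo x))))" using pqp H x by simp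
    also have "Bs (As (As (Bs (As (Ao (Bo x)))))) = As (Ao (Bo x))" using BsBs AsAs H x by simp
    finally show "Bo (L (Bo x)) = the_inv_into H R (L (Cc x))" using Lx H x by simp
  qed
  show ?thesis using part1 i1 i2 i3 i4 i5 i6 i7 i8 by blast
qed

end


theorem lemma5p1:
  fixes Cat :: "('o,'m) mcat" and I :: "'i set" and V :: "'i \<Rightarrow> 'o"
    and st :: "'i \<Rightarrow> 'i" and b d :: "'i \<Rightarrow> 'm"
  assumes psi: "psi_system Cat I V st b d"
  defines "H \<equiv> Hsp Cat I V"
      and "A \<equiv> opA Cat I V st b d"
      and "B \<equiv> opB Cat I V st b d"
      and "fm \<equiv> hform Cat I V"
  defines "L \<equiv> op_transpose H fm A \<circ> A"
      and "R \<equiv> op_transpose H fm B \<circ> B"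
      and "C \<equiv> A \<circ> B \<circ> A \<circ> B \<circ> A \<circ> B"
  shows "(\<forall>F\<in>{L, R, C}. bij_betw F H H \<and> symmetric_op H fm F \<and> grading_preserving Cat I V F)
    \<and> (\<forall>x\<in>H. A (C (A x)) = the_inv_into H C x)
    \<and> (\<forall>x\<in>H. B (C (B x)) = the_inv_into H C x)
    \<and> (\<forall>x\<in>H. L (C (the_inv_into H L x)) = C x)
    \<and> (\<forall>x\<in>H. R (C (the_inv_into H R x)) = C x)
    \<and> (\<forall>x\<in>H. A (L (A x)) = the_inv_into H L x)
    \<and> (\<forall>x\<in>H. B (R (B x)) = the_inv_into H R x)
    \<and> (\<forall>x\<in>H. A (R (A x)) = the_inv_into H L (R (the_inv_into H C x)))
    \<and> (\<forall>x\<in>H. B (L (B x)) = the_inv_into H R (L (C x)))"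
proof -
  interpret P: psi Cat I V st b d
  proof unfold_locales
    show "strict_monoidal_ab_cat Cat" using psi by (simp add: psi_system_def)
    show "psi_system Cat I V st b d" using psi .
  qed
  show ?thesis
    unfolding L_def R_def C_def H_def A_def B_def fm_def P.opA_eq' P.opB_eq'
    by (rule P.main)
qed

end
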